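(* Let $Z$ be a fat point scheme in $\mathbb{P}^1\times\mathbb{P}^1$, $m=|\alpha_Z|$, $m'=|\beta_Z|$, and define $B_C=(H_Z(m-1,0),H_Z(m-1,1),\dots,H_Z(m-1,m'-1))$ and $B_R=(H_Z(0,m'-1),H_Z(1,m'-1),\dots,H_Z(m-1,m'-1))$. Then $\Delta B_C=\alpha_Z^*$ and $\Delta B_R=\beta_Z^*$ (where the conjugate partitions are padded with zeros to the lengths $m'$ and $m$ respectively).
   Context: $\mathbf{k}$ algebraically closed, $R=\mathbf{k}[x_0,x_1,y_0,y_1]$ bigraded with $\deg x_i=(1,0)$, $\deg y_i=(0,1)$; a fat point scheme $Z=\{(P_1;m_1),\dots,(P_s;m_s)\}$ has ideal $I_Z=\bigcap\wp_{P_i}^{m_i}$ (where $[a_0:a_1]\times[b_0:b_1]$ has ideal $(a_1x_0-a_0x_1,b_1y_0-b_0y_1)$) and Hilbert function $H_Z(i,j)=\dim_{\mathbf{k}}(R/I_Z)_{(i,j)}$. With $\pi_1(\mathrm{Supp}\,Z)=\{R_1,\dots,R_r\}$, $\pi_2(\mathrm{Supp}\,Z)=\{Q_1,\dots,Q_t\}$ and $m_{ij}$ the multiplicity of $R_i\times Q_j$ ($0$ if absent): $l_i=\max_j m_{ij}$, $a_{i,k}=\sum_j(m_{ij}-k)_+$ ($0\le k\le l_i-1$), $\alpha_Z$ = all $a_{i,k}$ in non-increasing order; $l'_j=\max_i m_{ij}$, $b_{j,k}=\sum_i(m_{ij}-k)_+$ ($0\le k\le l'_j-1$), $\beta_Z$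 = all $b_{j,k}$ in non-increasing order; $(n)_+=\max\{0,n\}$. For a tuple $p=(p_1,\dots,p_k)$, $\Delta p=(p_1,p_2-p_1,\dots,p_k-p_{k-1})$. For a partition $\lambda=(\lambda_1\ge\dots\ge\lambda_n)$ of positive integers, its conjugate is $\lambda^*=(\lambda^*_1,\dots,\lambda^*_{\lambda_1})$ with $\lambda^*_i=\#\{j:\lambda_j\ge i\}$. *)

theory Defs
  imports "HOL-Library.Poly_Mapping" "HOL-Library.Multiset"
          "HOL-Computational_Algebra.Polynomial"
begin

text \<open>Polynomials in variables indexed by nat (monomials are finitely supported
  exponent vectors); R is the subring of polynomials in the variables 0,1,2,3,
  where x0 = var 0, x1 = var 1, y0 = var 2, y1 = var 3.\<close>

type_synonym 'k mpol = "(nat \<Rightarrow>\<^sub>0 nat) \<Rightarrow>\<^sub>0 'k"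

definition cst :: "'k::comm_ring_1 \<Rightarrow> 'k mpol" where
  "cst c = Poly_Mapping.single 0 c"

definition var :: "nat \<Rightarrow> 'k::comm_ring_1 mpol" where
  "var i = Poly_Mapping.single (Poly_Mapping.single i 1) 1"

definition ringR :: "'k::comm_ring_1 mpol set" where
  "ringR = {F. \<forall>\<mu>\<in>Poly_Mapping.keys F. Poly_Mapping.keys \<mu> \<subseteq> {0,1,2,3}}"

definition bihom :: "nat \<Rightarrow> nat \<Rightarrow> 'k::comm_ring_1 mpol set" where
  "bihom i j = {F. \<forall>\<mu>\<in>Poly_Mapping.keys F. Poly_Mapping.keys \<mu> \<subseteq> {0,1,2,3}
       \<and> Poly_Mapping.lookup \<mu> 0 + Poly_Mapping.lookup \<mu> 1 = i \<and> Poly_Mapping.lookup \<mu> 2 + Poly_Mapping.lookup \<mu> 3 = j}"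

definition kscale :: "'k::field \<Rightarrow> 'k mpol \<Rightarrow> 'k mpol" where
  "kscale c F = cst c * F"

definition kdim :: "'k::field mpol set \<Rightarrow> nat" where
  "kdim V = vector_space.dim kscale V"

text \<open>A point of P1 is represented by a nonzero pair (a0,a1) of homogeneous coordinates.\<close>
definition proj_eq :: "'k::field \<times> 'k \<Rightarrow> 'k \<times> 'k \<Rightarrow> bool" where
  "proj_eq a c \<longleftrightarrow> fst a * snd c = snd a * fst c"

definition proj_class :: "'k::field \<times> 'k \<Rightarrow> ('k \<times> 'k) set" where
  "proj_class a = {c. c \<noteq> (0,0) \<and> proj_eq c a}"

text \<open>A fat point scheme Z = {(P_1;m_1),...,(P_s;m_s)} is a list of entries
  ((a,b),m): P = [a0:a1] x [b0:b1], multiplicity m \<ge> 1, points pairwise distinct.\<close>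
type_synonym 'k fatpts = "((('k \<times> 'k) \<times> ('k \<times> 'k)) \<times> nat) list"

definition fat_point_scheme :: "'k::field fatpts \<Rightarrow> bool" where
  "fat_point_scheme Z \<longleftrightarrow>
     (\<forall>((a,b),m)\<in>set Z. a \<noteq> (0,0) \<and> b \<noteq> (0,0) \<and> 1 \<le> m) \<and>
     (\<forall>i<length Z. \<forall>j<length Z. i \<noteq> j \<longrightarrow>
        \<not> (proj_eq (fst (fst (Z!i))) (fst (fst (Z!j))) \<and>
           proj_eq (snd (fst (Z!i))) (snd (fst (Z!j)))))"

text \<open>The ideal wp_P^m = (a1 x0 - a0 x1, b1 y0 - b0 y1)^m of R, i.e. the ideal of R
  generated by the products L1^k L2^(m-k), k = 0..m.\<close>
definition lin1 :: "('k::field \<times> 'k) \<Rightarrow> 'k mpol" where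
  "lin1 a = cst (snd a) * var 0 - cst (fst a) * var 1"

definition lin2 :: "('k::field \<times> 'k) \<Rightarrow> 'k mpol" where
  "lin2 b = cst (snd b) * var 2 - cst (fst b) * var 3"

definition pt_ideal_pow :: "('k::field \<times> 'k) \<times> ('k \<times> 'k) \<Rightarrow> nat \<Rightarrow> 'k mpol set" where
  "pt_ideal_pow P m = {F. \<exists>g. (\<forall>k\<le>m. g k \<in> ringR) \<and>
       F = (\<Sum>k\<le>m. g k * lin1 (fst P) ^ k * lin2 (snd P) ^ (m - k))}"

definition fat_ideal :: "'k::field fatpts \<Rightarrow> 'k mpol set" where
  "fat_ideal Z = ringR \<inter> (\<Inter>(P,m)\<in>set Z. pt_ideal_pow P m)"

text \<open>Hilbert function H_Z(i,j) = dim_k (R/I_Z)_(i,j) = dim_k R_(i,j) - dim_k (I_Z)_(i,j)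
  (I_Z is bihomogeneous, so (R/I_Z)_(i,j) = R_(i,j) / (I_Z \<inter> R_(i,j))).\<close>
definition hilb :: "'k::field fatpts \<Rightarrow> nat \<Rightarrow> nat \<Rightarrow> nat" where
  "hilb Z i j = kdim (bihom i j :: 'k mpol set) - kdim (fat_ideal Z \<inter> bihom i j)"

definition rows :: "'k::field fatpts \<Rightarrow> ('k \<times> 'k) set set" where
  "rows Z = (\<lambda>((a,b),m). proj_class a) ` set Z"

definition cols :: "'k::field fatpts \<Rightarrow> ('k \<times> 'k) set set" where
  "cols Z = (\<lambda>((a,b),m). proj_class b) ` set Z"

definition mult :: "'k::field fatpts \<Rightarrow> ('k \<times> 'k) set \<Rightarrow> ('k \<times> 'k) set \<Rightarrow> nat" where
  "mult Z C D = sum_list (map snd (filter (\<lambda>((a,b),m). proj_class a = C \<and> proj_class b = D) Z))"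

definition desc_list :: "nat multiset \<Rightarrow> nat list" where
  "desc_list M = rev (sorted_list_of_multiset M)"

definition alphaZ :: "'k::field fatpts \<Rightarrow> nat list" where
  "alphaZ Z = desc_list (\<Sum>C\<in>rows Z.
      mset (map (\<lambda>k. \<Sum>D\<in>cols Z. mult Z C D - k) [0..<Max ((mult Z C) ` cols Z)]))"

definition betaZ :: "'k::field fatpts \<Rightarrow> nat list" where
  "betaZ Z = desc_list (\<Sum>D\<in>cols Z.
      mset (map (\<lambda>k. \<Sum>C\<in>rows Z. mult Z C D - k) [0..<Max ((\<lambda>C. mult Z C D) ` rows Z)]))"

definition conjugate :: "nat list \<Rightarrow> nat list" where
  "conjugate lam = map (\<lambda>i. length (filter (\<lambda>x. i \<le> x) lam)) [1..<Suc (foldr max lam 0)]"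

definition pad0 :: "nat list \<Rightarrow> nat \<Rightarrow> nat list" where
  "pad0 xs n = xs @ replicate (n - length xs) 0"

definition Delta :: "int list \<Rightarrow> int list" where
  "Delta p = map (\<lambda>(u,v). u - v) (zip p (0 # p))"

end

theory Submission
  imports Defs
begin

lemma pm_expand: "(F::('a \<Rightarrow>\<^sub>0 'b::comm_monoid_add)) = (\<Sum>\<nu>\<in>Poly_Mapping.keys F. Poly_Mapping.single \<nu> (Poly_Mapping.lookup F \<nu>))"
proof (rule poly_mapping_eqI)
  fix k
  show "Poly_Mapping.lookup F k = Poly_Mapping.lookup (\<Sum>\<nu>\<in>Poly_Mapping.keys F. Poly_Mapping.single \<nu> (Poly_Mapping.lookup F \<nu>)) k"
    by (simp add: lookup_sum lookup_single when_def in_keys_iff)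
qed

lemma cst_add: "cst (a + b) = cst a + (cst b :: 'k::comm_ring_1 mpol)"
  by (simp add: cst_def single_add)
lemma cst_mult: "cst (a * b) = cst a * (cst b :: 'k::comm_ring_1 mpol)"
  by (simp add: cst_def mult_single)
lemma cst_0[simp]: "cst 0 = (0 :: 'k::comm_ring_1 mpol)"
  by (simp add: cst_def)
lemma cst_1[simp]: "cst 1 = (1 :: 'k::comm_ring_1 mpol)"
  by (simp add: cst_def)
lemma cst_uminus: "cst (- a) = - (cst a :: 'k::comm_ring_1 mpol)"
  by (simp add: cst_def single_uminus)
lemma cst_diff: "cst (a - b) = cst a - (cst b :: 'k::comm_ring_1 mpol)"
  by (simp add: cst_def single_diff)
lemma cst_sum: "cst (\<Sum>x\<in>A. f x) = (\<Sum>x\<in>A. cst (f x) :: 'k::comm_ring_1 mpol)"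
  by (induction A rule: infinite_finite_induct) (auto simp: cst_add)
lemma cst_prod: "cst (\<Prod>x\<in>A. f x) = (\<Prod>x\<in>A. cst (f x) :: 'k::comm_ring_1 mpol)"
  by (induction A rule: infinite_finite_induct) (auto simp: cst_mult)
lemma cst_power: "cst (a ^ n) = (cst a :: 'k::comm_ring_1 mpol) ^ n"
  by (induction n) (auto simp: cst_mult)
lemma cst_eq_iff[simp]: "cst a = (cst b :: 'k::comm_ring_1 mpol) \<longleftrightarrow> a = b"
  using inj_single[of 0] unfolding cst_def inj_def by metis
lemma cst_eq_0_iff[simp]: "cst a = (0 :: 'k::comm_ring_1 mpol) \<longleftrightarrow> a = 0"
  using cst_eq_iff[of a 0] by simp
lemma cst_single: "cst c * Poly_Mapping.single \<nu> d = Poly_Mapping.single \<nu> (c * d)"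
  by (simp add: cst_def mult_single)

section \<open>Substitution homomorphism\<close>

definition monval :: "(nat \<Rightarrow> 'k::comm_ring_1 mpol) \<Rightarrow> (nat \<Rightarrow>\<^sub>0 nat) \<Rightarrow> 'k mpol" where
  "monval f \<nu> = (\<Prod>v\<in>Poly_Mapping.keys \<nu>. f v ^ Poly_Mapping.lookup \<nu> v)"

definition subst :: "(nat \<Rightarrow> 'k::comm_ring_1 mpol) \<Rightarrow> 'k mpol \<Rightarrow> 'k mpol" where
  "subst f F = (\<Sum>\<nu>\<in>Poly_Mapping.keys F. cst (Poly_Mapping.lookup F \<nu>) * monval f \<nu>)"

lemma monval_alt:
  assumes "finite T" "Poly_Mapping.keys \<nu> \<subseteq> T"
  shows "monval f \<nu> = (\<Prod>v\<in>T. f v ^ Poly_Mapping.lookup \<nu> v)"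
  unfolding monval_def
  by (rule prod.mono_neutral_left) (use assms in \<open>auto simp: in_keys_iff\<close>)

lemma monval_add: "monval f (\<mu> + \<nu>) = monval f \<mu> * monval f \<nu>"
proof -
  let ?T = "Poly_Mapping.keys \<mu> \<union> Poly_Mapping.keys \<nu>"
  have k: "Poly_Mapping.keys (\<mu> + \<nu>) \<subseteq> ?T" by (rule keys_add)
  show ?thesis
    by (simp add: monval_alt[OF _ k] monval_alt[of ?T \<mu>] monval_alt[of ?T \<nu>] lookup_add power_add prod.distrib)
qed

lemma monval_0[simp]: "monval f 0 = 1"
  by (simp add: monval_def)

lemma monval_single: "monval f (Poly_Mapping.single v n) = f v ^ n"
  by (cases "n = 0") (auto simp: monval_def)

lemma subst_alt:
  assumes "finite S" "Poly_Mapping.keys F \<subseteq> S"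
  shows "subst f F = (\<Sum>\<nu>\<in>S. cst (Poly_Mapping.lookup F \<nu>) * monval f \<nu>)"
  unfolding subst_def
  by (rule sum.mono_neutral_left) (use assms in \<open>auto simp: in_keys_iff\<close>)

lemma subst_add: "subst f (F + G) = subst f F + subst f G"
proof -
  let ?S = "Poly_Mapping.keys F \<union> Poly_Mapping.keys G"
  have k: "Poly_Mapping.keys (F + G) \<subseteq> ?S" by (rule keys_add)
  show ?thesis
    by (simp add: subst_alt[OF _ k] subst_alt[of ?S F] subst_alt[of ?S G] lookup_add cst_add
        distrib_right sum.distrib)
qed

lemma subst_0[simp]: "subst f 0 = 0"
  by (simp add: subst_def)

lemma subst_uminus: "subst f (- F) = - subst f F"
  by (simp add: subst_def cst_uminus sum_negf)

lemma subst_diff: "subst f (F - G) = subst f F - subst f G"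
  using subst_add[of f F "- G"] by (simp add: subst_uminus)

lemma subst_sum: "subst f (\<Sum>x\<in>A. g x) = (\<Sum>x\<in>A. subst f (g x))"
  by (induction A rule: infinite_finite_induct) (auto simp: subst_add)

lemma subst_single: "subst f (Poly_Mapping.single \<nu> c) = cst c * monval f \<nu>"
  by (cases "c = 0") (auto simp: subst_def)

lemma mult_expand:
  "(F::'k::comm_ring_1 mpol) * G = (\<Sum>\<mu>\<in>Poly_Mapping.keys F. \<Sum>\<nu>\<in>Poly_Mapping.keys G.
      Poly_Mapping.single (\<mu> + \<nu>) (Poly_Mapping.lookup F \<mu> * Poly_Mapping.lookup G \<nu>))"
proof -
  have "F * G = (\<Sum>\<mu>\<in>Poly_Mapping.keys F. Poly_Mapping.single \<mu> (Poly_Mapping.lookup F \<mu>)) *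
      (\<Sum>\<nu>\<in>Poly_Mapping.keys G. Poly_Mapping.single \<nu> (Poly_Mapping.lookup G \<nu>))"
    using pm_expand[of F] pm_expand[of G] by simp
  also have "\<dots> = (\<Sum>\<mu>\<in>Poly_Mapping.keys F. \<Sum>\<nu>\<in>Poly_Mapping.keys G.
      Poly_Mapping.single \<mu> (Poly_Mapping.lookup F \<mu>) * Poly_Mapping.single \<nu> (Poly_Mapping.lookup G \<nu>))"
    by (simp add: sum_product)
  finally show ?thesis by (simp add: mult_single)
qed

lemma subst_mult: "subst f (F * G) = subst f F * subst f G"
proof -
  have "subst f (F * G) = (\<Sum>\<mu>\<in>Poly_Mapping.keys F. \<Sum>\<nu>\<in>Poly_Mapping.keys G.
      cst (Poly_Mapping.lookup F \<mu> * Poly_Mapping.lookup G \<nu>) * monval f (\<mu> + \<nu>))"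
    by (subst mult_expand) (simp add: subst_sum subst_single)
  also have "\<dots> = (\<Sum>\<mu>\<in>Poly_Mapping.keys F. \<Sum>\<nu>\<in>Poly_Mapping.keys G.
      (cst (Poly_Mapping.lookup F \<mu>) * monval f \<mu>) * (cst (Poly_Mapping.lookup G \<nu>) * monval f \<nu>))"
    by (simp add: monval_add cst_mult mult_ac)
  also have "\<dots> = subst f F * subst f G"
    by (simp add: subst_def sum_product)
  finally show ?thesis .
qed

lemma subst_cst[simp]: "subst f (cst c) = cst c"
  by (simp add: cst_def subst_single)

lemma subst_one[simp]: "subst f 1 = 1"
  using subst_cst[of f 1] by simp

lemma subst_var[simp]: "subst f (var i) = f i"
  by (simp add: var_def subst_single monval_single)

lemma subst_power: "subst f (F ^ n) = subst f F ^ n"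
  by (induction n) (auto simp: subst_mult)

lemma subst_prod: "subst f (\<Prod>x\<in>A. g x) = (\<Prod>x\<in>A. subst f (g x))"
  by (induction A rule: infinite_finite_induct) (auto simp: subst_mult)

lemma var_power: "var v ^ n = (Poly_Mapping.single (Poly_Mapping.single v n) 1 :: 'k::comm_ring_1 mpol)"
  by (induction n) (auto simp: var_def mult_single single_add[symmetric])

lemma prod_single_1: "(\<Prod>x\<in>A. Poly_Mapping.single (g x) (1::'k::comm_ring_1)) = Poly_Mapping.single (\<Sum>x\<in>A. g x) 1"
  by (induction A rule: infinite_finite_induct) (auto simp: mult_single)

lemma monval_var: "monval var \<nu> = (Poly_Mapping.single \<nu> 1 :: 'k::comm_ring_1 mpol)"
proof -
  have "monval var \<nu> = (\<Prod>v\<in>Poly_Mapping.keys \<nu>. Poly_Mapping.single (Poly_Mapping.single v (Poly_Mapping.lookup \<nu> v)) (1::'k))"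
    unfolding monval_def by (simp add: var_power)
  also have "\<dots> = Poly_Mapping.single \<nu> 1"
    by (subst prod_single_1) (simp add: pm_expand[of \<nu>, symmetric])
  finally show ?thesis .
qed

lemma subst_var_id[simp]: "subst var F = F"
proof -
  have "subst var F = (\<Sum>\<nu>\<in>Poly_Mapping.keys F. Poly_Mapping.single \<nu> (Poly_Mapping.lookup F \<nu>))"
    unfolding subst_def by (simp add: monval_var cst_single)
  then show ?thesis using pm_expand[of F] by simp
qed

lemma subst_monval: "subst g (monval f \<nu>) = monval (\<lambda>v. subst g (f v)) \<nu>"
  by (simp add: monval_def subst_prod subst_power)

lemma subst_subst: "subst g (subst f F) = subst (\<lambda>v. subst g (f v)) F"
proof -
  have "subst g (subst f F) = subst g (\<Sum>\<nu>\<in>Poly_Mapping.keys F. cst (Poly_Mapping.lookup F \<nu>) * monval f \<nu>)"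
    by (simp add: subst_def)
  also have "\<dots> = (\<Sum>\<nu>\<in>Poly_Mapping.keys F. cst (Poly_Mapping.lookup F \<nu>) * monval (\<lambda>v. subst g (f v)) \<nu>)"
    by (simp add: subst_sum subst_mult subst_monval)
  finally show ?thesis by (simp add: subst_def)
qed

lemma subst_cong: "(\<And>v. v \<in> (\<Union>\<nu>\<in>Poly_Mapping.keys F. Poly_Mapping.keys \<nu>) \<Longrightarrow> f v = g v) \<Longrightarrow> subst f F = subst g F"
  unfolding subst_def monval_def by (intro sum.cong refl arg_cong2[where f=times] prod.cong) (metis UN_I)


context vector_space
begin

definition fdim :: "'b set \<Rightarrow> bool" where
  "fdim S \<longleftrightarrow> (\<exists>W. finite W \<and> S \<subseteq> local.span W)"

lemma fdim_subset: "local.fdim T \<Longrightarrow> S \<subseteq> T \<Longrightarrow> local.fdim S"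
  unfolding fdim_def by blast

lemma basis_finite:
  assumes "local.fdim S"
  obtains B :: "'b set" where "B \<subseteq> S" "local.independent B" "S \<subseteq> local.span B" "card B = local.dim S" "finite B"
proof -
  obtain W where W: "finite W" "S \<subseteq> local.span W" using assms fdim_def by blast
  obtain B where B: "B \<subseteq> S" "local.independent B" "S \<subseteq> local.span B" "card B = local.dim S"
    using basis_exists by blast
  have "finite B" using independent_span_bound[OF W(1) B(2)] B(1) W(2) by blast
  with B that show ?thesis by blast
qed

lemma dim_mono_fd:
  assumes "local.fdim T" "S \<subseteq> T"
  shows "local.dim S \<le> local.dim T"
proof -
  obtain C where C: "C \<subseteq> T" "local.independent C" "T \<subseteq> local.span C" "card C = local.dim T" "finite C"
    using basis_finite[OF assms(1)] by blast
  have "local.dim S \<le> card C" using dim_le_card[of S C] C assms(2) by blast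
  then show ?thesis using C by simp
qed

lemma indep_Un:
  assumes "local.independent S" "local.independent T" "local.span S \<inter> local.span T \<subseteq> {0}"
  shows "local.independent (S \<union> T)"
proof (rule ccontr)
  assume "\<not> local.independent (S \<union> T)"
  then obtain a where a: "a \<in> S \<union> T" "a \<in> local.span ((S \<union> T) - {a})"
    unfolding dependent_def by blast
  show False
  proof (cases "a \<in> S \<and> a \<in> T")
    case True
    then have "a \<in> local.span S \<inter> local.span T" by (auto intro: span_base)
    then have "a = 0" using assms(3) by blast
    then show False using True assms(1) dependent_zero by blast
  next
    case False
    show False
    proof (cases "a \<in> S")
      case aS: True
      with False have "a \<notin> T" by blast
      then have eq: "(S \<union> T) - {a} = (S - {a}) \<union> T" by blast
      obtain x y where xy: "a = x + y" "x \<in> local.span (S - {a})" "y \<in> local.span T"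
        using a(2) unfolding eq span_Un by blast
      have "x \<in> local.span S" using xy(2) span_mono[of "S - {a}" S] by blast
      moreover have "a \<in> local.span S" using aS span_base by blast
      ultimately have "y \<in> local.span S" using xy(1) span_diff[of a S x] by (simp add: algebra_simps)
      then have "y = 0" using xy(3) assms(3) by blast
      then have "a \<in> local.span (S - {a})" using xy by simp
      then show False using aS assms(1) unfolding dependent_def by blast
    next
      case aS: False
      with a have aT: "a \<in> T" by blast
      then have eq: "(S \<union> T) - {a} = S \<union> (T - {a})" using aS by blast
      obtain x y where xy: "a = x + y" "x \<in> local.span S" "y \<in> local.span (T - {a})"
        using a(2) unfolding eq span_Un by blast
      have "y \<in> local.span T" using xy(3) span_mono[of "T - {a}" T] by blast
      moreover have "a \<in> local.span T" using aT span_base by blast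
      ultimately have "x \<in> local.span T" using xy(1) span_diff[of a T y] by (simp add: algebra_simps)
      then have "x = 0" using xy(2) assms(3) by blast
      then have "a \<in> local.span (T - {a})" using xy by simp
      then show False using aT assms(2) unfolding dependent_def by blast
    qed
  qed
qed

lemma indep_span_disj:
  assumes "local.independent (S \<union> T)" "S \<inter> T = {}"
  shows "local.span S \<inter> local.span T \<subseteq> {0}"
proof
  fix x assume "x \<in> local.span S \<inter> local.span T"
  then obtain s0 q t0 r where s0: "finite s0" "s0 \<subseteq> S" "x = (\<Sum>v\<in>s0. q v *s v)"
    and t0: "finite t0" "t0 \<subseteq> T" "x = (\<Sum>v\<in>t0. r v *s v)"
    unfolding span_explicit by blast
  define u where "u v = (if v \<in> s0 then q v else - r v)" for v
  have disj: "s0 \<inter> t0 = {}" using s0 t0 assms(2) by blast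
  have "(\<Sum>v\<in>s0 \<union> t0. u v *s v) = (\<Sum>v\<in>s0. u v *s v) + (\<Sum>v\<in>t0. u v *s v)"
    by (rule sum.union_disjoint) (use s0 t0 disj in auto)
  also have "(\<Sum>v\<in>s0. u v *s v) = x" using s0(3) by (simp add: u_def)
  also have "(\<Sum>v\<in>t0. u v *s v) = (\<Sum>v\<in>t0. - (r v *s v))"
    by (rule sum.cong) (use disj in \<open>auto simp: u_def\<close>)
  also have "\<dots> = - x"
    using t0(3) by (simp add: sum_negf)
  finally have z: "(\<Sum>v\<in>s0 \<union> t0. u v *s v) = 0" by simp
  have "\<forall>v\<in>s0. u v = 0"
    using independentD[OF assms(1) _ _ z] s0 t0 by blast
  then have "\<forall>v\<in>s0. q v = 0" by (simp add: u_def)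
  then show "x \<in> {0}" using s0(3) by simp
qed

lemma dim_sum_int:
  assumes A: "local.subspace A" "local.fdim A" and B: "local.subspace B" "local.fdim B"
  shows "local.dim (local.span (A \<union> B)) + local.dim (A \<inter> B) = local.dim A + local.dim B"
proof -
  have fAB: "local.fdim (A \<inter> B)" using fdim_subset[OF A(2)] by blast
  obtain C where C: "C \<subseteq> A \<inter> B" "local.independent C" "A \<inter> B \<subseteq> local.span C" "card C = local.dim (A \<inter> B)" "finite C"
    using basis_finite[OF fAB] by blast
  obtain BA where BA: "C \<subseteq> BA" "BA \<subseteq> A" "local.independent BA" "A \<subseteq> local.span BA"
    using maximal_independent_subset_extend[of C A] C by blast
  obtain BB where BB: "C \<subseteq> BB" "BB \<subseteq> B" "local.independent BB" "B \<subseteq> local.span BB"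
    using maximal_independent_subset_extend[of C B] C by blast
  obtain WA where WA: "finite WA" "A \<subseteq> local.span WA" using A(2) fdim_def by blast
  obtain WB where WB: "finite WB" "B \<subseteq> local.span WB" using B(2) fdim_def by blast
  have fBA: "finite BA" using independent_span_bound[OF WA(1) BA(3)] BA(2) WA(2) by blast
  have fBB: "finite BB" using independent_span_bound[OF WB(1) BB(3)] BB(2) WB(2) by blast
  have cBA: "card BA = local.dim A" using basis_card_eq_dim[OF BA(2) BA(4) BA(3)] .
  have cBB: "card BB = local.dim B" using basis_card_eq_dim[OF BB(2) BB(4) BB(3)] .
  have int: "BA \<inter> BB = C"
  proof
    show "C \<subseteq> BA \<inter> BB" using BA BB by blast
    show "BA \<inter> BB \<subseteq> C"
    proof
      fix x assume x: "x \<in> BA \<inter> BB"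
      show "x \<in> C"
      proof (rule ccontr)
        assume "x \<notin> C"
        then have "C \<subseteq> BA - {x}" using BA by blast
        moreover have "x \<in> local.span C" using x BA(2) BB(2) C(3) by blast
        ultimately have "x \<in> local.span (BA - {x})" using span_mono by blast
        then show False using x BA(3) unfolding dependent_def by blast
      qed
    qed
  qed
  define D where "D = BB - C"
  have spA: "local.span BA = A" using span_subspace[OF BA(2) BA(4) A(1)] .
  have spB: "local.span BB = B" using span_subspace[OF BB(2) BB(4) B(1)] .
  have BBeq: "BB = C \<union> D" using BB(1) D_def by blast
  have indD: "local.independent D" using independent_mono[OF BB(3)] D_def by blast
  have disj1: "local.span BA \<inter> local.span D \<subseteq> {0}"
  proof
    fix x assume x: "x \<in> local.span BA \<inter> local.span D"
    have "x \<in> B" using x span_mono[of D BB] spB D_def by blast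
    moreover have "x \<in> A" using x spA by blast
    ultimately have "x \<in> local.span C" using C(3) by blast
    then have "x \<in> local.span C \<inter> local.span D" using x by blast
    moreover have "local.span C \<inter> local.span D \<subseteq> {0}"
    proof (rule indep_span_disj)
      show "local.independent (C \<union> D)" using BB(3) BBeq by simp
      show "C \<inter> D = {}" using D_def by blast
    qed
    ultimately show "x \<in> {0}" by blast
  qed
  have indX: "local.independent (BA \<union> D)" by (rule indep_Un[OF BA(3) indD disj1])
  have Xeq: "BA \<union> D = BA \<union> BB" using BBeq BA(1) by blast
  have spX: "local.span (BA \<union> BB) = local.span (A \<union> B)"
  proof -
    have "local.span (BA \<union> BB) \<subseteq> local.span (A \<union> B)" using BA(2) BB(2) span_mono by (metis Un_mono)
    moreover have "A \<union> B \<subseteq> local.span (BA \<union> BB)"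
      using BA(4) BB(4) span_mono[of BA "BA \<union> BB"] span_mono[of BB "BA \<union> BB"] by blast
    then have "local.span (A \<union> B) \<subseteq> local.span (BA \<union> BB)" using span_minimal by blast
    ultimately show ?thesis by blast
  qed
  have "local.dim (local.span (A \<union> B)) = card (BA \<union> D)"
    using dim_eq_card[of "BA \<union> D" "local.span (A \<union> B)"] indX Xeq spX by (simp add: span_span)
  also have "\<dots> = card BA + card D"
    by (rule card_Un_disjoint) (use fBA fBB D_def int in auto)
  also have "card D = card BB - card C" unfolding D_def
    by (rule card_Diff_subset) (use C(5) BB(1) in auto)
  finally show ?thesis using cBA cBB C(4) int card_mono[OF fBB, of C] BB(1) by (simp add: C(4))
qed

lemma fdim_span_Un: "local.fdim A \<Longrightarrow> local.fdim B \<Longrightarrow> local.fdim (local.span (A \<union> B))"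
  unfolding fdim_def
proof (elim exE conjE)
  fix WA WB assume "finite WA" "A \<subseteq> local.span WA" "finite WB" "B \<subseteq> local.span WB"
  then have "A \<union> B \<subseteq> local.span (WA \<union> WB)"
    using span_mono[of WA "WA \<union> WB"] span_mono[of WB "WA \<union> WB"] by blast
  then have "local.span (A \<union> B) \<subseteq> local.span (WA \<union> WB)"
    using span_minimal[OF _ subspace_span] by blast
  then show "\<exists>W. finite W \<and> local.span (A \<union> B) \<subseteq> local.span W" using \<open>finite WA\<close> \<open>finite WB\<close> by blast
qed

end

lemma lookup_cst_mult: "Poly_Mapping.lookup (cst c * F) \<nu> = c * Poly_Mapping.lookup F \<nu>"
proof -
  have "cst c * F = Poly_Mapping.map ((*) c) F" by (simp add: cst_def mult_map_scale_conv_mult)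
  then show ?thesis by (simp add: Poly_Mapping.map.rep_eq when_def)
qed

lemma keys_cst_mult: "Poly_Mapping.keys (cst c * F) \<subseteq> Poly_Mapping.keys F"
  by (auto simp: in_keys_iff lookup_cst_mult)

lemma vs_kscale: "vector_space (kscale :: 'k::field \<Rightarrow> 'k mpol \<Rightarrow> 'k mpol)"
  by unfold_locales (auto simp: kscale_def cst_add cst_mult algebra_simps)

interpretation kv: vector_space "kscale :: 'k::field \<Rightarrow> 'k mpol \<Rightarrow> 'k mpol"
  by (rule vs_kscale)

lemma kdim_eq: "kdim = kv.dim"
  by (simp add: kdim_def fun_eq_iff)

definition keyspace :: "(nat \<Rightarrow>\<^sub>0 nat) set \<Rightarrow> 'k::comm_ring_1 mpol set" where
  "keyspace K = {F. Poly_Mapping.keys F \<subseteq> K}"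

lemma subspace_keyspace: "kv.subspace (keyspace K)"
  unfolding kv.subspace_def keyspace_def kscale_def
proof (intro conjI ballI)
  fix F G :: "'a mpol" assume "F \<in> {F. Poly_Mapping.keys F \<subseteq> K}" "G \<in> {F. Poly_Mapping.keys F \<subseteq> K}"
  then show "F + G \<in> {F. Poly_Mapping.keys F \<subseteq> K}" using keys_add[of F G] by auto
next
  show "\<forall>c. \<forall>x\<in>{F. Poly_Mapping.keys F \<subseteq> K}. cst c * x \<in> {F. Poly_Mapping.keys F \<subseteq> K}"
    using keys_cst_mult by blast
qed simp

lemma monos_indep: "kv.independent ((\<lambda>\<nu>. Poly_Mapping.single \<nu> (1::'k::field)) ` K)"
proof -
  have "kv.independent ((\<lambda>\<nu>. Poly_Mapping.single \<nu> (1::'k)) ` K)"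
    unfolding kv.independent_explicit_module
  proof (intro allI impI)
    fix t u v assume t: "finite t" "t \<subseteq> (\<lambda>\<nu>. Poly_Mapping.single \<nu> (1::'k)) ` K"
      and z: "(\<Sum>v\<in>t. kscale (u v) v) = 0" and v: "v \<in> t"
    obtain \<nu> where \<nu>: "v = Poly_Mapping.single \<nu> 1" using t v by blast
    have "Poly_Mapping.lookup (\<Sum>v\<in>t. kscale (u v) v) \<nu> = 0" using z by simp
    moreover have "Poly_Mapping.lookup (\<Sum>v\<in>t. kscale (u v) v) \<nu> = (\<Sum>w\<in>t. u w * Poly_Mapping.lookup w \<nu>)"
      by (simp add: lookup_sum kscale_def lookup_cst_mult)
    moreover have "(\<Sum>w\<in>t. u w * Poly_Mapping.lookup w \<nu>) = u v"
    proof -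
      have "(\<Sum>w\<in>t. u w * Poly_Mapping.lookup w \<nu>) = (\<Sum>w\<in>{v}. u w * Poly_Mapping.lookup w \<nu>)"
      proof (rule sum.mono_neutral_right)
        show "\<forall>w\<in>t - {v}. u w * Poly_Mapping.lookup w \<nu> = 0"
        proof
          fix w assume w: "w \<in> t - {v}"
          then obtain \<mu> where \<mu>: "w = Poly_Mapping.single \<mu> 1" using t by blast
          then have "\<mu> \<noteq> \<nu>" using w \<nu> by auto
          then show "u w * Poly_Mapping.lookup w \<nu> = 0" using \<mu> by (simp add: lookup_single)
        qed
      qed (use t v in auto)
      then show ?thesis using \<nu> by simp
    qed
    ultimately show "u v = 0" by simp
  qed
  then show ?thesis .
qed

lemma keyspace_span: "finite K \<Longrightarrow> keyspace K = kv.span ((\<lambda>\<nu>. Poly_Mapping.single \<nu> (1::'k::field)) ` K)"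
proof
  assume K: "finite K"
  show "keyspace K \<subseteq> kv.span ((\<lambda>\<nu>. Poly_Mapping.single \<nu> (1::'k)) ` K)"
  proof
    fix F :: "'k mpol" assume "F \<in> keyspace K"
    then have kF: "Poly_Mapping.keys F \<subseteq> K" by (simp add: keyspace_def)
    have "F = (\<Sum>\<nu>\<in>Poly_Mapping.keys F. kscale (Poly_Mapping.lookup F \<nu>) (Poly_Mapping.single \<nu> 1))"
      by (subst pm_expand) (simp add: kscale_def cst_single)
    also have "\<dots> \<in> kv.span ((\<lambda>\<nu>. Poly_Mapping.single \<nu> (1::'k)) ` K)"
      by (intro kv.span_sum kv.span_scale kv.span_base) (use kF in auto)
    finally show "F \<in> kv.span ((\<lambda>\<nu>. Poly_Mapping.single \<nu> (1::'k)) ` K)" .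
  qed
  show "kv.span ((\<lambda>\<nu>. Poly_Mapping.single \<nu> (1::'k)) ` K) \<subseteq> keyspace K"
    by (rule kv.span_minimal[OF _ subspace_keyspace]) (auto simp: keyspace_def)
qed

lemma single_1_inj: "Poly_Mapping.single x (1::'k::field) = Poly_Mapping.single y 1 \<Longrightarrow> x = y"
  by (metis lookup_single_eq lookup_single_not_eq one_neq_zero)

lemma dim_keyspace: "finite K \<Longrightarrow> kv.dim (keyspace K :: 'k::field mpol set) = card K"
proof -
  assume K: "finite K"
  have "kv.dim (keyspace K :: 'k mpol set) = kv.dim (kv.span ((\<lambda>\<nu>. Poly_Mapping.single \<nu> (1::'k)) ` K))"
    by (subst keyspace_span[OF K]) (rule refl)
  also have "\<dots> = card ((\<lambda>\<nu>. Poly_Mapping.single \<nu> (1::'k)) ` K)"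
    by (rule kv.dim_span_eq_card_independent[OF monos_indep])
  also have "\<dots> = card K" by (rule card_image) (auto simp: inj_on_def dest: single_1_inj)
  finally show ?thesis .
qed

lemma dim_image_inj:
  fixes f :: "'k::field mpol \<Rightarrow> 'k mpol"
  assumes hom: "module_hom kscale kscale f"
  assumes S: "kv.subspace S" "kv.fdim S" and inj: "inj_on f S"
  shows "kv.dim (f ` S) = kv.dim S"
proof -
  interpret h: module_hom kscale kscale f by (rule hom)
  obtain B where B: "B \<subseteq> S" "kv.independent B" "S \<subseteq> kv.span B" "card B = kv.dim S" "finite B"
    using kv.basis_finite[OF S(2)] by blast
  have spB: "kv.span B = S" using kv.span_subspace[OF B(1) B(3) S(1)] .
  have ind: "kv.independent (f ` B)"
    using h.independent_injective_image[OF B(2)] inj spB by simp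
  have sp: "kv.span (f ` B) = f ` S" using h.span_image[of B] spB by simp
  have ssp: "kv.span (f ` S) = f ` S"
    by (rule kv.span_eq_iff[THEN iffD2, OF h.subspace_image[OF S(1)]])
  have "kv.dim (f ` S) = card (f ` B)"
  proof (rule kv.dim_eq_card)
    show "kv.span (f ` B) = kv.span (f ` S)" by (simp only: sp ssp)
  qed (rule ind)
  also have "\<dots> = card B" using card_image[of f B] inj_on_subset[OF inj B(1)] by simp
  finally show ?thesis using B(4) by simp
qed

lemma fdim_image:
  fixes f :: "'k::field mpol \<Rightarrow> 'k mpol"
  assumes hom: "module_hom kscale kscale f" and S: "kv.fdim S"
  shows "kv.fdim (f ` S)"
proof -
  interpret h: module_hom kscale kscale f by (rule hom)
  obtain W where W: "finite W" "S \<subseteq> kv.span W" using S kv.fdim_def by blast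
  have "f ` S \<subseteq> kv.span (f ` W)" using h.span_image[of W] W by auto
  then show ?thesis using W(1) kv.fdim_def by blast
qed

lemma fdim_keyspace: "finite K \<Longrightarrow> kv.fdim (keyspace K :: 'k::field mpol set)"
  unfolding kv.fdim_def using keyspace_span by blast


definition good :: "(nat \<Rightarrow>\<^sub>0 nat) \<Rightarrow> bool" where
  "good \<nu> \<longleftrightarrow> Poly_Mapping.keys \<nu> \<subseteq> {0,1,2,3}"

definition bideg :: "(nat \<Rightarrow>\<^sub>0 nat) \<Rightarrow> nat \<times> nat" where
  "bideg \<nu> = (Poly_Mapping.lookup \<nu> 0 + Poly_Mapping.lookup \<nu> 1, Poly_Mapping.lookup \<nu> 2 + Poly_Mapping.lookup \<nu> 3)"

definition monset :: "nat \<Rightarrow> nat \<Rightarrow> (nat \<Rightarrow>\<^sub>0 nat) set" where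
  "monset p q = {\<nu>. good \<nu> \<and> bideg \<nu> = (p, q)}"

lemma bihom_keyspace: "bihom p q = keyspace (monset p q)"
  by (auto simp: bihom_def keyspace_def monset_def good_def bideg_def)

lemma ringR_keyspace: "ringR = keyspace {\<nu>. good \<nu>}"
  by (auto simp: ringR_def keyspace_def good_def)

lemma bideg_add: "bideg (\<mu> + \<nu>) = (fst (bideg \<mu>) + fst (bideg \<nu>), snd (bideg \<mu>) + snd (bideg \<nu>))"
  by (simp add: bideg_def lookup_add)

lemma good_add: "good \<mu> \<Longrightarrow> good \<nu> \<Longrightarrow> good (\<mu> + \<nu>)"
  unfolding good_def using keys_add[of \<mu> \<nu>] by blast

definition mk :: "nat \<Rightarrow> nat \<Rightarrow> nat \<Rightarrow> nat \<Rightarrow> (nat \<Rightarrow>\<^sub>0 nat)" where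
  "mk a b c d = Poly_Mapping.single 0 a + Poly_Mapping.single 1 b + Poly_Mapping.single 2 c + Poly_Mapping.single 3 d"

lemma lookup_mk: "Poly_Mapping.lookup (mk a b c d) k =
   (if k = 0 then a else if k = 1 then b else if k = 2 then c else if k = 3 then d else 0)"
  by (simp add: mk_def lookup_add lookup_single when_def)

lemma good_mk: "good (mk a b c d)"
  by (auto simp: good_def in_keys_iff lookup_mk split: if_splits)

lemma bideg_mk: "bideg (mk a b c d) = (a + b, c + d)"
  by (simp add: bideg_def lookup_mk)

lemma good_eq_mk: "good \<nu> \<Longrightarrow> \<nu> = mk (Poly_Mapping.lookup \<nu> 0) (Poly_Mapping.lookup \<nu> 1) (Poly_Mapping.lookup \<nu> 2) (Poly_Mapping.lookup \<nu> 3)"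
  by (rule poly_mapping_eqI) (auto simp: lookup_mk good_def in_keys_iff)

lemma monset_eq: "monset p q = (\<lambda>(u,v). mk u (p - u) v (q - v)) ` ({..p} \<times> {..q})"
proof
  show "monset p q \<subseteq> (\<lambda>(u,v). mk u (p - u) v (q - v)) ` ({..p} \<times> {..q})"
  proof
    fix \<nu> assume "\<nu> \<in> monset p q"
    then have g: "good \<nu>" and b: "bideg \<nu> = (p,q)" by (auto simp: monset_def)
    have "\<nu> = mk (Poly_Mapping.lookup \<nu> 0) (p - Poly_Mapping.lookup \<nu> 0) (Poly_Mapping.lookup \<nu> 2) (q - Poly_Mapping.lookup \<nu> 2)"
    proof -
    have e: "Poly_Mapping.lookup \<nu> 1 = p - Poly_Mapping.lookup \<nu> 0" "Poly_Mapping.lookup \<nu> 3 = q - Poly_Mapping.lookup \<nu> 2"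
      using b by (auto simp: bideg_def)
    show ?thesis using good_eq_mk[OF g] e by metis
  qed
    moreover have "Poly_Mapping.lookup \<nu> 0 \<le> p" "Poly_Mapping.lookup \<nu> 2 \<le> q" using b by (auto simp: bideg_def)
    ultimately show "\<nu> \<in> (\<lambda>(u,v). mk u (p - u) v (q - v)) ` ({..p} \<times> {..q})" by force
  qed
  show "(\<lambda>(u,v). mk u (p - u) v (q - v)) ` ({..p} \<times> {..q}) \<subseteq> monset p q"
    by (auto simp: monset_def good_mk bideg_mk)
qed

lemma inj_mk: "inj_on (\<lambda>(u,v). mk u (p - u) v (q - v)) X"
proof (rule inj_onI, clarify)
  fix a b c d assume "mk a (p - a) b (q - b) = mk c (p - c) d (q - d)"
  then have "Poly_Mapping.lookup (mk a (p - a) b (q - b)) 0 = Poly_Mapping.lookup (mk c (p - c) d (q - d)) 0"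
    "Poly_Mapping.lookup (mk a (p - a) b (q - b)) 2 = Poly_Mapping.lookup (mk c (p - c) d (q - d)) 2" by simp_all
  then show "a = c \<and> b = d" by (simp add: lookup_mk)
qed

lemma finite_monset: "finite (monset p q)"
  by (simp add: monset_eq)

lemma card_monset: "card (monset p q) = (p + 1) * (q + 1)"
  by (simp add: monset_eq card_image[OF inj_mk] card_cartesian_product)

lemma dim_bihom: "kv.dim (bihom p q :: 'k::field mpol set) = (p + 1) * (q + 1)"
  by (simp add: bihom_keyspace dim_keyspace finite_monset card_monset)

lemma fdim_bihom: "kv.fdim (bihom p q :: 'k::field mpol set)"
  by (simp add: bihom_keyspace fdim_keyspace finite_monset)

lemma subspace_bihom: "kv.subspace (bihom p q :: 'k::field mpol set)"
  by (simp add: bihom_keyspace subspace_keyspace)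

lemma subspace_ringR: "kv.subspace (ringR :: 'k::field mpol set)"
  by (simp add: ringR_keyspace subspace_keyspace)

lemma bihom_ringR: "bihom p q \<subseteq> (ringR :: 'k::comm_ring_1 mpol set)"
  by (auto simp: bihom_keyspace ringR_keyspace keyspace_def monset_def)

lemma keyspace_mult:
  assumes "F \<in> keyspace A" "G \<in> keyspace B" "\<And>a b. a \<in> A \<Longrightarrow> b \<in> B \<Longrightarrow> a + b \<in> C"
  shows "F * G \<in> keyspace C"
  unfolding keyspace_def
proof
  show "Poly_Mapping.keys (F * G) \<subseteq> C"
  proof
    fix x assume "x \<in> Poly_Mapping.keys (F * G)"
    then obtain a b where "x = a + b" "a \<in> Poly_Mapping.keys F" "b \<in> Poly_Mapping.keys G"
      using keys_mult[of F G] by blast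
    then show "x \<in> C" using assms by (auto simp: keyspace_def)
  qed
qed

lemma bihom_mult: "F \<in> bihom a b \<Longrightarrow> G \<in> bihom c d \<Longrightarrow> F * G \<in> bihom (a + c) (b + d)"
  unfolding bihom_keyspace
  by (erule keyspace_mult, assumption) (auto simp: monset_def good_add bideg_add)

lemma ringR_mult: "F \<in> ringR \<Longrightarrow> G \<in> ringR \<Longrightarrow> F * G \<in> ringR"
  unfolding ringR_keyspace
  by (erule keyspace_mult, assumption) (auto simp: good_add)

lemma ringR_add: "F \<in> ringR \<Longrightarrow> G \<in> ringR \<Longrightarrow> F + G \<in> (ringR :: 'k::field mpol set)"
  using subspace_ringR kv.subspace_add by blast

lemma bihom_add: "F \<in> bihom p q \<Longrightarrow> G \<in> bihom p q \<Longrightarrow> F + G \<in> (bihom p q :: 'k::field mpol set)"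
  using subspace_bihom kv.subspace_add by blast

lemma ringR_diff: "F \<in> ringR \<Longrightarrow> G \<in> ringR \<Longrightarrow> F - G \<in> (ringR :: 'k::field mpol set)"
  using subspace_ringR kv.subspace_diff by blast

lemma bihom_diff: "F \<in> bihom p q \<Longrightarrow> G \<in> bihom p q \<Longrightarrow> F - G \<in> (bihom p q :: 'k::field mpol set)"
  using subspace_bihom kv.subspace_diff by blast

lemma ringR_0[simp]: "0 \<in> ringR" by (simp add: ringR_def)
lemma bihom_0[simp]: "0 \<in> bihom p q" by (simp add: bihom_def)

lemma ringR_sum: "(\<And>x. x \<in> A \<Longrightarrow> f x \<in> ringR) \<Longrightarrow> sum f A \<in> (ringR :: 'k::field mpol set)"
  using subspace_ringR kv.subspace_sum by blast

lemma bihom_sum: "(\<And>x. x \<in> A \<Longrightarrow> f x \<in> bihom p q) \<Longrightarrow> sum f A \<in> (bihom p q :: 'k::field mpol set)"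
  using subspace_bihom kv.subspace_sum by blast

lemma cst_bihom[simp]: "cst c \<in> bihom 0 0"
  by (auto simp: bihom_def cst_def)

lemma cst_ringR[simp]: "cst c \<in> ringR"
  by (auto simp: ringR_def cst_def)

lemma one_ringR[simp]: "1 \<in> ringR"
  using cst_ringR[of 1] by simp

lemma one_bihom[simp]: "1 \<in> bihom 0 0"
  using cst_bihom[of 1] by simp

lemma var_bihom:
  "var 0 \<in> bihom 1 0" "var 1 \<in> bihom 1 0" "var 2 \<in> bihom 0 1" "var 3 \<in> bihom 0 1"
  by (auto simp: bihom_def var_def lookup_single when_def)

lemma var_ringR: "v \<le> 3 \<Longrightarrow> var v \<in> ringR"
  by (auto simp: ringR_def var_def)

lemma cst_mult_bihom: "F \<in> bihom p q \<Longrightarrow> cst c * F \<in> bihom p q"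
  using bihom_mult[OF cst_bihom[of c]] by simp

lemma cst_mult_ringR: "F \<in> ringR \<Longrightarrow> cst c * F \<in> ringR"
  using ringR_mult[OF cst_ringR[of c]] by simp

lemma lin1_bihom: "lin1 a \<in> bihom 1 0"
  unfolding lin1_def by (intro bihom_diff cst_mult_bihom var_bihom)

lemma lin2_bihom: "lin2 b \<in> bihom 0 1"
  unfolding lin2_def by (intro bihom_diff cst_mult_bihom var_bihom)

lemma bihom_power: "F \<in> bihom p q \<Longrightarrow> F ^ n \<in> bihom (n * p) (n * q)"
  by (induction n) (auto dest: bihom_mult)

lemma ringR_power: "F \<in> ringR \<Longrightarrow> F ^ n \<in> ringR"
  by (induction n) (auto intro: ringR_mult)

lemma bihom_prod: "(\<And>x. x \<in> A \<Longrightarrow> f x \<in> bihom (g x) (h x)) \<Longrightarrow>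
   prod f A \<in> bihom (\<Sum>x\<in>A. g x) (\<Sum>x\<in>A. h x)"
  by (induction A rule: infinite_finite_induct) (auto dest: bihom_mult)

lemma ringR_prod: "(\<And>x. x \<in> A \<Longrightarrow> f x \<in> ringR) \<Longrightarrow> prod f A \<in> ringR"
  by (induction A rule: infinite_finite_induct) (auto intro: ringR_mult)

lemma lin1_ringR: "lin1 a \<in> ringR" using lin1_bihom bihom_ringR by blast
lemma lin2_ringR: "lin2 b \<in> ringR" using lin2_bihom bihom_ringR by blast

lemma module_kscale: "module (kscale :: 'k::field \<Rightarrow> 'k mpol \<Rightarrow> 'k mpol)"
  using vs_kscale module_iff_vector_space by blast

lemma hom_mult: "module_hom kscale kscale (\<lambda>F. G * (F :: 'k::field mpol))"
  unfolding module_hom_iff using module_kscale by (auto simp: kscale_def algebra_simps)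

lemma hom_subst: "module_hom kscale kscale (subst f :: 'k::field mpol \<Rightarrow> _)"
  unfolding module_hom_iff using module_kscale by (auto simp: kscale_def subst_add subst_mult)

lemma mult_inj: "(G :: 'k::field mpol) \<noteq> 0 \<Longrightarrow> inj_on (\<lambda>F. G * F) S"
  by (auto simp: inj_on_def)

lemma dim_mult_image:
  assumes "(G :: 'k::field mpol) \<noteq> 0" "kv.subspace S" "kv.fdim S"
  shows "kv.dim ((\<lambda>F. G * F) ` S) = kv.dim S"
  by (rule dim_image_inj[OF hom_mult assms(2,3) mult_inj[OF assms(1)]])

definition vdeg :: "nat \<Rightarrow> nat \<times> nat" where
  "vdeg v = (if v = 0 \<or> v = 1 then (1,0) else (0,1))"

lemma monval_bihom:
  assumes f: "\<And>v. v \<in> {0,1,2,3} \<Longrightarrow> f v \<in> bihom (fst (vdeg v)) (snd (vdeg v))"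
    and g: "good \<nu>"
  shows "monval f \<nu> \<in> bihom (fst (bideg \<nu>)) (snd (bideg \<nu>))"
proof -
  have m: "monval f \<nu> = (\<Prod>v\<in>{0,1,2,3::nat}. f v ^ Poly_Mapping.lookup \<nu> v)"
    by (rule monval_alt) (use g in \<open>auto simp: good_def\<close>)
  have "(\<Prod>v\<in>{0,1,2,3::nat}. f v ^ Poly_Mapping.lookup \<nu> v) \<in>
     bihom (\<Sum>v\<in>{0,1,2,3::nat}. Poly_Mapping.lookup \<nu> v * fst (vdeg v)) (\<Sum>v\<in>{0,1,2,3::nat}. Poly_Mapping.lookup \<nu> v * snd (vdeg v))"
    by (rule bihom_prod) (rule bihom_power[OF f], auto)
  then show ?thesis using m by (simp add: bideg_def vdeg_def)
qed

lemma subst_bihom: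
  fixes F :: "'k::field mpol"
  assumes f: "\<And>v. v \<in> {0,1,2,3} \<Longrightarrow> f v \<in> bihom (fst (vdeg v)) (snd (vdeg v))"
    and F: "F \<in> bihom p q"
  shows "subst f F \<in> bihom p q"
  unfolding subst_def
proof (rule bihom_sum)
  fix \<nu> assume "\<nu> \<in> Poly_Mapping.keys F"
  then have "\<nu> \<in> monset p q" using F by (auto simp: bihom_keyspace keyspace_def)
  then have g: "good \<nu>" and b: "bideg \<nu> = (p,q)" by (auto simp: monset_def)
  show "cst (Poly_Mapping.lookup F \<nu>) * monval f \<nu> \<in> bihom p q"
    using cst_mult_bihom[OF monval_bihom[OF f g]] b by simp
qed

lemma subst_ringR:
  fixes F :: "'k::field mpol"
  assumes f: "\<And>v. v \<in> {0,1,2,3} \<Longrightarrow> f v \<in> ringR"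
    and F: "F \<in> ringR"
  shows "subst f F \<in> ringR"
  unfolding subst_def
proof (rule ringR_sum)
  fix \<nu> assume "\<nu> \<in> Poly_Mapping.keys F"
  then have g: "good \<nu>" using F by (auto simp: ringR_keyspace keyspace_def)
  have "monval f \<nu> = (\<Prod>v\<in>{0,1,2,3::nat}. f v ^ Poly_Mapping.lookup \<nu> v)"
    by (rule monval_alt) (use g in \<open>auto simp: good_def\<close>)
  also have "\<dots> \<in> ringR" by (intro ringR_prod ringR_power f) auto
  finally show "cst (Poly_Mapping.lookup F \<nu>) * monval f \<nu> \<in> ringR" by (rule cst_mult_ringR)
qed


definition hp :: "nat \<Rightarrow> nat \<Rightarrow> 'k::comm_ring_1 mpol \<Rightarrow> 'k mpol" where
  "hp p q F = Abs_poly_mapping (\<lambda>\<nu>. if \<nu> \<in> monset p q then Poly_Mapping.lookup F \<nu> else 0)"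

lemma lookup_hp: "Poly_Mapping.lookup (hp p q F) \<nu> = (if \<nu> \<in> monset p q then Poly_Mapping.lookup F \<nu> else 0)"
proof -
  have "finite {\<nu>. (if \<nu> \<in> monset p q then Poly_Mapping.lookup F \<nu> else 0) \<noteq> 0}"
    by (rule finite_subset[OF _ finite_keys[of F]]) (auto simp: in_keys_iff)
  then show ?thesis by (simp add: hp_def)
qed

lemma hp_in: "hp p q F \<in> bihom p q"
  by (auto simp: bihom_keyspace keyspace_def in_keys_iff lookup_hp split: if_splits)

lemma hp_id: "F \<in> bihom p q \<Longrightarrow> hp p q F = F"
  by (rule poly_mapping_eqI) (auto simp: lookup_hp bihom_keyspace keyspace_def in_keys_iff)

lemma hp_other: "F \<in> bihom p' q' \<Longrightarrow> (p', q') \<noteq> (p, q) \<Longrightarrow> hp p q F = 0"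
  by (rule poly_mapping_eqI) (auto simp: lookup_hp bihom_keyspace keyspace_def in_keys_iff monset_def)

lemma hp_add: "hp p q (F + G) = hp p q F + hp p q G"
  by (rule poly_mapping_eqI) (simp add: lookup_hp lookup_add)

lemma hp_0[simp]: "hp p q 0 = 0"
  by (rule poly_mapping_eqI) (simp add: lookup_hp)

lemma hp_sum: "hp p q (\<Sum>x\<in>A. f x) = (\<Sum>x\<in>A. hp p q (f x))"
  by (induction A rule: infinite_finite_induct) (auto simp: hp_add)

lemma hp_decomp:
  assumes "F \<in> ringR"
  shows "F = (\<Sum>d\<in>bideg ` Poly_Mapping.keys F. hp (fst d) (snd d) F)"
proof (rule poly_mapping_eqI)
  fix \<nu>
  have "Poly_Mapping.lookup (\<Sum>d\<in>bideg ` Poly_Mapping.keys F. hp (fst d) (snd d) F) \<nu> =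
     (\<Sum>d\<in>bideg ` Poly_Mapping.keys F. if bideg \<nu> = d \<and> good \<nu> then Poly_Mapping.lookup F \<nu> else 0)"
    by (simp add: lookup_sum lookup_hp monset_def conj_commute)
  also have "\<dots> = (if bideg \<nu> \<in> bideg ` Poly_Mapping.keys F \<and> good \<nu> then Poly_Mapping.lookup F \<nu> else 0)"
    by (cases "good \<nu>") (simp_all add: sum.delta)
  also have "\<dots> = Poly_Mapping.lookup F \<nu>"
    using assms by (auto simp: ringR_keyspace keyspace_def in_keys_iff)
  finally show "Poly_Mapping.lookup F \<nu> = Poly_Mapping.lookup (\<Sum>d\<in>bideg ` Poly_Mapping.keys F. hp (fst d) (snd d) F) \<nu>" by simp
qed

lemma hp_notin: "(p, q) \<notin> bideg ` Poly_Mapping.keys F \<Longrightarrow> hp p q F = 0"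
  by (rule poly_mapping_eqI) (force simp: lookup_hp monset_def in_keys_iff)

lemma hp_mult:
  fixes G F :: "'k::field mpol"
  assumes G: "G \<in> bihom g1 g2" and F: "F \<in> ringR"
  shows "hp (s + g1) (t + g2) (G * F) = G * hp s t F"
proof -
  let ?D = "bideg ` Poly_Mapping.keys F"
  have "G * F = (\<Sum>d\<in>?D. G * hp (fst d) (snd d) F)"
    by (subst hp_decomp[OF F]) (simp add: sum_distrib_left)
  then have "hp (s + g1) (t + g2) (G * F) = (\<Sum>d\<in>?D. hp (s + g1) (t + g2) (G * hp (fst d) (snd d) F))"
    by (simp add: hp_sum)
  also have "\<dots> = (\<Sum>d\<in>?D. if d = (s, t) then G * hp s t F else 0)"
  proof (rule sum.cong[OF refl])
    fix d assume "d \<in> ?D"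
    have inb: "G * hp (fst d) (snd d) F \<in> bihom (g1 + fst d) (g2 + snd d)"
      by (rule bihom_mult[OF G hp_in])
    show "hp (s + g1) (t + g2) (G * hp (fst d) (snd d) F) = (if d = (s, t) then G * hp s t F else 0)"
    proof (cases "d = (s, t)")
      case True
      then show ?thesis using hp_id[OF inb] by (simp add: add.commute)
    next
      case False
      then have "(g1 + fst d, g2 + snd d) \<noteq> (s + g1, t + g2)" by (cases d) auto
      then show ?thesis using hp_other[OF inb] False by simp
    qed
  qed
  also have "\<dots> = G * hp s t F"
    using hp_notin[of s t F] by (simp add: sum.delta)
  finally show ?thesis .
qed

lemma bihom_factor:
  fixes G H :: "'k::field mpol"
  assumes G: "G \<in> bihom g1 g2" "G \<noteq> 0" and H: "H \<in> ringR" "H \<noteq> 0"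
    and GH: "G * H \<in> bihom d1 d2"
  shows "g1 \<le> d1 \<and> g2 \<le> d2 \<and> H \<in> bihom (d1 - g1) (d2 - g2)"
proof -
  let ?D = "bideg ` Poly_Mapping.keys H"
  have comp: "hp s t H = 0 \<or> (s + g1 = d1 \<and> t + g2 = d2)" for s t
  proof (rule ccontr)
    assume "\<not> (hp s t H = 0 \<or> (s + g1 = d1 \<and> t + g2 = d2))"
    then have nz: "hp s t H \<noteq> 0" and ne: "(d1, d2) \<noteq> (s + g1, t + g2)" by auto
    have "G * hp s t H = hp (s + g1) (t + g2) (G * H)" using hp_mult[OF G(1) H(1)] by simp
    also have "\<dots> = 0" using hp_other[OF GH ne] .
    finally show False using nz G(2) by simp
  qed
  have eq: "H = (\<Sum>d\<in>?D. hp (fst d) (snd d) H)" by (rule hp_decomp[OF H(1)])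
  have ex: "\<exists>d\<in>?D. hp (fst d) (snd d) H \<noteq> 0"
  proof (rule ccontr)
    assume "\<not> ?thesis"
    then have "(\<Sum>d\<in>?D. hp (fst d) (snd d) H) = 0" by (intro sum.neutral) blast
    then show False using eq H(2) by simp
  qed
  then have le: "g1 \<le> d1 \<and> g2 \<le> d2" using comp by force
  have "(\<Sum>d\<in>?D. hp (fst d) (snd d) H) \<in> bihom (d1 - g1) (d2 - g2)"
  proof (rule bihom_sum)
    fix d assume "d \<in> ?D"
    show "hp (fst d) (snd d) H \<in> bihom (d1 - g1) (d2 - g2)"
    proof (cases "hp (fst d) (snd d) H = 0")
      case False
      then have "fst d + g1 = d1 \<and> snd d + g2 = d2" using comp by blast
      then have "fst d = d1 - g1" "snd d = d2 - g2" by auto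
      then show ?thesis using hp_in[of "fst d" "snd d" H] by simp
    qed simp
  qed
  then show ?thesis using le eq by simp
qed

lemma lookup_single_mult:
  "Poly_Mapping.lookup (Poly_Mapping.single m c * H) \<nu> =
     (if (\<exists>\<nu>'. \<nu> = m + \<nu>') then c * Poly_Mapping.lookup H (\<nu> - m) else 0)"
  for H :: "'k::comm_ring_1 mpol"
proof -
  have "Poly_Mapping.single m c * H = (\<Sum>\<mu>\<in>Poly_Mapping.keys H. Poly_Mapping.single (m + \<mu>) (c * Poly_Mapping.lookup H \<mu>))"
    by (subst pm_expand[of H]) (simp add: sum_distrib_left mult_single)
  then have l: "Poly_Mapping.lookup (Poly_Mapping.single m c * H) \<nu> =
      (\<Sum>\<mu>\<in>Poly_Mapping.keys H. if \<nu> = m + \<mu> then c * Poly_Mapping.lookup H \<mu> else 0)"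
    by (simp add: lookup_sum lookup_single when_def eq_commute)
  show ?thesis
  proof (cases "\<exists>\<nu>'. \<nu> = m + \<nu>'")
    case True
    then obtain \<nu>' where \<nu>': "\<nu> = m + \<nu>'" by blast
    have "(\<Sum>\<mu>\<in>Poly_Mapping.keys H. if \<nu> = m + \<mu> then c * Poly_Mapping.lookup H \<mu> else 0) =
          (\<Sum>\<mu>\<in>Poly_Mapping.keys H. if \<mu> = \<nu>' then c * Poly_Mapping.lookup H \<mu> else 0)"
      by (rule sum.cong) (auto simp: \<nu>')
    also have "\<dots> = c * Poly_Mapping.lookup H \<nu>'"
      by (simp add: sum.delta' in_keys_iff)
    finally show ?thesis using l True \<nu>' by simp
  next
    case False
    then show ?thesis using l by auto
  qed
qed

lemma lookup_single_mult_shift: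
  "Poly_Mapping.lookup (Poly_Mapping.single m c * H) (m + \<nu>) = c * Poly_Mapping.lookup H \<nu>"
  for H :: "'k::comm_ring_1 mpol"
  by (subst lookup_single_mult) auto

definition shiftv :: "nat \<Rightarrow> 'k::comm_ring_1 mpol \<Rightarrow> 'k mpol" where
  "shiftv p F = Abs_poly_mapping (\<lambda>\<nu>. Poly_Mapping.lookup F (Poly_Mapping.single p 1 + \<nu>))"

lemma lookup_shiftv: "Poly_Mapping.lookup (shiftv p F) \<nu> = Poly_Mapping.lookup F (Poly_Mapping.single p 1 + \<nu>)"
proof -
  have "finite ((\<lambda>\<nu>. Poly_Mapping.single p 1 + \<nu>) -` Poly_Mapping.keys F)"
    by (rule finite_vimageI) (auto simp: inj_on_def)
  then have "finite {\<nu>. Poly_Mapping.lookup F (Poly_Mapping.single p 1 + \<nu>) \<noteq> 0}"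
    by (simp add: in_keys_iff vimage_def)
  then show ?thesis by (simp add: shiftv_def)
qed

lemma nat_pm_decomp:
  fixes \<nu> :: "nat \<Rightarrow>\<^sub>0 nat"
  assumes "1 \<le> Poly_Mapping.lookup \<nu> p"
  shows "\<nu> = Poly_Mapping.single p 1 + (\<nu> - Poly_Mapping.single p 1)"
  by (rule poly_mapping_eqI) (use assms in \<open>auto simp: lookup_add lookup_minus lookup_single when_def\<close>)

lemma div_var:
  fixes F :: "'k::comm_ring_1 mpol"
  assumes "\<forall>\<nu>\<in>Poly_Mapping.keys F. 1 \<le> Poly_Mapping.lookup \<nu> p"
  shows "F = var p * shiftv p F"
proof (rule poly_mapping_eqI)
  fix \<nu>
  show "Poly_Mapping.lookup F \<nu> = Poly_Mapping.lookup (var p * shiftv p F) \<nu>"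
  proof (cases "\<exists>\<nu>'. \<nu> = Poly_Mapping.single p 1 + \<nu>'")
    case True
    then obtain \<nu>' where \<nu>': "\<nu> = Poly_Mapping.single p 1 + \<nu>'" by blast
    show ?thesis unfolding var_def \<nu>' lookup_single_mult_shift by (simp add: lookup_shiftv)
  next
    case False
    then have "\<nu> \<notin> Poly_Mapping.keys F" using assms nat_pm_decomp by blast
    then show ?thesis using False unfolding var_def by (simp add: lookup_single_mult in_keys_iff)
  qed
qed

lemma shiftv_ringR:
  assumes "F \<in> ringR"
  shows "shiftv p F \<in> ringR"
proof -
  have "Poly_Mapping.keys \<nu> \<subseteq> {0,1,2,3}" if "\<nu> \<in> Poly_Mapping.keys (shiftv p F)" for \<nu>
  proof -
    have "Poly_Mapping.single p 1 + \<nu> \<in> Poly_Mapping.keys F" using that by (simp add: in_keys_iff lookup_shiftv)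
    then have "Poly_Mapping.keys (Poly_Mapping.single p 1 + \<nu>) \<subseteq> {0,1,2,3}" using assms by (auto simp: ringR_def)
    moreover have "Poly_Mapping.keys \<nu> \<subseteq> Poly_Mapping.keys (Poly_Mapping.single p 1 + \<nu>)"
      by (auto simp: in_keys_iff lookup_add)
    ultimately show ?thesis by blast
  qed
  then show ?thesis by (auto simp: ringR_def)
qed

definition zv :: "nat \<Rightarrow> nat \<Rightarrow> 'k::comm_ring_1 mpol" where
  "zv p = (\<lambda>v. if v = p then 0 else var v)"

definition ev :: "nat \<Rightarrow> 'k::comm_ring_1 mpol \<Rightarrow> 'k mpol" where
  "ev p F = subst (zv p) F"

lemma monval_zv: "monval (zv p) \<mu> = (if p \<in> Poly_Mapping.keys \<mu> then 0 else (Poly_Mapping.single \<mu> 1 :: 'k::comm_ring_1 mpol))"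
proof (cases "p \<in> Poly_Mapping.keys \<mu>")
  case True
  then have "Poly_Mapping.lookup \<mu> p \<noteq> 0" by (simp add: in_keys_iff)
  then have "zv p p ^ Poly_Mapping.lookup \<mu> p = (0 :: 'k mpol)" by (simp add: zv_def zero_power_eq)
  have "monval (zv p) \<mu> = (0 :: 'k mpol)" unfolding monval_def
    by (rule prod_zero) (use True \<open>zv p p ^ Poly_Mapping.lookup \<mu> p = 0\<close> in auto)
  then show ?thesis using True by simp
next
  case False
  then have "monval (zv p) \<mu> = (monval var \<mu> :: 'k mpol)" unfolding monval_def
    by (intro prod.cong) (auto simp: zv_def)
  then show ?thesis using False by (simp add: monval_var)
qed

lemma lookup_ev: "Poly_Mapping.lookup (ev p F) \<nu> = (if Poly_Mapping.lookup \<nu> p = 0 then Poly_Mapping.lookup F \<nu> else 0)"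
proof -
  have "ev p F = (\<Sum>\<mu>\<in>Poly_Mapping.keys F. cst (Poly_Mapping.lookup F \<mu>) * (if p \<in> Poly_Mapping.keys \<mu> then 0 else Poly_Mapping.single \<mu> 1))"
    by (simp add: ev_def subst_def monval_zv)
  then have "Poly_Mapping.lookup (ev p F) \<nu> = (\<Sum>\<mu>\<in>Poly_Mapping.keys F. Poly_Mapping.lookup (cst (Poly_Mapping.lookup F \<mu>) * (if p \<in> Poly_Mapping.keys \<mu> then 0 else Poly_Mapping.single \<mu> 1)) \<nu>)"
    by (simp only: lookup_sum)
  also have "\<dots> = (\<Sum>\<mu>\<in>Poly_Mapping.keys F. if p \<in> Poly_Mapping.keys \<mu> then 0 else (if \<mu> = \<nu> then Poly_Mapping.lookup F \<mu> else 0))"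
    by (rule sum.cong) (auto simp: cst_single lookup_single when_def)
  also have "\<dots> = (\<Sum>\<mu>\<in>Poly_Mapping.keys F. if \<mu> = \<nu> then (if p \<in> Poly_Mapping.keys \<nu> then 0 else Poly_Mapping.lookup F \<nu>) else 0)"
    by (rule sum.cong) auto
  also have "\<dots> = (if Poly_Mapping.lookup \<nu> p = 0 then Poly_Mapping.lookup F \<nu> else 0)"
    by (simp add: sum.delta' in_keys_iff)
  finally show ?thesis .
qed

lemma ev_mult: "ev p (F * G) = ev p F * ev p G"
  by (simp add: ev_def subst_mult)

lemma ev_var_self: "ev p (var p) = 0"
  by (simp add: ev_def zv_def)

lemma ev_var_other: "q \<noteq> p \<Longrightarrow> ev p (var q) = var q"
  by (simp add: ev_def zv_def)

lemma ev_cst: "ev p (cst c) = cst c"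
  by (simp add: ev_def)

lemma ev_zero_div:
  fixes F :: "'k::comm_ring_1 mpol"
  assumes "ev p F = 0"
  shows "F = var p * shiftv p F"
proof (rule div_var, rule ballI)
  fix \<nu> assume \<nu>: "\<nu> \<in> Poly_Mapping.keys F"
  show "1 \<le> Poly_Mapping.lookup \<nu> p"
  proof (rule ccontr)
    assume "\<not> 1 \<le> Poly_Mapping.lookup \<nu> p"
    then have "Poly_Mapping.lookup \<nu> p = 0" by simp
    then have "Poly_Mapping.lookup (ev p F) \<nu> = Poly_Mapping.lookup F \<nu>" by (simp add: lookup_ev)
    then show False using assms \<nu> by (simp add: in_keys_iff)
  qed
qed


definition lf :: "nat \<Rightarrow> nat \<Rightarrow> 'k::field \<times> 'k \<Rightarrow> 'k mpol" where
  "lf p q a = cst (snd a) * var p - cst (fst a) * var q"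

lemma lin1_lf: "lin1 a = lf 0 1 a" by (simp add: lin1_def lf_def)
lemma lin2_lf: "lin2 b = lf 2 3 b" by (simp add: lin2_def lf_def)

definition pair :: "nat \<Rightarrow> nat \<Rightarrow> bool" where
  "pair p q \<longleftrightarrow> p \<noteq> q \<and> p \<le> 3 \<and> q \<le> 3 \<and> vdeg p = vdeg q"

lemma pair01: "pair 0 1" and pair23: "pair 2 3"
  by (auto simp: pair_def vdeg_def)

definition cc :: "'k::field \<times> 'k \<Rightarrow> 'k \<times> 'k" where
  "cc a = (if snd a \<noteq> 0 then (1 / snd a, 0) else (0, - 1 / fst a))"

lemma cc_det: "a \<noteq> (0,0) \<Longrightarrow> snd a * fst (cc a) - fst a * snd (cc a) = 1"
  by (cases a) (auto simp: cc_def)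

definition nrm :: "nat \<Rightarrow> nat \<Rightarrow> 'k::field \<times> 'k \<Rightarrow> nat \<Rightarrow> 'k mpol" where
  "nrm p q a v = (if v = p then cst (fst (cc a)) * var p + cst (fst a) * var q
     else if v = q then cst (snd (cc a)) * var p + cst (snd a) * var q else var v)"

definition inrm :: "nat \<Rightarrow> nat \<Rightarrow> 'k::field \<times> 'k \<Rightarrow> nat \<Rightarrow> 'k mpol" where
  "inrm p q a v = (if v = p then lf p q a
     else if v = q then cst (- snd (cc a)) * var p + cst (fst (cc a)) * var q else var v)"

lemma lincomb_eq:
  "cst a * (X::'k::field mpol) + cst b * Y = cst a' * X + cst b' * Y" if "a = a'" "b = b'"
  using that by simp

lemma nrm_lf_gen:
  assumes "p \<noteq> q"
  shows "subst (nrm p q a) (lf p q a') =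
     cst (snd a' * fst (cc a) - fst a' * snd (cc a)) * var p + cst (snd a' * fst a - fst a' * snd a) * var q"
  using assms by (simp add: lf_def nrm_def subst_diff subst_mult cst_mult cst_diff algebra_simps)

lemma nrm_lf:
  assumes "p \<noteq> q" "a \<noteq> (0,0)"
  shows "subst (nrm p q a) (lf p q a) = var p"
  using nrm_lf_gen[OF assms(1), of a a] cc_det[OF assms(2)] by (simp add: mult.commute)

lemma inrm_nrm:
  assumes "p \<noteq> q" "a \<noteq> (0,0)"
  shows "subst (inrm p q a) (subst (nrm p q a) F) = F"
proof -
  have d: "snd a * fst (cc a) - fst a * snd (cc a) = 1" by (rule cc_det[OF assms(2)])
  have "(\<lambda>v. subst (inrm p q a) (nrm p q a v)) = var"
  proof
    fix v
    show "subst (inrm p q a) (nrm p q a v) = var v"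
    proof (cases "v = p")
      case True
      have "subst (inrm p q a) (nrm p q a v) =
          cst (snd a * fst (cc a) - fst a * snd (cc a)) * var p + cst 0 * var q"
        using True assms(1) by (simp add: nrm_def inrm_def lf_def subst_add subst_mult subst_diff cst_mult cst_diff cst_uminus algebra_simps)
      then show ?thesis using d True by simp
    next
      case False
      show ?thesis
      proof (cases "v = q")
        case True
        have "subst (inrm p q a) (nrm p q a v) =
            cst 0 * var p + cst (snd a * fst (cc a) - fst a * snd (cc a)) * var q"
          using True assms(1) by (simp add: nrm_def inrm_def lf_def subst_add subst_mult subst_diff cst_mult cst_diff cst_uminus algebra_simps)
        then show ?thesis using d True by simp
      next
        case False
        then show ?thesis using \<open>v \<noteq> p\<close> by (simp add: nrm_def inrm_def)
      qed
    qed
  qed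
  then show ?thesis by (simp add: subst_subst)
qed

lemma nrm_inrm:
  assumes "p \<noteq> q" "a \<noteq> (0,0)"
  shows "subst (nrm p q a) (subst (inrm p q a) F) = F"
proof -
  have d: "snd a * fst (cc a) - fst a * snd (cc a) = 1" by (rule cc_det[OF assms(2)])
  have "(\<lambda>v. subst (nrm p q a) (inrm p q a v)) = var"
  proof
    fix v
    show "subst (nrm p q a) (inrm p q a v) = var v"
    proof (cases "v = p")
      case True
      then show ?thesis using nrm_lf[OF assms] by (simp add: inrm_def)
    next
      case False
      show ?thesis
      proof (cases "v = q")
        case True
        have "subst (nrm p q a) (inrm p q a v) =
            cst 0 * var p + cst (snd a * fst (cc a) - fst a * snd (cc a)) * var q"
          using True assms(1) by (simp add: nrm_def inrm_def subst_add subst_diff subst_uminus subst_mult cst_mult cst_diff cst_uminus algebra_simps)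
        then show ?thesis using d True by simp
      next
        case False
        then show ?thesis using \<open>v \<noteq> p\<close> by (simp add: nrm_def inrm_def)
      qed
    qed
  qed
  then show ?thesis by (simp add: subst_subst)
qed

lemma var_bihom_vdeg: "v \<le> 3 \<Longrightarrow> var v \<in> bihom (fst (vdeg v)) (snd (vdeg v))"
proof -
  assume "v \<le> 3"
  then have "v = 0 \<or> v = 1 \<or> v = 2 \<or> v = 3" by auto
  then show ?thesis using var_bihom by (auto simp: vdeg_def)
qed

lemma var_bihom_vdeg': "v \<le> 3 \<Longrightarrow> vdeg v = d \<Longrightarrow> var v \<in> bihom (fst d) (snd d)"
  using var_bihom_vdeg by blast

lemma lincomb_bihom:
  assumes "X \<in> bihom d e" "Y \<in> bihom d e"
  shows "cst a * X + cst b * Y \<in> (bihom d e :: 'k::field mpol set)"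
  by (intro bihom_add cst_mult_bihom assms)

lemma lf_bihom: "pair p q \<Longrightarrow> lf p q a \<in> bihom (fst (vdeg p)) (snd (vdeg p))"
proof -
  assume "pair p q"
  then have pq: "p \<le> 3" "q \<le> 3" "vdeg p = vdeg q" by (auto simp: pair_def)
  have vp: "var p \<in> bihom (fst (vdeg p)) (snd (vdeg p))" using var_bihom_vdeg[OF pq(1)] .
  have vq: "var q \<in> bihom (fst (vdeg p)) (snd (vdeg p))" using var_bihom_vdeg[OF pq(2)] pq(3) by simp
  show ?thesis unfolding lf_def by (intro bihom_diff cst_mult_bihom vp vq)
qed

lemma nrm_bihom:
  fixes a :: "'k::field \<times> 'k"
  assumes "pair p q" "v \<in> {0,1,2,3}"
  shows "nrm p q a v \<in> bihom (fst (vdeg v)) (snd (vdeg v))"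
proof -
  have pq: "p \<le> 3" "q \<le> 3" "vdeg p = vdeg q" and v: "v \<le> 3" using assms by (auto simp: pair_def)
  have vp: "(var p :: 'k mpol) \<in> bihom (fst (vdeg p)) (snd (vdeg p))" using var_bihom_vdeg[OF pq(1)] .
  have vq: "(var q :: 'k mpol) \<in> bihom (fst (vdeg p)) (snd (vdeg p))" using var_bihom_vdeg[OF pq(2)] pq(3) by simp
  have l: "cst c * var p + cst d * var q \<in> bihom (fst (vdeg p)) (snd (vdeg p))" for c d :: 'k
    by (rule lincomb_bihom[OF vp vq])
  show ?thesis
  proof (cases "v = p")
    case True
    then show ?thesis using l by (simp add: nrm_def)
  next
    case False
    show ?thesis
    proof (cases "v = q")
      case True
      then show ?thesis using l pq(3) False by (simp add: nrm_def)
    next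
      case False
      then show ?thesis using \<open>v \<noteq> p\<close> var_bihom_vdeg[OF v] by (simp add: nrm_def)
    qed
  qed
qed

lemma inrm_bihom:
  fixes a :: "'k::field \<times> 'k"
  assumes "pair p q" "v \<in> {0,1,2,3}"
  shows "inrm p q a v \<in> bihom (fst (vdeg v)) (snd (vdeg v))"
proof -
  have pq: "p \<le> 3" "q \<le> 3" "vdeg p = vdeg q" and v: "v \<le> 3" using assms by (auto simp: pair_def)
  have vp: "(var p :: 'k mpol) \<in> bihom (fst (vdeg p)) (snd (vdeg p))" using var_bihom_vdeg[OF pq(1)] .
  have vq: "(var q :: 'k mpol) \<in> bihom (fst (vdeg p)) (snd (vdeg p))" using var_bihom_vdeg[OF pq(2)] pq(3) by simp
  have l: "cst c * var p + cst d * var q \<in> bihom (fst (vdeg p)) (snd (vdeg p))" for c d :: 'k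
    by (rule lincomb_bihom[OF vp vq])
  have lf: "lf p q a \<in> bihom (fst (vdeg p)) (snd (vdeg p))" using lf_bihom[OF assms(1)] .
  show ?thesis
  proof (cases "v = p")
    case True
    then show ?thesis using lf by (simp add: inrm_def)
  next
    case False
    show ?thesis
    proof (cases "v = q")
      case True
      then show ?thesis using l pq(3) False by (simp add: inrm_def)
    next
      case False
      then show ?thesis using \<open>v \<noteq> p\<close> var_bihom_vdeg[OF v] by (simp add: inrm_def)
    qed
  qed
qed


lemma subst_nrm_bihom: "pair p q \<Longrightarrow> F \<in> bihom d e \<Longrightarrow> subst (nrm p q a) F \<in> bihom d e"
  by (rule subst_bihom[OF nrm_bihom])
lemma subst_inrm_bihom: "pair p q \<Longrightarrow> F \<in> bihom d e \<Longrightarrow> subst (inrm p q a) F \<in> bihom d e"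
  by (rule subst_bihom[OF inrm_bihom])

lemma subst_nrm_ringR: "pair p q \<Longrightarrow> F \<in> ringR \<Longrightarrow> subst (nrm p q a) F \<in> ringR"
  by (rule subst_ringR) (use nrm_bihom bihom_ringR in blast)+
lemma subst_inrm_ringR: "pair p q \<Longrightarrow> F \<in> ringR \<Longrightarrow> subst (inrm p q a) F \<in> ringR"
  by (rule subst_ringR) (use inrm_bihom bihom_ringR in blast)+

lemma lf_ringR: "pair p q \<Longrightarrow> lf p q a \<in> ringR"
  using lf_bihom bihom_ringR by blast

section \<open>Evaluation along a linear form: primality\<close>

definition evL :: "nat \<Rightarrow> nat \<Rightarrow> 'k::field \<times> 'k \<Rightarrow> 'k mpol \<Rightarrow> 'k mpol" where
  "evL p q a F = ev p (subst (nrm p q a) F)"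

lemma ev_add: "ev p (F + G) = ev p F + ev p G"
  by (simp add: ev_def subst_add)

lemma evL_one[simp]: "evL p q a 1 = 1"
  by (simp add: evL_def ev_def)

lemma evL_mult: "evL p q a (F * G) = evL p q a F * evL p q a G"
  by (simp add: evL_def subst_mult ev_mult)

lemma evL_power: "evL p q a (F ^ n) = evL p q a F ^ n"
  by (induction n) (auto simp: evL_mult)

lemma evL_prod: "evL p q a (\<Prod>x\<in>A. f x) = (\<Prod>x\<in>A. evL p q a (f x))"
  by (induction A rule: infinite_finite_induct) (auto simp: evL_mult)

lemma evL_self: "p \<noteq> q \<Longrightarrow> a \<noteq> (0,0) \<Longrightarrow> evL p q a (lf p q a) = 0"
  by (simp add: evL_def nrm_lf ev_var_self)

lemma var_nonzero: "var v \<noteq> (0 :: 'k::comm_ring_1 mpol)"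
  by (metis lookup_single_eq lookup_zero one_neq_zero var_def)

lemma evL_other:
  assumes "p \<noteq> q" "\<not> proj_eq a' a"
  shows "evL p q a (lf p q a') \<noteq> 0"
proof -
  have "evL p q a (lf p q a') = cst (snd a' * fst a - fst a' * snd a) * var q"
    using assms(1) by (simp add: evL_def nrm_lf_gen ev_add ev_mult ev_var_self ev_var_other ev_cst)
  moreover have "snd a' * fst a - fst a' * snd a \<noteq> 0" using assms(2) by (simp add: proj_eq_def)
  ultimately show ?thesis using var_nonzero[of q] by simp
qed

lemma lf_nonzero: "p \<noteq> q \<Longrightarrow> a \<noteq> (0,0) \<Longrightarrow> lf p q a \<noteq> 0"
  using nrm_lf[of p q a] var_nonzero[of p] by auto

lemma evL_zero_dvd:
  assumes "pair p q" "a \<noteq> (0,0)" "F \<in> ringR" "evL p q a F = 0"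
  shows "\<exists>H\<in>ringR. F = lf p q a * H"
proof -
  have pq: "p \<noteq> q" using assms(1) by (simp add: pair_def)
  let ?G = "subst (nrm p q a) F"
  have G: "?G = var p * shiftv p ?G" using ev_zero_div assms(4) by (simp add: evL_def)
  have "F = subst (inrm p q a) ?G" using inrm_nrm[OF pq assms(2)] by simp
  also have "\<dots> = lf p q a * subst (inrm p q a) (shiftv p ?G)"
    by (subst G) (simp add: subst_mult inrm_def)
  finally have "F = lf p q a * subst (inrm p q a) (shiftv p ?G)" .
  moreover have "subst (inrm p q a) (shiftv p ?G) \<in> ringR"
    by (intro subst_inrm_ringR[OF assms(1)] shiftv_ringR subst_nrm_ringR[OF assms(1) assms(3)])
  ultimately show ?thesis by blast
qed

lemma lf_pow_cancel:
  assumes "pair p q" "a \<noteq> (0,0)" "P \<in> ringR" "evL p q a P \<noteq> 0"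
  shows "H \<in> ringR \<Longrightarrow> K \<in> ringR \<Longrightarrow> P * H = lf p q a ^ e * K \<Longrightarrow> \<exists>H'\<in>ringR. H = lf p q a ^ e * H'"
proof (induction e arbitrary: H K)
  case 0
  then show ?case by auto
next
  case (Suc e)
  have pq: "p \<noteq> q" using assms(1) by (simp add: pair_def)
  have "evL p q a P * evL p q a H = evL p q a (P * H)" by (simp only: evL_mult)
  also have "\<dots> = evL p q a (lf p q a ^ Suc e * K)" by (simp only: Suc.prems(3))
  also have "\<dots> = 0" by (simp add: evL_mult evL_power evL_self[OF pq assms(2)])
  finally have "evL p q a H = 0" using assms(4) by simp
  then obtain H1 where H1: "H1 \<in> ringR" "H = lf p q a * H1"
    using evL_zero_dvd[OF assms(1,2) Suc.prems(1)] by blast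
  have "lf p q a * (P * H1) = lf p q a * (lf p q a ^ e * K)"
    using Suc.prems(3) H1(2) by (simp add: algebra_simps)
  then have "P * H1 = lf p q a ^ e * K" using lf_nonzero[OF pq assms(2)] by simp
  then obtain H' where "H' \<in> ringR" "H1 = lf p q a ^ e * H'"
    using Suc.IH[OF H1(1) Suc.prems(2)] by blast
  then show ?case using H1 by (intro bexI[of _ H']) auto
qed

lemma dvd_combine:
  assumes "pair p q" "a \<noteq> (0,0)" "P \<in> ringR" "evL p q a P \<noteq> 0"
    and "H \<in> ringR" "K \<in> ringR" "F = P * H" "F = lf p q a ^ e * K"
  shows "\<exists>H'\<in>ringR. F = P * lf p q a ^ e * H'"
proof -
  obtain H' where "H' \<in> ringR" "H = lf p q a ^ e * H'"
    using lf_pow_cancel[OF assms(1-4) assms(5,6)] assms(7,8) by metis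
  then show ?thesis using assms(7) by (intro bexI[of _ H']) (auto simp: mult.assoc)
qed


definition Mul :: "'k::field mpol \<Rightarrow> nat \<Rightarrow> nat \<Rightarrow> 'k mpol set" where
  "Mul G p q = {F \<in> bihom p q. \<exists>H\<in>ringR. F = G * H}"

lemma Mul_subset: "Mul G p q \<subseteq> bihom p q"
  by (auto simp: Mul_def)

lemma subspace_Mul: "G \<in> ringR \<Longrightarrow> kv.subspace (Mul G p q)"
  unfolding kv.subspace_def Mul_def
proof (intro conjI ballI allI)
  show "0 \<in> {F \<in> bihom p q. \<exists>H\<in>ringR. F = G * H}" by (auto intro: bexI[of _ 0])
next
  fix F1 F2 assume "F1 \<in> {F \<in> bihom p q. \<exists>H\<in>ringR. F = G * H}" "F2 \<in> {F \<in> bihom p q. \<exists>H\<in>ringR. F = G * H}"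
  then obtain H1 H2 where "F1 \<in> bihom p q" "F2 \<in> bihom p q" "H1 \<in> ringR" "H2 \<in> ringR" "F1 = G * H1" "F2 = G * H2"
    by blast
  then show "F1 + F2 \<in> {F \<in> bihom p q. \<exists>H\<in>ringR. F = G * H}"
    by (auto intro!: bihom_add bexI[of _ "H1 + H2"] ringR_add simp: algebra_simps)
next
  fix c F1 assume "F1 \<in> {F \<in> bihom p q. \<exists>H\<in>ringR. F = G * H}"
  then obtain H1 where h: "F1 \<in> bihom p q" "H1 \<in> ringR" "F1 = G * H1" by blast
  have "kscale c F1 \<in> bihom p q" unfolding kscale_def by (rule cst_mult_bihom[OF h(1)])
  moreover have "cst c * H1 \<in> ringR" by (rule cst_mult_ringR[OF h(2)])
  moreover have "kscale c F1 = G * (cst c * H1)" unfolding kscale_def h(3) by (simp add: mult.left_commute)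
  ultimately show "kscale c F1 \<in> {F \<in> bihom p q. \<exists>H\<in>ringR. F = G * H}" by blast
qed

lemma fdim_Mul: "kv.fdim (Mul G p q)"
  using kv.fdim_subset[OF fdim_bihom Mul_subset] .

lemma Mul_char:
  assumes G: "G \<in> bihom g1 g2" "G \<noteq> 0"
  shows "Mul G p q = (if g1 \<le> p \<and> g2 \<le> q then (\<lambda>H. G * H) ` bihom (p - g1) (q - g2) else {0})"
proof (cases "g1 \<le> p \<and> g2 \<le> q")
  case True
  have "Mul G p q = (\<lambda>H. G * H) ` bihom (p - g1) (q - g2)"
  proof
    show "Mul G p q \<subseteq> (\<lambda>H. G * H) ` bihom (p - g1) (q - g2)"
    proof
      fix F assume "F \<in> Mul G p q"
      then obtain H where H: "F \<in> bihom p q" "H \<in> ringR" "F = G * H" by (auto simp: Mul_def)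
      show "F \<in> (\<lambda>H. G * H) ` bihom (p - g1) (q - g2)"
      proof (cases "H = 0")
        case True
        then show ?thesis using H(3) by (auto intro!: image_eqI[of _ _ 0])
      next
        case False
        then have "H \<in> bihom (p - g1) (q - g2)" using bihom_factor[OF G H(2) False] H by auto
        then show ?thesis using H(3) by blast
      qed
    qed
    show "(\<lambda>H. G * H) ` bihom (p - g1) (q - g2) \<subseteq> Mul G p q"
    proof
      fix F assume "F \<in> (\<lambda>H. G * H) ` bihom (p - g1) (q - g2)"
      then obtain H where H: "H \<in> bihom (p - g1) (q - g2)" "F = G * H" by blast
      have "F \<in> bihom (g1 + (p - g1)) (g2 + (q - g2))" using bihom_mult[OF G(1) H(1)] H(2) by simp
      then have "F \<in> bihom p q" using True by simp
      moreover have "H \<in> ringR" using H(1) bihom_ringR by blast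
      ultimately show "F \<in> Mul G p q" using H(2) by (auto simp: Mul_def)
    qed
  qed
  then show ?thesis using True by simp
next
  case False
  have "Mul G p q = {0}"
  proof
    show "Mul G p q \<subseteq> {0}"
    proof
      fix F assume "F \<in> Mul G p q"
      then obtain H where H: "F \<in> bihom p q" "H \<in> ringR" "F = G * H" by (auto simp: Mul_def)
      have "H = 0"
      proof (rule ccontr)
        assume "H \<noteq> 0"
        then show False using bihom_factor[OF G H(2)] H False by auto
      qed
      then show "F \<in> {0}" using H by simp
    qed
    show "{0} \<subseteq> Mul G p q" by (auto simp: Mul_def intro: bexI[of _ 0])
  qed
  then show ?thesis by (subst if_not_P[OF False])
qed

lemma dim_zero_space: "kv.dim ({0} :: 'k::field mpol set) = 0"
proof -
  have "kv.dim ({0} :: 'k mpol set) = card ({} :: 'k mpol set)"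
  proof (rule kv.dim_eq_card)
    show "kv.span {} = kv.span ({0} :: 'k mpol set)" by simp
    show "kv.independent ({} :: 'k mpol set)" by (rule kv.independent_empty)
  qed
  then show ?thesis by simp
qed

lemma dim_Mul:
  assumes G: "G \<in> bihom g1 g2" "G \<noteq> 0"
  shows "kv.dim (Mul G p q) = (p + 1 - g1) * (q + 1 - g2)"
proof (cases "g1 \<le> p \<and> g2 \<le> q")
  case True
  have "kv.dim (Mul G p q) = kv.dim ((\<lambda>H. G * H) ` bihom (p - g1) (q - g2))"
    using Mul_char[OF G] True by simp
  also have "\<dots> = kv.dim (bihom (p - g1) (q - g2) :: 'a mpol set)"
    by (rule dim_mult_image[OF G(2) subspace_bihom fdim_bihom])
  also have "\<dots> = (p - g1 + 1) * (q - g2 + 1)" by (simp only: dim_bihom)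
  finally have X: "kv.dim (Mul G p q) = (p - g1 + 1) * (q - g2 + 1)" .
  have "(p - g1 + 1) = p + 1 - g1" "(q - g2 + 1) = q + 1 - g2" using True by auto
  then show ?thesis using X by simp
next
  case False
  then show ?thesis using Mul_char[OF G] by (auto simp: dim_zero_space)
qed

definition nonprop :: "'i set \<Rightarrow> ('i \<Rightarrow> 'k::field \<times> 'k) \<Rightarrow> bool" where
  "nonprop C a \<longleftrightarrow> (\<forall>c\<in>C. a c \<noteq> (0,0)) \<and> (\<forall>c\<in>C. \<forall>c'\<in>C. c \<noteq> c' \<longrightarrow> \<not> proj_eq (a c) (a c'))"

definition PP :: "nat \<Rightarrow> nat \<Rightarrow> 'i set \<Rightarrow> ('i \<Rightarrow> 'k::field \<times> 'k) \<Rightarrow> ('i \<Rightarrow> nat) \<Rightarrow> 'k mpol" where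
  "PP p q C a e = (\<Prod>c\<in>C. lf p q (a c) ^ e c)"

lemma PP_ringR: "pair p q \<Longrightarrow> PP p q C a e \<in> ringR"
  unfolding PP_def by (intro ringR_prod ringR_power lf_ringR)

lemma PP_bihom: "pair p q \<Longrightarrow> PP p q C a e \<in> bihom ((\<Sum>c\<in>C. e c) * fst (vdeg p)) ((\<Sum>c\<in>C. e c) * snd (vdeg p))"
proof -
  assume pq: "pair p q"
  have "PP p q C a e \<in> bihom (\<Sum>c\<in>C. e c * fst (vdeg p)) (\<Sum>c\<in>C. e c * snd (vdeg p))"
    unfolding PP_def by (intro bihom_prod bihom_power lf_bihom[OF pq])
  then show ?thesis by (simp add: sum_distrib_right)
qed

lemma PP_nonzero: "pair p q \<Longrightarrow> finite C \<Longrightarrow> nonprop C a \<Longrightarrow> PP p q C a e \<noteq> 0"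
  unfolding PP_def nonprop_def pair_def
  by (auto simp: prod_zero_iff lf_nonzero)

lemma evL_PP:
  assumes "pair p q" "finite C" "nonprop C a" "\<forall>c\<in>C. \<not> proj_eq (a c) b"
  shows "evL p q b (PP p q C a e) \<noteq> 0"
proof -
  have pq: "p \<noteq> q" using assms(1) by (simp add: pair_def)
  have "\<forall>c\<in>C. evL p q b (lf p q (a c)) \<noteq> 0" using evL_other[OF pq] assms(4) by blast
  then show ?thesis unfolding PP_def evL_prod evL_power
    using assms(2) by (auto simp: prod_zero_iff)
qed

lemma proj_eq_sym: "proj_eq a b \<longleftrightarrow> proj_eq b a"
  unfolding proj_eq_def by (metis mult.commute)

lemma fam_dvd:
  assumes pq: "pair p q" and fin: "finite C" and np: "nonprop C a" and F: "F \<in> ringR"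
    and dv: "\<forall>c\<in>C. \<exists>K\<in>ringR. F = lf p q (a c) ^ e c * K"
  shows "\<exists>H\<in>ringR. F = PP p q C a e * H"
  using fin np dv
proof (induction C rule: finite_induct)
  case empty
  then show ?case using F by (auto simp: PP_def)
next
  case (insert c C)
  have npC: "nonprop C a" using insert.prems(1) by (auto simp: nonprop_def)
  obtain H where H: "H \<in> ringR" "F = PP p q C a e * H"
    using insert.IH[OF npC] insert.prems(2) by blast
  obtain K where K: "K \<in> ringR" "F = lf p q (a c) ^ e c * K" using insert.prems(2) by blast
  have ac: "a c \<noteq> (0,0)" using insert.prems(1) by (auto simp: nonprop_def)
  have "\<forall>c'\<in>C. \<not> proj_eq (a c') (a c)"
    using insert.prems(1) insert.hyps(2) by (auto simp: nonprop_def)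
  then have ev: "evL p q (a c) (PP p q C a e) \<noteq> 0" by (rule evL_PP[OF pq insert.hyps(1) npC])
  obtain H' where H': "H' \<in> ringR" "F = PP p q C a e * lf p q (a c) ^ e c * H'"
    using dvd_combine[OF pq ac PP_ringR[OF pq] ev H(1) K(1) H(2) K(2)] by blast
  have "PP p q (insert c C) a e = lf p q (a c) ^ e c * PP p q C a e"
    using insert.hyps by (simp add: PP_def)
  then show ?case using H' by (intro bexI[of _ H']) (auto simp: algebra_simps)
qed

lemma Mul_PP_Inter:
  assumes pq: "pair p q" and fin: "finite C" and np: "nonprop C a"
  shows "Mul (PP p q C a e) i j = {F \<in> bihom i j. \<forall>c\<in>C. F \<in> Mul (lf p q (a c) ^ e c) i j}"
proof
  show "Mul (PP p q C a e) i j \<subseteq> {F \<in> bihom i j. \<forall>c\<in>C. F \<in> Mul (lf p q (a c) ^ e c) i j}"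
  proof
    fix F assume "F \<in> Mul (PP p q C a e) i j"
    then obtain H where H: "F \<in> bihom i j" "H \<in> ringR" "F = PP p q C a e * H" by (auto simp: Mul_def)
    have "F \<in> Mul (lf p q (a c) ^ e c) i j" if c: "c \<in> C" for c
    proof -
      have "PP p q C a e = lf p q (a c) ^ e c * PP p q (C - {c}) a e"
        unfolding PP_def using fin c by (simp add: prod.remove)
      then have "F = lf p q (a c) ^ e c * (PP p q (C - {c}) a e * H)" using H(3) by (simp add: mult.assoc)
      moreover have "PP p q (C - {c}) a e * H \<in> ringR" by (intro ringR_mult PP_ringR[OF pq] H(2))
      ultimately show ?thesis using H(1) by (auto simp: Mul_def)
    qed
    then show "F \<in> {F \<in> bihom i j. \<forall>c\<in>C. F \<in> Mul (lf p q (a c) ^ e c) i j}" using H(1) by blast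
  qed
  show "{F \<in> bihom i j. \<forall>c\<in>C. F \<in> Mul (lf p q (a c) ^ e c) i j} \<subseteq> Mul (PP p q C a e) i j"
  proof
    fix F assume F: "F \<in> {F \<in> bihom i j. \<forall>c\<in>C. F \<in> Mul (lf p q (a c) ^ e c) i j}"
    then have "\<forall>c\<in>C. \<exists>K\<in>ringR. F = lf p q (a c) ^ e c * K" by (auto simp: Mul_def)
    moreover have "F \<in> ringR" using F bihom_ringR by blast
    ultimately obtain H where "H \<in> ringR" "F = PP p q C a e * H" using fam_dvd[OF pq fin np] by blast
    then show "F \<in> Mul (PP p q C a e) i j" using F by (auto simp: Mul_def)
  qed
qed

lemma dim_Mul_PPx:
  assumes "finite C" "nonprop C a"
  shows "kv.dim (Mul (PP 0 1 C a e) i j) = (i + 1 - (\<Sum>c\<in>C. e c)) * (j + 1)"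
proof -
  have "PP 0 1 C a e \<in> bihom ((\<Sum>c\<in>C. e c) * 1) ((\<Sum>c\<in>C. e c) * 0)"
    using PP_bihom[OF pair01, of C a e] by (simp add: vdeg_def)
  then show ?thesis using dim_Mul[of "PP 0 1 C a e" "\<Sum>c\<in>C. e c" 0 i j] PP_nonzero[OF pair01 assms]
    by simp
qed

lemma dim_Mul_PPy:
  assumes "finite C" "nonprop C a"
  shows "kv.dim (Mul (PP 2 3 C a e) i j) = (i + 1) * (j + 1 - (\<Sum>c\<in>C. e c))"
proof -
  have "PP 2 3 C a e \<in> bihom ((\<Sum>c\<in>C. e c) * 0) ((\<Sum>c\<in>C. e c) * 1)"
    using PP_bihom[OF pair23, of C a e] by (simp add: vdeg_def)
  then show ?thesis using dim_Mul[of "PP 2 3 C a e" 0 "\<Sum>c\<in>C. e c" i j] PP_nonzero[OF pair23 assms]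
    by simp
qed


section \<open>Rows decouple (Chinese remainder type argument)\<close>

lemma lfx_pow_bihom: "lf 0 1 a ^ l \<in> bihom l 0"
  using bihom_power[OF lf_bihom[OF pair01, of a], of l] by (simp add: vdeg_def)

lemma lfx_pow_nonzero: "a \<noteq> (0,0) \<Longrightarrow> lf 0 1 a ^ l \<noteq> 0"
  using lf_nonzero[of 0 1 a] by simp

lemma dim_Mul_lfx: "a \<noteq> (0,0) \<Longrightarrow> kv.dim (Mul (lf 0 1 a ^ l) i j) = (i + 1 - l) * (j + 1)"
  using dim_Mul[OF lfx_pow_bihom lfx_pow_nonzero] by simp

lemma span_Un_subset_bihom:
  assumes "A \<subseteq> bihom i j" "B \<subseteq> bihom i j"
  shows "kv.span (A \<union> B) \<subseteq> (bihom i j :: 'k::field mpol set)"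
  by (rule kv.span_minimal) (use assms subspace_bihom in auto)

lemma crt_rows:
  fixes a :: "'i \<Rightarrow> 'k::field \<times> 'k" and S :: "'i \<Rightarrow> 'k mpol set"
  assumes fin: "finite R" and np: "nonprop R a" and deg: "(\<Sum>r\<in>R. l r) \<le> i + 1"
    and S: "\<And>r. r \<in> R \<Longrightarrow> kv.subspace (S r) \<and> S r \<subseteq> bihom i j \<and> Mul (lf 0 1 (a r) ^ l r) i j \<subseteq> S r"
  shows "kv.dim (bihom i j :: 'k mpol set) - kv.dim (bihom i j \<inter> (\<Inter>r\<in>R. S r))
      = (\<Sum>r\<in>R. kv.dim (bihom i j :: 'k mpol set) - kv.dim (S r))"
  using fin np deg S
proof (induction R rule: finite_induct)
  case empty
  then show ?case by simp
next
  case (insert r R)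
  let ?V = "bihom i j :: 'k mpol set"
  let ?A = "?V \<inter> (\<Inter>s\<in>R. S s)"
  let ?B = "S r"
  have npR: "nonprop R a" using insert.prems(1) by (auto simp: nonprop_def)
  have degR: "(\<Sum>s\<in>R. l s) \<le> i + 1" using insert.prems(2) insert.hyps by simp
  have SR: "\<And>s. s \<in> R \<Longrightarrow> kv.subspace (S s) \<and> S s \<subseteq> bihom i j \<and> Mul (lf 0 1 (a s) ^ l s) i j \<subseteq> S s"
    using insert.prems(3) by blast
  have IH: "kv.dim ?V - kv.dim ?A = (\<Sum>s\<in>R. kv.dim ?V - kv.dim (S s))"
    by (rule insert.IH[OF npR degR SR])
  have Sr: "kv.subspace ?B" "?B \<subseteq> ?V" "Mul (lf 0 1 (a r) ^ l r) i j \<subseteq> ?B"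
    using insert.prems(3) by auto
  have ar: "a r \<noteq> (0,0)" using insert.prems(1) by (auto simp: nonprop_def)
  have subA: "kv.subspace ?A"
    by (intro kv.subspace_inter subspace_bihom kv.subspace_Int) (use SR in blast)
  have fA: "kv.fdim ?A" by (rule kv.fdim_subset[OF fdim_bihom]) blast
  have fB: "kv.fdim ?B" by (rule kv.fdim_subset[OF fdim_bihom Sr(2)])
  have AB: "?A \<inter> ?B = ?V \<inter> (\<Inter>s\<in>insert r R. S s)" by auto
  have main: "kv.dim (kv.span (?A \<union> ?B)) + kv.dim (?A \<inter> ?B) = kv.dim ?A + kv.dim ?B"
    by (rule kv.dim_sum_int[OF subA fA Sr(1) fB])
    let ?M1 = "Mul (PP 0 1 R a l) i j"
  let ?M2 = "Mul (lf 0 1 (a r) ^ l r) i j"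
  have M1A: "?M1 \<subseteq> ?A"
  proof
    fix F assume F: "F \<in> ?M1"
    then have "F \<in> {F \<in> bihom i j. \<forall>c\<in>R. F \<in> Mul (lf 0 1 (a c) ^ l c) i j}"
      using Mul_PP_Inter[OF pair01 insert.hyps(1) npR] by blast
    then show "F \<in> ?A" using SR by blast
  qed
  have M2B: "?M2 \<subseteq> ?B" by (rule Sr(3))
  have M12: "?M1 \<inter> ?M2 \<subseteq> Mul (PP 0 1 (insert r R) a l) i j"
  proof
    fix F assume F: "F \<in> ?M1 \<inter> ?M2"
    then have "F \<in> {F \<in> bihom i j. \<forall>c\<in>R. F \<in> Mul (lf 0 1 (a c) ^ l c) i j}"
      using Mul_PP_Inter[OF pair01 insert.hyps(1) npR] by blast
    then have "F \<in> {F \<in> bihom i j. \<forall>c\<in>insert r R. F \<in> Mul (lf 0 1 (a c) ^ l c) i j}"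
      using F by blast
    then show "F \<in> Mul (PP 0 1 (insert r R) a l) i j"
      using Mul_PP_Inter[OF pair01 _ insert.prems(1)] insert.hyps(1) by blast
  qed
  have sM1: "kv.subspace ?M1" by (rule subspace_Mul[OF PP_ringR[OF pair01]])
  have sM2: "kv.subspace ?M2" by (rule subspace_Mul) (intro ringR_power lf_ringR pair01)
  have mainM: "kv.dim (kv.span (?M1 \<union> ?M2)) + kv.dim (?M1 \<inter> ?M2) = kv.dim ?M1 + kv.dim ?M2"
    by (rule kv.dim_sum_int[OF sM1 fdim_Mul sM2 fdim_Mul])
  have d1: "kv.dim ?M1 = (i + 1 - (\<Sum>s\<in>R. l s)) * (j + 1)"
    by (rule dim_Mul_PPx[OF insert.hyps(1) npR])
  have d2: "kv.dim ?M2 = (i + 1 - l r) * (j + 1)" by (rule dim_Mul_lfx[OF ar])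
  have d12: "kv.dim (?M1 \<inter> ?M2) \<le> (i + 1 - (\<Sum>s\<in>insert r R. l s)) * (j + 1)"
  proof -
    have "kv.dim (?M1 \<inter> ?M2) \<le> kv.dim (Mul (PP 0 1 (insert r R) a l) i j)"
      by (rule kv.dim_mono_fd[OF fdim_Mul M12])
    also have "\<dots> = (i + 1 - (\<Sum>s\<in>insert r R. l s)) * (j + 1)"
      by (rule dim_Mul_PPx) (use insert.hyps(1) insert.prems(1) in auto)
    finally show ?thesis .
  qed
  have sumeq: "(\<Sum>s\<in>insert r R. l s) = l r + (\<Sum>s\<in>R. l s)" using insert.hyps by simp
  have "(i + 1 - (\<Sum>s\<in>R. l s)) * (j + 1) + (i + 1 - l r) * (j + 1)
        = (i + 1) * (j + 1) + (i + 1 - (\<Sum>s\<in>insert r R. l s)) * (j + 1)"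
  proof -
    have "(i + 1 - (\<Sum>s\<in>R. l s)) + (i + 1 - l r) = (i + 1) + (i + 1 - (\<Sum>s\<in>insert r R. l s))"
      using insert.prems(2) sumeq by linarith
    then show ?thesis by (metis add_mult_distrib)
  qed
  then have geM: "(i + 1) * (j + 1) \<le> kv.dim (kv.span (?M1 \<union> ?M2))"
    using mainM d1 d2 d12 by linarith
  have dV: "kv.dim ?V = (i + 1) * (j + 1)" by (rule dim_bihom)
  have spV: "kv.span (?A \<union> ?B) \<subseteq> ?V" by (rule span_Un_subset_bihom) (use Sr in auto)
  have fsp: "kv.fdim (kv.span (?A \<union> ?B))" by (rule kv.fdim_subset[OF fdim_bihom spV])
  have "kv.span (?M1 \<union> ?M2) \<subseteq> kv.span (?A \<union> ?B)"
    by (rule kv.span_mono) (use M1A M2B in blast)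
  then have "kv.dim (kv.span (?M1 \<union> ?M2)) \<le> kv.dim (kv.span (?A \<union> ?B))"
    by (rule kv.dim_mono_fd[OF fsp])
  moreover have "kv.dim (kv.span (?A \<union> ?B)) \<le> kv.dim ?V"
    by (rule kv.dim_mono_fd[OF fdim_bihom spV])
  ultimately have eqV: "kv.dim (kv.span (?A \<union> ?B)) = kv.dim ?V"
    using geM dV by linarith
  have leA: "kv.dim ?A \<le> kv.dim ?V" by (rule kv.dim_mono_fd[OF fdim_bihom]) blast
  have leB: "kv.dim ?B \<le> kv.dim ?V" by (rule kv.dim_mono_fd[OF fdim_bihom Sr(2)])
  have "kv.dim ?V - kv.dim (?V \<inter> (\<Inter>s\<in>insert r R. S s)) = (kv.dim ?V - kv.dim ?A) + (kv.dim ?V - kv.dim ?B)"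
    using main[unfolded AB] eqV leA leB by linarith
  then show ?case using IH insert.hyps by simp
qed


lemma pid_ringR: "F \<in> pt_ideal_pow P \<mu> \<Longrightarrow> F \<in> (ringR :: 'k::field mpol set)"
  unfolding pt_ideal_pow_def
  by (auto intro!: ringR_sum ringR_mult ringR_power lin1_ringR lin2_ringR)

lemma pid_0: "0 \<in> pt_ideal_pow P \<mu>"
  unfolding pt_ideal_pow_def by (rule CollectI, rule exI[of _ "\<lambda>_. 0"]) simp

lemma pid_add: "F \<in> pt_ideal_pow P \<mu> \<Longrightarrow> G \<in> pt_ideal_pow P \<mu> \<Longrightarrow> F + G \<in> (pt_ideal_pow P \<mu> :: 'k::field mpol set)"
  unfolding pt_ideal_pow_def
proof (elim CollectE exE conjE, intro CollectI)
  fix g h assume g: "\<forall>k\<le>\<mu>. g k \<in> ringR" and h: "\<forall>k\<le>\<mu>. h k \<in> ringR"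
    and F: "F = (\<Sum>k\<le>\<mu>. g k * lin1 (fst P) ^ k * lin2 (snd P) ^ (\<mu> - k))"
    and G: "G = (\<Sum>k\<le>\<mu>. h k * lin1 (fst P) ^ k * lin2 (snd P) ^ (\<mu> - k))"
  show "\<exists>g. (\<forall>k\<le>\<mu>. g k \<in> ringR) \<and> F + G = (\<Sum>k\<le>\<mu>. g k * lin1 (fst P) ^ k * lin2 (snd P) ^ (\<mu> - k))"
    by (rule exI[of _ "\<lambda>k. g k + h k"]) (use g h in \<open>auto simp: F G ringR_add sum.distrib algebra_simps\<close>)
qed

lemma pid_mult: "F \<in> pt_ideal_pow P \<mu> \<Longrightarrow> r \<in> ringR \<Longrightarrow> r * F \<in> (pt_ideal_pow P \<mu> :: 'k::field mpol set)"
  unfolding pt_ideal_pow_def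
proof (elim CollectE exE conjE, intro CollectI)
  fix g assume g: "\<forall>k\<le>\<mu>. g k \<in> ringR" and r: "r \<in> ringR"
    and F: "F = (\<Sum>k\<le>\<mu>. g k * lin1 (fst P) ^ k * lin2 (snd P) ^ (\<mu> - k))"
  show "\<exists>g. (\<forall>k\<le>\<mu>. g k \<in> ringR) \<and> r * F = (\<Sum>k\<le>\<mu>. g k * lin1 (fst P) ^ k * lin2 (snd P) ^ (\<mu> - k))"
    by (rule exI[of _ "\<lambda>k. r * g k"]) (use g r in \<open>auto simp: F ringR_mult sum_distrib_left algebra_simps\<close>)
qed

lemma pid_gen: "k0 \<le> \<mu> \<Longrightarrow> lin1 (fst P) ^ k0 * lin2 (snd P) ^ (\<mu> - k0) \<in> (pt_ideal_pow P \<mu> :: 'k::field mpol set)"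
  unfolding pt_ideal_pow_def
proof (intro CollectI exI[of _ "\<lambda>k. if k = k0 then 1 else 0"] conjI)
  assume "k0 \<le> \<mu>"
  show "\<forall>k\<le>\<mu>. (if k = k0 then 1 else 0) \<in> (ringR :: 'k mpol set)" by auto
  have "(\<Sum>k\<le>\<mu>. (if k = k0 then 1 else 0) * lin1 (fst P) ^ k * lin2 (snd P) ^ (\<mu> - k)) =
        (\<Sum>k\<le>\<mu>. if k = k0 then lin1 (fst P) ^ k * lin2 (snd P) ^ (\<mu> - k) else (0 :: 'k mpol))"
    by (rule sum.cong) auto
  also have "\<dots> = lin1 (fst P) ^ k0 * lin2 (snd P) ^ (\<mu> - k0)" using \<open>k0 \<le> \<mu>\<close> by (simp add: sum.delta)
  finally show "lin1 (fst P) ^ k0 * lin2 (snd P) ^ (\<mu> - k0) =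
      (\<Sum>k\<le>\<mu>. (if k = k0 then 1 else 0) * lin1 (fst P) ^ k * lin2 (snd P) ^ (\<mu> - k))" by simp
qed

lemma pid_sum: "(\<And>x. x \<in> A \<Longrightarrow> f x \<in> pt_ideal_pow P \<mu>) \<Longrightarrow> sum f A \<in> (pt_ideal_pow P \<mu> :: 'k::field mpol set)"
  by (induction A rule: infinite_finite_induct) (auto simp: pid_0 pid_add)

lemma pid_kscale: "F \<in> pt_ideal_pow P \<mu> \<Longrightarrow> kscale c F \<in> (pt_ideal_pow P \<mu> :: 'k::field mpol set)"
  unfolding kscale_def by (rule pid_mult) auto

lemma subspace_pid: "kv.subspace (pt_ideal_pow P \<mu> :: 'k::field mpol set)"
  unfolding kv.subspace_def using pid_0 pid_add pid_kscale by blast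

lemma pid_gen2:
  assumes "u + v \<ge> \<mu>" "r \<in> ringR"
  shows "lin1 (fst P) ^ u * lin2 (snd P) ^ v * r \<in> (pt_ideal_pow P \<mu> :: 'k::field mpol set)"
proof -
  define k where "k = min u \<mu>"
  have k: "k \<le> \<mu>" "k \<le> u" "\<mu> - k \<le> v" using assms(1) by (auto simp: k_def)
  have "lin1 (fst P) ^ u * lin2 (snd P) ^ v * r =
     (lin1 (fst P) ^ (u - k) * lin2 (snd P) ^ (v - (\<mu> - k)) * r) * (lin1 (fst P) ^ k * lin2 (snd P) ^ (\<mu> - k))"
  proof -
    have "lin1 (fst P) ^ u = lin1 (fst P) ^ (u - k) * (lin1 (fst P) :: 'k mpol) ^ k"
      using k by (simp add: power_add[symmetric])
    moreover have "lin2 (snd P) ^ v = lin2 (snd P) ^ (v - (\<mu> - k)) * (lin2 (snd P) :: 'k mpol) ^ (\<mu> - k)"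
      using k by (simp add: power_add[symmetric])
    ultimately show ?thesis by (simp add: algebra_simps)
  qed
  also have "\<dots> \<in> pt_ideal_pow P \<mu>"
    by (intro pid_mult pid_gen k ringR_mult ringR_power lin1_ringR lin2_ringR assms(2))
  finally show ?thesis .
qed

lemma proj_scalar:
  fixes a a' :: "'k::field \<times> 'k"
  assumes "a \<noteq> (0,0)" "a' \<noteq> (0,0)" "proj_eq a' a"
  shows "\<exists>lam. lam \<noteq> 0 \<and> fst a' = lam * fst a \<and> snd a' = lam * snd a"
proof (cases "snd a = 0")
  case False
  define lam where "lam = snd a' / snd a"
  have e: "fst a' * snd a = snd a' * fst a" using assms(3) by (simp add: proj_eq_def)
  have "fst a' = lam * fst a" using e False by (simp add: lam_def field_simps)
  moreover have "snd a' = lam * snd a" using False by (simp add: lam_def)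
  moreover have "lam \<noteq> 0" using assms(2) \<open>fst a' = lam * fst a\<close> \<open>snd a' = lam * snd a\<close> by (cases a') auto
  ultimately show ?thesis by blast
next
  case True
  then have f: "fst a \<noteq> 0" using assms(1) by (cases a) auto
  define lam where "lam = fst a' / fst a"
  have e: "fst a' * snd a = snd a' * fst a" using assms(3) by (simp add: proj_eq_def)
  then have "snd a' = 0" using True f by simp
  have "fst a' = lam * fst a" using f by (simp add: lam_def)
  moreover have "snd a' = lam * snd a" using True \<open>snd a' = 0\<close> by simp
  moreover have "lam \<noteq> 0" using assms(2) \<open>fst a' = lam * fst a\<close> \<open>snd a' = 0\<close> by (cases a') auto
  ultimately show ?thesis by blast
qed

lemma pid_proj_x:
  fixes a a' :: "'k::field \<times> 'k"
  assumes "a \<noteq> (0,0)" "a' \<noteq> (0,0)" "proj_eq a' a"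
  shows "pt_ideal_pow (a', b) \<mu> = pt_ideal_pow (a, b) \<mu>"
proof -
  obtain lam where l: "lam \<noteq> 0" "fst a' = lam * fst a" "snd a' = lam * snd a" using proj_scalar[OF assms] by blast
  have L: "lin1 a' = cst lam * lin1 a" unfolding lin1_def l by (simp add: cst_mult algebra_simps)
  have sub: "pt_ideal_pow (a', b) \<mu> \<subseteq> pt_ideal_pow (a, b) \<mu>"
    if L: "lin1 a' = cst lam * lin1 a" for a a' :: "'k \<times> 'k" and lam
  proof
    fix F assume "F \<in> pt_ideal_pow (a', b) \<mu>"
    then obtain g where g: "\<forall>k\<le>\<mu>. g k \<in> ringR" "F = (\<Sum>k\<le>\<mu>. g k * lin1 a' ^ k * lin2 b ^ (\<mu> - k))"
      by (auto simp: pt_ideal_pow_def)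
    have "F = (\<Sum>k\<le>\<mu>. (cst (lam ^ k) * g k) * lin1 a ^ k * lin2 b ^ (\<mu> - k))"
      unfolding g(2) L by (intro sum.cong refl) (simp add: power_mult_distrib cst_power algebra_simps)
    moreover have "\<forall>k\<le>\<mu>. cst (lam ^ k) * g k \<in> ringR" using g(1) by (auto intro: cst_mult_ringR)
    ultimately show "F \<in> pt_ideal_pow (a, b) \<mu>" unfolding pt_ideal_pow_def by auto
  qed
  have L': "lin1 a = cst (inverse lam) * lin1 a'" using L l(1) by (simp add: cst_mult[symmetric] mult.assoc[symmetric])
  show ?thesis using sub[OF L] sub[OF L'] by blast
qed


definition mm :: "nat \<Rightarrow> nat \<Rightarrow> (nat \<Rightarrow>\<^sub>0 nat)" where
  "mm u w = Poly_Mapping.single 0 u + Poly_Mapping.single 1 w"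

definition xm :: "nat \<Rightarrow> nat \<Rightarrow> 'k::comm_ring_1 mpol" where
  "xm u w = Poly_Mapping.single (mm u w) 1"

lemma lookup_mm: "Poly_Mapping.lookup (mm u w) k = (if k = 0 then u else if k = 1 then w else 0)"
  by (simp add: mm_def lookup_add lookup_single when_def)

lemma xm_eq: "xm u w = var 0 ^ u * (var 1 ^ w :: 'k::comm_ring_1 mpol)"
  by (simp add: xm_def mm_def var_power mult_single)

lemma nat_pm_ex_iff: "(\<exists>\<nu>'. \<nu> = m + \<nu>') \<longleftrightarrow> (\<forall>k. Poly_Mapping.lookup m k \<le> Poly_Mapping.lookup \<nu> k)"
  for \<nu> m :: "nat \<Rightarrow>\<^sub>0 nat"
proof
  assume "\<exists>\<nu>'. \<nu> = m + \<nu>'"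
  then show "\<forall>k. Poly_Mapping.lookup m k \<le> Poly_Mapping.lookup \<nu> k" by (auto simp: lookup_add)
next
  assume le: "\<forall>k. Poly_Mapping.lookup m k \<le> Poly_Mapping.lookup \<nu> k"
  have "\<nu> = m + (\<nu> - m)"
    by (rule poly_mapping_eqI) (use le in \<open>simp add: lookup_add lookup_minus\<close>)
  then show "\<exists>\<nu>'. \<nu> = m + \<nu>'" by blast
qed

lemma ex_mm_iff: "(\<exists>\<nu>'. \<nu> = mm u w + \<nu>') \<longleftrightarrow> (u \<le> Poly_Mapping.lookup \<nu> 0 \<and> w \<le> Poly_Mapping.lookup \<nu> 1)"
  unfolding nat_pm_ex_iff lookup_mm
  by (metis le0 zero_neq_one)

lemma lookup_xm_mult:
  "Poly_Mapping.lookup (xm u w * H) \<nu> =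
    (if u \<le> Poly_Mapping.lookup \<nu> 0 \<and> w \<le> Poly_Mapping.lookup \<nu> 1 then Poly_Mapping.lookup H (\<nu> - mm u w) else 0)"
  for H :: "'k::comm_ring_1 mpol"
  unfolding xm_def lookup_single_mult ex_mm_iff by simp

definition xslice :: "nat \<Rightarrow> nat \<Rightarrow> 'k::comm_ring_1 mpol \<Rightarrow> 'k mpol" where
  "xslice i u F = Abs_poly_mapping (\<lambda>\<nu>. if Poly_Mapping.lookup \<nu> 0 = 0 \<and> Poly_Mapping.lookup \<nu> 1 = 0
       then Poly_Mapping.lookup F (mm u (i - u) + \<nu>) else 0)"

lemma lookup_xslice: "Poly_Mapping.lookup (xslice i u F) \<nu> =
   (if Poly_Mapping.lookup \<nu> 0 = 0 \<and> Poly_Mapping.lookup \<nu> 1 = 0 then Poly_Mapping.lookup F (mm u (i - u) + \<nu>) else 0)"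
proof -
  have "finite ((\<lambda>\<nu>. mm u (i - u) + \<nu>) -` Poly_Mapping.keys F)"
    by (rule finite_vimageI) (auto simp: inj_on_def)
  then have "finite {\<nu>. (if Poly_Mapping.lookup \<nu> 0 = 0 \<and> Poly_Mapping.lookup \<nu> 1 = 0 then Poly_Mapping.lookup F (mm u (i - u) + \<nu>) else 0) \<noteq> 0}"
    by (rule finite_subset[rotated]) (auto simp: in_keys_iff)
  then show ?thesis by (simp add: xslice_def)
qed

definition xfree :: "'k::comm_ring_1 mpol \<Rightarrow> bool" where
  "xfree G \<longleftrightarrow> (\<forall>\<nu>\<in>Poly_Mapping.keys G. Poly_Mapping.lookup \<nu> 0 = 0 \<and> Poly_Mapping.lookup \<nu> 1 = 0)"

lemma bihom0_xfree: "G \<in> bihom 0 j \<Longrightarrow> xfree G"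
  by (auto simp: xfree_def bihom_def)

lemma xslice_bihom:
  assumes "F \<in> bihom i j"
  shows "xslice i u F \<in> bihom 0 j"
  unfolding bihom_def
proof (intro CollectI ballI conjI)
  fix \<nu> assume \<nu>: "\<nu> \<in> Poly_Mapping.keys (xslice i u F)"
  then have z: "Poly_Mapping.lookup \<nu> 0 = 0" "Poly_Mapping.lookup \<nu> 1 = 0"
    and k: "mm u (i - u) + \<nu> \<in> Poly_Mapping.keys F"
    by (auto simp: in_keys_iff lookup_xslice split: if_splits)
  have kk: "Poly_Mapping.keys (mm u (i - u) + \<nu>) \<subseteq> {0,1,2,3}"
    and d: "Poly_Mapping.lookup (mm u (i - u) + \<nu>) 2 + Poly_Mapping.lookup (mm u (i - u) + \<nu>) 3 = j"
    using assms k by (auto simp: bihom_def)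
  have "Poly_Mapping.keys \<nu> \<subseteq> Poly_Mapping.keys (mm u (i - u) + \<nu>)"
    by (auto simp: in_keys_iff lookup_add)
  then show "Poly_Mapping.keys \<nu> \<subseteq> {0,1,2,3}" using kk by blast
  show "Poly_Mapping.lookup \<nu> 0 + Poly_Mapping.lookup \<nu> 1 = 0" using z by simp
  show "Poly_Mapping.lookup \<nu> 2 + Poly_Mapping.lookup \<nu> 3 = j" using d by (simp add: lookup_add lookup_mm)
qed

lemma xslice_term:
  assumes "u \<le> i"
  shows "Poly_Mapping.lookup (xm u (i - u) * xslice i u F) \<nu> =
    (if Poly_Mapping.lookup \<nu> 0 = u \<and> Poly_Mapping.lookup \<nu> 1 = i - u then Poly_Mapping.lookup F \<nu> else 0)"
proof (cases "u \<le> Poly_Mapping.lookup \<nu> 0 \<and> i - u \<le> Poly_Mapping.lookup \<nu> 1")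
  case True
  have e: "mm u (i - u) + (\<nu> - mm u (i - u)) = \<nu>"
    by (rule poly_mapping_eqI) (use True in \<open>simp add: lookup_add lookup_minus lookup_mm\<close>)
  show ?thesis
    using True by (auto simp add: lookup_xm_mult lookup_xslice lookup_minus lookup_mm e)
next
  case False
  then show ?thesis by (auto simp: lookup_xm_mult)
qed

lemma xslice_decomp:
  assumes F: "F \<in> bihom i j"
  shows "F = (\<Sum>u\<le>i. xm u (i - u) * xslice i u F)"
proof (rule poly_mapping_eqI)
  fix \<nu>
  have "Poly_Mapping.lookup (\<Sum>u\<le>i. xm u (i - u) * xslice i u F) \<nu> =
      (\<Sum>u\<le>i. if Poly_Mapping.lookup \<nu> 0 = u \<and> Poly_Mapping.lookup \<nu> 1 = i - u then Poly_Mapping.lookup F \<nu> else 0)"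
    by (simp add: lookup_sum xslice_term)
  also have "\<dots> = (\<Sum>u\<le>i. if u = Poly_Mapping.lookup \<nu> 0 then (if Poly_Mapping.lookup \<nu> 0 + Poly_Mapping.lookup \<nu> 1 = i then Poly_Mapping.lookup F \<nu> else 0) else 0)"
    by (rule sum.cong) auto
  also have "\<dots> = (if Poly_Mapping.lookup \<nu> 0 \<le> i then (if Poly_Mapping.lookup \<nu> 0 + Poly_Mapping.lookup \<nu> 1 = i then Poly_Mapping.lookup F \<nu> else 0) else 0)"
    by (simp add: sum.delta')
  also have "\<dots> = Poly_Mapping.lookup F \<nu>"
    using F by (auto simp: bihom_def in_keys_iff)
  finally show "Poly_Mapping.lookup F \<nu> = Poly_Mapping.lookup (\<Sum>u\<le>i. xm u (i - u) * xslice i u F) \<nu>" by simp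
qed

lemma xslice_add: "xslice i u (F + G) = xslice i u F + xslice i u G"
  by (rule poly_mapping_eqI) (simp add: lookup_xslice lookup_add)

lemma xslice_0[simp]: "xslice i u 0 = 0"
  by (rule poly_mapping_eqI) (simp add: lookup_xslice)

lemma xslice_sum: "xslice i u (\<Sum>x\<in>A. f x) = (\<Sum>x\<in>A. xslice i u (f x))"
  by (induction A rule: infinite_finite_induct) (auto simp: xslice_add)

lemma xslice_xm:
  assumes G: "xfree G" and u: "u \<le> i" and u': "u' \<le> i"
  shows "xslice i u (xm u' (i - u') * G) = (if u = u' then G else 0)"
proof (rule poly_mapping_eqI)
  fix \<nu>
  show "Poly_Mapping.lookup (xslice i u (xm u' (i - u') * G)) \<nu> = Poly_Mapping.lookup (if u = u' then G else 0) \<nu>"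
  proof (cases "Poly_Mapping.lookup \<nu> 0 = 0 \<and> Poly_Mapping.lookup \<nu> 1 = 0")
    case True
    have l0: "Poly_Mapping.lookup (mm u (i - u) + \<nu>) 0 = u" and l1: "Poly_Mapping.lookup (mm u (i - u) + \<nu>) 1 = i - u"
      using True by (simp_all add: lookup_add lookup_mm)
    show ?thesis
    proof (cases "u = u'")
      case True
      have d: "(mm u (i - u) + \<nu>) - mm u (i - u) = \<nu>" by simp
      show ?thesis using \<open>Poly_Mapping.lookup \<nu> 0 = 0 \<and> Poly_Mapping.lookup \<nu> 1 = 0\<close>
        unfolding lookup_xslice lookup_xm_mult True[symmetric] l0 l1 d by simp
    next
      case False
      then have "\<not> (u' \<le> u \<and> i - u' \<le> i - u)" using u u' by auto
      then have nc: "\<not> (u' \<le> Poly_Mapping.lookup (mm u (i - u) + \<nu>) 0 \<and> i - u' \<le> Poly_Mapping.lookup (mm u (i - u) + \<nu>) 1)"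
        unfolding l0 l1 .
      show ?thesis using \<open>Poly_Mapping.lookup \<nu> 0 = 0 \<and> Poly_Mapping.lookup \<nu> 1 = 0\<close> False
        unfolding lookup_xslice lookup_xm_mult if_not_P[OF nc] by simp
    qed
  next
    case False
    have "Poly_Mapping.lookup G \<nu> = 0"
    proof (rule ccontr)
      assume "Poly_Mapping.lookup G \<nu> \<noteq> 0"
      then have "\<nu> \<in> Poly_Mapping.keys G" by (simp add: in_keys_iff)
      then show False using G False unfolding xfree_def by blast
    qed
    then show ?thesis unfolding lookup_xslice if_not_P[OF False] by simp
  qed
qed

lemma xslice_unique:
  assumes G: "\<And>u. u \<le> i \<Longrightarrow> xfree (G u)" and u: "u \<le> i"
  shows "xslice i u (\<Sum>u'\<le>i. xm u' (i - u') * G u') = G u"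
proof -
  have "xslice i u (\<Sum>u'\<le>i. xm u' (i - u') * G u') = (\<Sum>u'\<le>i. if u = u' then G u' else 0)"
    unfolding xslice_sum by (rule sum.cong) (auto simp: xslice_xm[OF G u])
  also have "\<dots> = G u" using u by (simp add: sum.delta)
  finally show ?thesis .
qed

lemma subst_xm_y: "subst (nrm 2 3 b) (xm u w) = (xm u w :: 'k::field mpol)"
  by (simp add: xm_eq subst_mult subst_power nrm_def)

lemma subst_xm_yi: "subst (inrm 2 3 b) (xm u w) = (xm u w :: 'k::field mpol)"
  by (simp add: xm_eq subst_mult subst_power inrm_def)

lemma xslice_subst_y:
  fixes F :: "'k::field mpol"
  assumes F: "F \<in> bihom i j" and u: "u \<le> i"
  shows "xslice i u (subst (nrm 2 3 b) F) = subst (nrm 2 3 b) (xslice i u F)"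
proof -
  have "subst (nrm 2 3 b) F = (\<Sum>u'\<le>i. xm u' (i - u') * subst (nrm 2 3 b) (xslice i u' F))"
    by (subst xslice_decomp[OF F]) (simp add: subst_sum subst_mult subst_xm_y)
  then show ?thesis
    using xslice_unique[of i "\<lambda>u'. subst (nrm 2 3 b) (xslice i u' F)" u] u
      bihom0_xfree[OF subst_nrm_bihom[OF pair23 xslice_bihom[OF F]]] by simp
qed

lemma lin1_01[simp]: "lin1 (0,1) = (var 0 :: 'k::field mpol)" by (simp add: lin1_def)
lemma lin2_01[simp]: "lin2 (0,1) = (var 2 :: 'k::field mpol)" by (simp add: lin2_def)

lemma pid00_keys:
  fixes F :: "'k::field mpol"
  assumes "F \<in> pt_ideal_pow ((0,1),(0,1)) \<mu>"
  shows "\<forall>\<nu>\<in>Poly_Mapping.keys F. \<mu> \<le> Poly_Mapping.lookup \<nu> 0 + Poly_Mapping.lookup \<nu> 2"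
proof -
  obtain g where g: "F = (\<Sum>k\<le>\<mu>. g k * var 0 ^ k * var 2 ^ (\<mu> - k))"
    using assms by (auto simp: pt_ideal_pow_def)
  let ?K = "{\<nu>. \<mu> \<le> Poly_Mapping.lookup \<nu> 0 + Poly_Mapping.lookup \<nu> 2}"
  have "F \<in> keyspace ?K" unfolding g
  proof (rule kv.subspace_sum[OF subspace_keyspace])
    fix k assume k: "k \<in> {..\<mu>}"
    have m: "var 0 ^ k * var 2 ^ (\<mu> - k) = (Poly_Mapping.single (Poly_Mapping.single 0 k + Poly_Mapping.single 2 (\<mu> - k)) 1 :: 'k mpol)"
      by (simp add: var_power mult_single)
    have "g k * Poly_Mapping.single (Poly_Mapping.single 0 k + Poly_Mapping.single 2 (\<mu> - k)) 1 \<in> keyspace ?K"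
      by (rule keyspace_mult[of _ UNIV _ "{Poly_Mapping.single 0 k + Poly_Mapping.single 2 (\<mu> - k)}"])
         (use k in \<open>auto simp: keyspace_def lookup_add lookup_single\<close>)
    then show "g k * var 0 ^ k * var 2 ^ (\<mu> - k) \<in> keyspace ?K" using m by (simp add: mult.assoc)
  qed
  then show ?thesis by (auto simp: keyspace_def)
qed

lemma nrm23_var0: "nrm 2 3 b 0 = var 0" and nrm23_var1: "nrm 2 3 b 1 = var 1"
  by (simp_all add: nrm_def)

lemma pid_transport_y:
  fixes b :: "'k::field \<times> 'k"
  assumes b: "b \<noteq> (0,0)" and F: "F \<in> pt_ideal_pow ((0,1), b) \<mu>"
  shows "subst (nrm 2 3 b) F \<in> pt_ideal_pow ((0,1),(0,1)) \<mu>"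
proof -
  obtain g where g: "\<forall>k\<le>\<mu>. g k \<in> ringR" "F = (\<Sum>k\<le>\<mu>. g k * var 0 ^ k * lin2 b ^ (\<mu> - k))"
    using F by (auto simp: pt_ideal_pow_def)
  have "subst (nrm 2 3 b) F = (\<Sum>k\<le>\<mu>. subst (nrm 2 3 b) (g k) * var 0 ^ k * var 2 ^ (\<mu> - k))"
    unfolding g(2) by (simp add: subst_sum subst_mult subst_power nrm23_var0 lin2_lf nrm_lf[OF _ b])
  moreover have "\<forall>k\<le>\<mu>. subst (nrm 2 3 b) (g k) \<in> ringR" using g(1) subst_nrm_ringR[OF pair23] by blast
  ultimately show ?thesis unfolding pt_ideal_pow_def by auto
qed

lemma var_pow_div:
  fixes F :: "'k::field mpol"
  shows "F \<in> ringR \<Longrightarrow> \<forall>\<nu>\<in>Poly_Mapping.keys F. e \<le> Poly_Mapping.lookup \<nu> p \<Longrightarrow> \<exists>H\<in>ringR. F = var p ^ e * H"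
proof (induction e arbitrary: F)
  case 0
  then show ?case by auto
next
  case (Suc e)
  have F: "F = var p * shiftv p F" by (rule div_var) (use Suc.prems(2) in auto)
  have "\<forall>\<nu>\<in>Poly_Mapping.keys (shiftv p F). e \<le> Poly_Mapping.lookup \<nu> p"
  proof
    fix \<nu> assume "\<nu> \<in> Poly_Mapping.keys (shiftv p F)"
    then have "Poly_Mapping.single p 1 + \<nu> \<in> Poly_Mapping.keys F" by (simp add: in_keys_iff lookup_shiftv)
    then have "Suc e \<le> Poly_Mapping.lookup (Poly_Mapping.single p 1 + \<nu>) p" using Suc.prems(2) by blast
    then show "e \<le> Poly_Mapping.lookup \<nu> p" by (simp add: lookup_add)
  qed
  then obtain H where "H \<in> ringR" "shiftv p F = var p ^ e * H"
    using Suc.IH[OF shiftv_ringR[OF Suc.prems(1)]] by blast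
  then show ?case using F by (intro bexI[of _ H]) (auto simp: mult.assoc)
qed

lemma xslice_in_Mul:
  fixes F :: "'k::field mpol"
  assumes b: "b \<noteq> (0,0)" and F: "F \<in> bihom i j" "F \<in> pt_ideal_pow ((0,1), b) \<mu>"
    and u: "u \<le> i" "u < \<mu>"
  shows "xslice i u F \<in> Mul (lf 2 3 b ^ (\<mu> - u)) 0 j"
proof -
  let ?t = "subst (nrm 2 3 b)" and ?ti = "subst (inrm 2 3 b)"
  have G: "?t F \<in> pt_ideal_pow ((0,1),(0,1)) \<mu>" by (rule pid_transport_y[OF b F(2)])
  have kG: "\<forall>\<nu>\<in>Poly_Mapping.keys (?t F). \<mu> \<le> Poly_Mapping.lookup \<nu> 0 + Poly_Mapping.lookup \<nu> 2"
    by (rule pid00_keys[OF G])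
  have sl: "xslice i u (?t F) = ?t (xslice i u F)" by (rule xslice_subst_y[OF F(1) u(1)])
  have ks: "\<forall>\<nu>\<in>Poly_Mapping.keys (xslice i u (?t F)). \<mu> - u \<le> Poly_Mapping.lookup \<nu> 2"
  proof
    fix \<nu> assume \<nu>: "\<nu> \<in> Poly_Mapping.keys (xslice i u (?t F))"
    then have z: "Poly_Mapping.lookup \<nu> 0 = 0" and k: "mm u (i - u) + \<nu> \<in> Poly_Mapping.keys (?t F)"
      by (auto simp: in_keys_iff lookup_xslice split: if_splits)
    have "\<mu> \<le> Poly_Mapping.lookup (mm u (i - u) + \<nu>) 0 + Poly_Mapping.lookup (mm u (i - u) + \<nu>) 2"
      using kG k by blast
    then show "\<mu> - u \<le> Poly_Mapping.lookup \<nu> 2" using z by (simp add: lookup_add lookup_mm)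
  qed
  have sR: "xslice i u (?t F) \<in> ringR"
    using xslice_bihom[OF subst_nrm_bihom[OF pair23 F(1)]] bihom_ringR by blast
  obtain H where H: "H \<in> ringR" "xslice i u (?t F) = var 2 ^ (\<mu> - u) * H"
    using var_pow_div[OF sR ks] by blast
  have pq: "(2::nat) \<noteq> 3" by simp
  have "xslice i u F = ?ti (?t (xslice i u F))" using inrm_nrm[OF pq b] by simp
  also have "\<dots> = ?ti (var 2 ^ (\<mu> - u) * H)" using sl H(2) by simp
  also have "\<dots> = lf 2 3 b ^ (\<mu> - u) * ?ti H" by (simp add: subst_mult subst_power inrm_def)
  finally have eq: "xslice i u F = lf 2 3 b ^ (\<mu> - u) * ?ti H" .
  have tH: "?ti H \<in> ringR" by (rule subst_inrm_ringR[OF pair23 H(1)])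
  have sb: "xslice i u F \<in> bihom 0 j" by (rule xslice_bihom[OF F(1)])
  show ?thesis unfolding Mul_def using sb eq tH by blast
qed

lemma pid_from_xslices:
  fixes F :: "'k::field mpol" and b :: "'k \<times> 'k"
  assumes F: "F \<in> bihom i j"
    and sl: "\<And>u. u \<le> i \<Longrightarrow> u < \<mu> \<Longrightarrow> xslice i u F \<in> Mul (lf 2 3 b ^ (\<mu> - u)) 0 j"
  shows "F \<in> pt_ideal_pow ((0,1), b) \<mu>"
proof -
  have trm: "xm u (i - u) * xslice i u F \<in> pt_ideal_pow ((0,1), b) \<mu>" if u: "u \<le> i" for u
  proof -
    have sR: "xslice i u F \<in> ringR" using xslice_bihom[OF F] bihom_ringR by blast
    show ?thesis
    proof (cases "u < \<mu>")
      case True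
      then obtain H where H: "H \<in> ringR" "xslice i u F = lf 2 3 b ^ (\<mu> - u) * H"
        using sl[of u] u by (auto simp: Mul_def)
      have e: "xm u (i - u) * xslice i u F = lin1 (fst (((0::'k),(1::'k)), b)) ^ u * lin2 (snd (((0::'k),(1::'k)), b)) ^ (\<mu> - u) * (var 1 ^ (i - u) * H)"
        by (simp add: xm_eq H(2) lin2_lf algebra_simps)
      have m: "lin1 (fst (((0::'k),(1::'k)), b)) ^ u * lin2 (snd (((0::'k),(1::'k)), b)) ^ (\<mu> - u) * (var 1 ^ (i - u) * H) \<in> pt_ideal_pow ((0,1), b) \<mu>"
      proof (rule pid_gen2)
        show "var 1 ^ (i - u) * H \<in> ringR" by (intro ringR_mult ringR_power var_ringR H(1)) simp
      qed simp
      show ?thesis by (subst e) (rule m)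
    next
      case False
      have e: "xm u (i - u) * xslice i u F = lin1 (fst (((0::'k),(1::'k)), b)) ^ u * lin2 (snd (((0::'k),(1::'k)), b)) ^ 0 * (var 1 ^ (i - u) * xslice i u F)"
        by (simp add: xm_eq algebra_simps)
      have m: "lin1 (fst (((0::'k),(1::'k)), b)) ^ u * lin2 (snd (((0::'k),(1::'k)), b)) ^ 0 * (var 1 ^ (i - u) * xslice i u F) \<in> pt_ideal_pow ((0,1), b) \<mu>"
      proof (rule pid_gen2)
        show "var 1 ^ (i - u) * xslice i u F \<in> ringR" by (intro ringR_mult ringR_power var_ringR sR) simp
      qed (use False in simp)
      show ?thesis by (subst e) (rule m)
    qed
  qed
  have "(\<Sum>u\<le>i. xm u (i - u) * xslice i u F) \<in> pt_ideal_pow ((0,1), b) \<mu>"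
    by (rule pid_sum) (use trm in auto)
  then show ?thesis using xslice_decomp[OF F] by simp
qed


lemma span_Un_span: "kv.span (A \<union> kv.span B) = kv.span (A \<union> (B :: 'k::field mpol set))"
proof
  show "kv.span (A \<union> kv.span B) \<subseteq> kv.span (A \<union> B)"
    by (rule kv.span_minimal) (use kv.span_mono[of A "A \<union> B"] kv.span_mono[of B "A \<union> B"] kv.span_superset[of A] in auto)
  show "kv.span (A \<union> B) \<subseteq> kv.span (A \<union> kv.span B)"
    by (rule kv.span_mono) (use kv.span_superset[of B] in auto)
qed

lemma dim_direct:
  fixes W :: "nat \<Rightarrow> 'k::field mpol set"
  assumes V: "kv.subspace V" "kv.fdim V"
  shows "finite U \<Longrightarrow> (\<And>u. u \<in> U \<Longrightarrow> kv.subspace (W u) \<and> W u \<subseteq> V \<and> W u \<subseteq> keyspace {\<nu>. Poly_Mapping.lookup \<nu> 0 = u})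
    \<Longrightarrow> kv.dim (kv.span (\<Union>u\<in>U. W u)) = (\<Sum>u\<in>U. kv.dim (W u))"
proof (induction U rule: finite_induct)
  case empty
  then show ?case by (simp add: dim_zero_space)
next
  case (insert u U)
  let ?S = "kv.span (\<Union>u\<in>U. W u)"
  have Wu: "kv.subspace (W u)" "W u \<subseteq> V" "W u \<subseteq> keyspace {\<nu>. Poly_Mapping.lookup \<nu> 0 = u}"
    using insert.prems by auto
  have SV: "?S \<subseteq> V" by (rule kv.span_minimal[OF _ V(1)]) (use insert.prems in blast)
  have fS: "kv.fdim ?S" by (rule kv.fdim_subset[OF V(2) SV])
  have fW: "kv.fdim (W u)" by (rule kv.fdim_subset[OF V(2) Wu(2)])
  have SK: "?S \<subseteq> keyspace {\<nu>. Poly_Mapping.lookup \<nu> 0 \<in> U}"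
    by (rule kv.span_minimal[OF _ subspace_keyspace]) (use insert.prems in \<open>fastforce simp: keyspace_def\<close>)
  have int: "W u \<inter> ?S = {0}"
  proof
    show "W u \<inter> ?S \<subseteq> {0}"
    proof
      fix F assume F: "F \<in> W u \<inter> ?S"
      then have "Poly_Mapping.keys F \<subseteq> {\<nu>. Poly_Mapping.lookup \<nu> 0 = u} \<inter> {\<nu>. Poly_Mapping.lookup \<nu> 0 \<in> U}"
        using Wu(3) SK by (auto simp: keyspace_def)
      moreover have "{\<nu>. Poly_Mapping.lookup \<nu> 0 = u} \<inter> {\<nu>. Poly_Mapping.lookup \<nu> 0 \<in> U} = {}"
        using insert.hyps(2) by auto
      ultimately have "Poly_Mapping.keys F = {}" by blast
      then show "F \<in> {0}" by simp
    qed
    show "{0} \<subseteq> W u \<inter> ?S" using kv.subspace_0[OF Wu(1)] kv.span_zero by auto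
  qed
  have "kv.dim (kv.span (W u \<union> ?S)) + kv.dim (W u \<inter> ?S) = kv.dim (W u) + kv.dim ?S"
    by (rule kv.dim_sum_int[OF Wu(1) fW kv.subspace_span fS])
  then have "kv.dim (kv.span (W u \<union> ?S)) = kv.dim (W u) + kv.dim ?S"
    using int by (simp add: dim_zero_space)
  moreover have "kv.span (W u \<union> ?S) = kv.span (\<Union>u\<in>insert u U. W u)"
    using span_Un_span[of "W u" "\<Union>u\<in>U. W u"] by (simp add: Un_commute)
  ultimately show ?case using insert.IH insert.prems insert.hyps by simp
qed

definition RowN :: "nat \<Rightarrow> nat \<Rightarrow> 'c set \<Rightarrow> ('c \<Rightarrow> 'k::field \<times> 'k) \<Rightarrow> ('c \<Rightarrow> nat) \<Rightarrow> 'k mpol set" where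
  "RowN i j C b m = {F \<in> bihom i j. \<forall>c\<in>C. F \<in> pt_ideal_pow ((0,1), b c) (m c)}"

definition Tsp :: "nat \<Rightarrow> 'c set \<Rightarrow> ('c \<Rightarrow> 'k::field \<times> 'k) \<Rightarrow> ('c \<Rightarrow> nat) \<Rightarrow> nat \<Rightarrow> 'k mpol set" where
  "Tsp j C b m u = Mul (PP 2 3 C b (\<lambda>c. m c - u)) 0 j"

lemma Mul_one: "Mul 1 p q = (bihom p q :: 'k::field mpol set)"
  unfolding Mul_def using bihom_ringR by fastforce

lemma RowN_char:
  fixes b :: "'c \<Rightarrow> 'k::field \<times> 'k"
  assumes fin: "finite C" and np: "nonprop C b" and F: "F \<in> bihom i j"
  shows "F \<in> RowN i j C b m \<longleftrightarrow> (\<forall>u\<le>i. xslice i u F \<in> Tsp j C b m u)"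
proof
  assume R: "F \<in> RowN i j C b m"
  show "\<forall>u\<le>i. xslice i u F \<in> Tsp j C b m u"
  proof (intro allI impI)
    fix u assume u: "u \<le> i"
    have "xslice i u F \<in> Mul (lf 2 3 (b c) ^ (m c - u)) 0 j" if c: "c \<in> C" for c
    proof (cases "u < m c")
      case True
      have bc: "b c \<noteq> (0,0)" using np c by (auto simp: nonprop_def)
      have "F \<in> pt_ideal_pow ((0,1), b c) (m c)" using R c by (auto simp: RowN_def)
      then show ?thesis by (rule xslice_in_Mul[OF bc F _ u True])
    next
      case False
      then have "m c - u = 0" by simp
      then show ?thesis using xslice_bihom[OF F] by (simp add: Mul_one)
    qed
    then show "xslice i u F \<in> Tsp j C b m u"
      unfolding Tsp_def using Mul_PP_Inter[OF pair23 fin np] xslice_bihom[OF F] by blast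
  qed
next
  assume S: "\<forall>u\<le>i. xslice i u F \<in> Tsp j C b m u"
  have "F \<in> pt_ideal_pow ((0,1), b c) (m c)" if c: "c \<in> C" for c
  proof (rule pid_from_xslices[OF F])
    fix u assume u: "u \<le> i" "u < m c"
    have "xslice i u F \<in> Mul (PP 2 3 C b (\<lambda>c. m c - u)) 0 j" using S u by (simp add: Tsp_def)
    then show "xslice i u F \<in> Mul (lf 2 3 (b c) ^ (m c - u)) 0 j"
      using Mul_PP_Inter[OF pair23 fin np, of "\<lambda>c. m c - u" 0 j] c by blast
  qed
  then show "F \<in> RowN i j C b m" using F by (auto simp: RowN_def)
qed

lemma subspace_RowN: "kv.subspace (RowN i j C b m)"
proof -
  have "RowN i j C b m = bihom i j \<inter> (\<Inter>c\<in>C. pt_ideal_pow ((0,1), b c) (m c))"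
    by (auto simp: RowN_def)
  then show ?thesis
    by (simp add: kv.subspace_inter subspace_bihom kv.subspace_Int subspace_pid)
qed

lemma xm_nonzero: "xm u w \<noteq> (0 :: 'k::field mpol)"
  by (metis lookup_single_eq lookup_zero one_neq_zero xm_def)

lemma xm_bihom: "u \<le> i \<Longrightarrow> xm u (i - u) \<in> (bihom i 0 :: 'k::field mpol set)"
  using bihom_mult[OF bihom_power[OF var_bihom(1), of u] bihom_power[OF var_bihom(2), of "i - u"]]
  by (simp add: xm_eq)

lemma dim_RowN:
  fixes b :: "'c \<Rightarrow> 'k::field \<times> 'k"
  assumes fin: "finite C" and np: "nonprop C b"
  shows "kv.dim (RowN i j C b m) = (\<Sum>u\<le>i. j + 1 - (\<Sum>c\<in>C. m c - u))"
proof -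
  define W where "W u = (\<lambda>G. xm u (i - u) * G) ` Tsp j C b m u" for u
  have sT: "kv.subspace (Tsp j C b m u)" for u
    unfolding Tsp_def by (rule subspace_Mul[OF PP_ringR[OF pair23]])
  have TB: "Tsp j C b m u \<subseteq> bihom 0 j" for u unfolding Tsp_def by (rule Mul_subset)
  have Wprops: "kv.subspace (W u) \<and> W u \<subseteq> bihom i j \<and> W u \<subseteq> keyspace {\<nu>. Poly_Mapping.lookup \<nu> 0 = u}"
    if u: "u \<in> {..i}" for u
  proof (intro conjI)
    interpret h: module_hom kscale kscale "\<lambda>G. xm u (i - u) * G" by (rule hom_mult)
    show "kv.subspace (W u)" unfolding W_def by (rule h.subspace_image[OF sT])
    show "W u \<subseteq> bihom i j"
    proof
      fix F assume "F \<in> W u"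
      then obtain G where G: "G \<in> bihom 0 j" "F = xm u (i - u) * G" using TB unfolding W_def by blast
      show "F \<in> bihom i j" using bihom_mult[OF xm_bihom G(1)] u G(2) by simp
    qed
    show "W u \<subseteq> keyspace {\<nu>. Poly_Mapping.lookup \<nu> 0 = u}"
    proof
      fix F assume "F \<in> W u"
      then obtain G where G: "G \<in> bihom 0 j" "F = xm u (i - u) * G" using TB unfolding W_def by blast
      have xf: "xfree G" by (rule bihom0_xfree[OF G(1)])
      show "F \<in> keyspace {\<nu>. Poly_Mapping.lookup \<nu> 0 = u}"
        unfolding keyspace_def
      proof (intro CollectI subsetI)
        fix \<nu> assume "\<nu> \<in> Poly_Mapping.keys F"
        then have nz: "Poly_Mapping.lookup (xm u (i - u) * G) \<nu> \<noteq> 0" using G(2) by (simp add: in_keys_iff)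
        then have le: "u \<le> Poly_Mapping.lookup \<nu> 0" and "Poly_Mapping.lookup G (\<nu> - mm u (i - u)) \<noteq> 0"
          by (auto simp: lookup_xm_mult split: if_splits)
        then have "\<nu> - mm u (i - u) \<in> Poly_Mapping.keys G" by (simp add: in_keys_iff)
        then have "Poly_Mapping.lookup (\<nu> - mm u (i - u)) 0 = 0" using xf by (auto simp: xfree_def)
        then show "Poly_Mapping.lookup \<nu> 0 = u" using le by (simp add: lookup_minus lookup_mm)
      qed
    qed
  qed
  have dW: "kv.dim (W u) = j + 1 - (\<Sum>c\<in>C. m c - u)" for u
  proof -
    have "kv.dim (W u) = kv.dim (Tsp j C b m u)"
      unfolding W_def by (rule dim_mult_image[OF xm_nonzero sT kv.fdim_subset[OF fdim_bihom TB]])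
    also have "\<dots> = (0 + 1) * (j + 1 - (\<Sum>c\<in>C. m c - u))"
      unfolding Tsp_def by (rule dim_Mul_PPy[OF fin np])
    finally show ?thesis by simp
  qed
  have eq: "RowN i j C b m = kv.span (\<Union>u\<in>{..i}. W u)"
  proof
    show "RowN i j C b m \<subseteq> kv.span (\<Union>u\<in>{..i}. W u)"
    proof
      fix F assume R: "F \<in> RowN i j C b m"
      then have F: "F \<in> bihom i j" by (simp add: RowN_def)
      have S: "\<forall>u\<le>i. xslice i u F \<in> Tsp j C b m u" using RowN_char[OF fin np F] R by blast
      have "(\<Sum>u\<le>i. xm u (i - u) * xslice i u F) \<in> kv.span (\<Union>u\<in>{..i}. W u)"
      proof (rule kv.span_sum)
        fix u assume u: "u \<in> {..i}"
        then have "xm u (i - u) * xslice i u F \<in> W u" using S unfolding W_def by auto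
        then show "xm u (i - u) * xslice i u F \<in> kv.span (\<Union>u\<in>{..i}. W u)"
          using u by (intro kv.span_base) blast
      qed
      then show "F \<in> kv.span (\<Union>u\<in>{..i}. W u)" using xslice_decomp[OF F] by simp
    qed
    show "kv.span (\<Union>u\<in>{..i}. W u) \<subseteq> RowN i j C b m"
    proof (rule kv.span_minimal[OF _ subspace_RowN])
      show "(\<Union>u\<in>{..i}. W u) \<subseteq> RowN i j C b m"
      proof (intro UN_least subsetI)
        fix u F assume u: "u \<in> {..i}" and F: "F \<in> W u"
        then obtain G where G: "G \<in> Tsp j C b m u" "F = xm u (i - u) * G" unfolding W_def by blast
        have Gb: "G \<in> bihom 0 j" using G(1) TB by blast
        have FB: "F \<in> bihom i j" using Wprops[OF u] F by blast
        have "\<forall>u'\<le>i. xslice i u' F \<in> Tsp j C b m u'"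
        proof (intro allI impI)
          fix u' assume u': "u' \<le> i"
          have "xslice i u' F = (if u' = u then G else 0)"
          proof -
            have ui: "u \<le> i" using u by simp
            show ?thesis unfolding G(2) by (rule xslice_xm[OF bihom0_xfree[OF Gb] u' ui])
          qed
          then show "xslice i u' F \<in> Tsp j C b m u'"
            using G(1) kv.subspace_0[OF sT] by auto
        qed
        then show "F \<in> RowN i j C b m" using RowN_char[OF fin np FB] by blast
      qed
    qed
  qed
  have "kv.dim (RowN i j C b m) = (\<Sum>u\<in>{..i}. kv.dim (W u))"
    unfolding eq by (rule dim_direct[OF subspace_bihom fdim_bihom]) (use Wprops in auto)
  then show ?thesis using dW by simp
qed


lemma nrm01_var2: "nrm 0 1 a 2 = var 2" and nrm01_var3: "nrm 0 1 a 3 = var 3"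
  by (simp_all add: nrm_def)
lemma inrm01_var2: "inrm 0 1 a 2 = var 2" and inrm01_var3: "inrm 0 1 a 3 = var 3"
  by (simp_all add: inrm_def)

lemma pid_transport_x:
  fixes a b :: "'k::field \<times> 'k"
  assumes a: "a \<noteq> (0,0)" and F: "F \<in> pt_ideal_pow (a, b) \<mu>"
  shows "subst (nrm 0 1 a) F \<in> pt_ideal_pow ((0,1), b) \<mu>"
proof -
  obtain g where g: "\<forall>k\<le>\<mu>. g k \<in> ringR" "F = (\<Sum>k\<le>\<mu>. g k * lin1 a ^ k * lin2 b ^ (\<mu> - k))"
    using F by (auto simp: pt_ideal_pow_def)
  have l2: "subst (nrm 0 1 a) (lin2 b) = lin2 b"
    by (simp add: lin2_def subst_diff subst_mult nrm_def)
  have l1: "subst (nrm 0 1 a) (lin1 a) = var 0" using nrm_lf[OF _ a, of 0 1] by (simp add: lin1_lf)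
  have "subst (nrm 0 1 a) F = (\<Sum>k\<le>\<mu>. subst (nrm 0 1 a) (g k) * lin1 (0,1) ^ k * lin2 b ^ (\<mu> - k))"
    unfolding g(2) by (simp only: subst_sum subst_mult subst_power l1 l2 lin1_01)
  moreover have "\<forall>k\<le>\<mu>. subst (nrm 0 1 a) (g k) \<in> ringR" using g(1) subst_nrm_ringR[OF pair01] by blast
  ultimately show ?thesis unfolding pt_ideal_pow_def by auto
qed

lemma pid_transport_xi:
  fixes a b :: "'k::field \<times> 'k"
  assumes a: "a \<noteq> (0,0)" and F: "F \<in> pt_ideal_pow ((0,1), b) \<mu>"
  shows "subst (inrm 0 1 a) F \<in> pt_ideal_pow (a, b) \<mu>"
proof -
  obtain g where g: "\<forall>k\<le>\<mu>. g k \<in> ringR" "F = (\<Sum>k\<le>\<mu>. g k * var 0 ^ k * lin2 b ^ (\<mu> - k))"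
    using F by (auto simp: pt_ideal_pow_def)
  have l2: "subst (inrm 0 1 a) (lin2 b) = lin2 b"
    by (simp add: lin2_def subst_diff subst_mult inrm_def)
  have l1: "subst (inrm 0 1 a) (var 0) = lin1 a" by (simp add: inrm_def lin1_lf)
  have "subst (inrm 0 1 a) F = (\<Sum>k\<le>\<mu>. subst (inrm 0 1 a) (g k) * lin1 a ^ k * lin2 b ^ (\<mu> - k))"
    unfolding g(2) by (simp only: subst_sum subst_mult subst_power l1 l2 lin1_01)
  moreover have "\<forall>k\<le>\<mu>. subst (inrm 0 1 a) (g k) \<in> ringR" using g(1) subst_inrm_ringR[OF pair01] by blast
  ultimately show ?thesis unfolding pt_ideal_pow_def by auto
qed

definition Row :: "'k::field \<times> 'k \<Rightarrow> nat \<Rightarrow> nat \<Rightarrow> 'c set \<Rightarrow> ('c \<Rightarrow> 'k \<times> 'k) \<Rightarrow> ('c \<Rightarrow> nat) \<Rightarrow> 'k mpol set" where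
  "Row a i j C b m = {F \<in> bihom i j. \<forall>c\<in>C. F \<in> pt_ideal_pow (a, b c) (m c)}"

lemma subspace_Row: "kv.subspace (Row a i j C b m)"
proof -
  have "Row a i j C b m = bihom i j \<inter> (\<Inter>c\<in>C. pt_ideal_pow (a, b c) (m c))"
    by (auto simp: Row_def)
  then show ?thesis
    by (simp add: kv.subspace_inter subspace_bihom kv.subspace_Int subspace_pid)
qed

lemma Row_subset: "Row a i j C b m \<subseteq> bihom i j"
  by (auto simp: Row_def)

lemma dim_Row:
  fixes a :: "'k::field \<times> 'k" and b :: "'c \<Rightarrow> 'k \<times> 'k"
  assumes a: "a \<noteq> (0,0)" and fin: "finite C" and np: "nonprop C b"
  shows "kv.dim (Row a i j C b m) = (\<Sum>u\<le>i. j + 1 - (\<Sum>c\<in>C. m c - u))"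
proof -
  let ?t = "subst (nrm 0 1 a) :: 'k mpol \<Rightarrow> 'k mpol" and ?ti = "subst (inrm 0 1 a) :: 'k mpol \<Rightarrow> 'k mpol"
  have pq: "(0::nat) \<noteq> 1" by simp
  have img: "?t ` Row a i j C b m = RowN i j C b m"
  proof
    show "?t ` Row a i j C b m \<subseteq> RowN i j C b m"
    proof
      fix G assume "G \<in> ?t ` Row a i j C b m"
      then obtain F where F: "F \<in> Row a i j C b m" "G = ?t F" by blast
      have "F \<in> bihom i j" using F by (simp add: Row_def)
      then have "G \<in> bihom i j" using F(2) subst_nrm_bihom[OF pair01] by blast
      moreover have "\<forall>c\<in>C. G \<in> pt_ideal_pow ((0,1), b c) (m c)"
        using F pid_transport_x[OF a] by (auto simp: Row_def)
      ultimately show "G \<in> RowN i j C b m" by (simp add: RowN_def)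
    qed
    show "RowN i j C b m \<subseteq> ?t ` Row a i j C b m"
    proof
      fix G assume G: "G \<in> RowN i j C b m"
      have "G \<in> bihom i j" using G by (simp add: RowN_def)
      then have "?ti G \<in> bihom i j" using subst_inrm_bihom[OF pair01] by blast
      moreover have "\<forall>c\<in>C. ?ti G \<in> pt_ideal_pow (a, b c) (m c)"
        using G pid_transport_xi[OF a] by (auto simp: RowN_def)
      ultimately have "?ti G \<in> Row a i j C b m" by (simp add: Row_def)
      moreover have "G = ?t (?ti G)" using nrm_inrm[OF pq a] by simp
      ultimately show "G \<in> ?t ` Row a i j C b m" by blast
    qed
  qed
  have inj: "inj_on ?t (Row a i j C b m)"
    by (rule inj_on_inverseI[where g = ?ti]) (use inrm_nrm[OF pq a] in simp)
  have "kv.dim (Row a i j C b m) = kv.dim (?t ` Row a i j C b m)"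
    by (rule dim_image_inj[OF hom_subst subspace_Row kv.fdim_subset[OF fdim_bihom Row_subset] inj, symmetric])
  also have "\<dots> = kv.dim (RowN i j C b m)" using img by simp
  also have "\<dots> = (\<Sum>u\<le>i. j + 1 - (\<Sum>c\<in>C. m c - u))" by (rule dim_RowN[OF fin np])
  finally show ?thesis .
qed

lemma Mul_in_Row:
  fixes a :: "'k::field \<times> 'k" and b :: "'c \<Rightarrow> 'k \<times> 'k"
  assumes "\<forall>c\<in>C. m c \<le> l"
  shows "Mul (lf 0 1 a ^ l) i j \<subseteq> Row a i j C b m"
proof
  fix F assume "F \<in> Mul (lf 0 1 a ^ l) i j"
  then obtain H where H: "F \<in> bihom i j" "H \<in> ringR" "F = lf 0 1 a ^ l * H" by (auto simp: Mul_def)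
  have "F \<in> pt_ideal_pow (a, b c) (m c)" if "c \<in> C" for c
  proof -
    have "lin1 (fst (a, b c)) ^ l * lin2 (snd (a, b c)) ^ 0 * H \<in> pt_ideal_pow (a, b c) (m c)"
      by (rule pid_gen2) (use assms that H(2) in auto)
    then show ?thesis using H(3) by (simp add: lin1_lf)
  qed
  then show "F \<in> Row a i j C b m" using H(1) by (simp add: Row_def)
qed


section \<open>List combinatorics: Delta and conjugates\<close>

definition cntge :: "nat list \<Rightarrow> nat \<Rightarrow> nat" where
  "cntge al s = length (filter (\<lambda>x. s \<le> x) al)"

definition Bsum :: "nat list \<Rightarrow> nat \<Rightarrow> nat" where
  "Bsum al j = sum_list (map (\<lambda>x. min x (j + 1)) al)"

lemma foldr_max_ge: "x \<in> set al \<Longrightarrow> x \<le> foldr max al (0::nat)"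
  by (induction al) auto

lemma sum_list_if_count: "sum_list (map (\<lambda>x. if P x then 1 else 0) al) = length (filter P al)"
  by (induction al) auto

lemma Bsum_0: "Bsum al 0 = cntge al 1"
proof -
  have "(\<lambda>x. min x (0 + 1)) = (\<lambda>x. if 1 \<le> x then 1 else (0::nat))" by (auto simp: fun_eq_iff)
  then show ?thesis by (simp add: Bsum_def cntge_def sum_list_if_count)
qed

lemma Bsum_Suc: "Bsum al (Suc j) = Bsum al j + cntge al (j + 2)"
proof -
  have "(\<lambda>x. min x (Suc j + 1)) = (\<lambda>x. min x (j + 1) + (if j + 2 \<le> x then 1 else 0))"
    by (auto simp: fun_eq_iff)
  then have "Bsum al (Suc j) = sum_list (map (\<lambda>x. min x (j + 1) + (if j + 2 \<le> x then 1 else 0)) al)"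
    by (simp add: Bsum_def)
  also have "\<dots> = Bsum al j + sum_list (map (\<lambda>x. if j + 2 \<le> x then 1 else 0) al)"
    by (simp add: Bsum_def sum_list_addf)
  finally show ?thesis by (simp add: sum_list_if_count cntge_def)
qed

lemma length_Delta[simp]: "length (Delta p) = length p"
  by (simp add: Delta_def)

lemma nth_Delta: "j < length p \<Longrightarrow> Delta p ! j = p ! j - (0 # p) ! j"
  by (simp add: Delta_def)

lemma length_conjugate: "length (conjugate al) = foldr max al 0"
  by (simp add: conjugate_def)

lemma nth_conjugate: "j < foldr max al 0 \<Longrightarrow> conjugate al ! j = cntge al (j + 1)"
  by (simp add: conjugate_def cntge_def add.commute del: upt_Suc)

lemma cntge_big: "foldr max al 0 < s \<Longrightarrow> cntge al s = 0"
  unfolding cntge_def using foldr_max_ge[of _ al] by (auto simp: filter_empty_conv) (meson le_trans not_le)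

lemma delta_conj:
  assumes "foldr max al 0 \<le> n"
  shows "Delta (map (\<lambda>j. int (Bsum al j)) [0..<n]) = map int (pad0 (conjugate al) n)"
proof (rule nth_equalityI)
  show "length (Delta (map (\<lambda>j. int (Bsum al j)) [0..<n])) = length (map int (pad0 (conjugate al) n))"
    using assms by (simp add: pad0_def length_conjugate)
next
  fix j assume "j < length (Delta (map (\<lambda>j. int (Bsum al j)) [0..<n]))"
  then have j: "j < n" by simp
  have lhs: "Delta (map (\<lambda>j. int (Bsum al j)) [0..<n]) ! j = int (cntge al (j + 1))"
  proof (cases j)
    case 0
    then show ?thesis using j by (simp add: nth_Delta Bsum_0)
  next
    case (Suc j')
    then have "Delta (map (\<lambda>j. int (Bsum al j)) [0..<n]) ! j = int (Bsum al (Suc j')) - int (Bsum al j')"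
      using j by (simp add: nth_Delta)
    then show ?thesis using Suc by (simp add: Bsum_Suc)
  qed
  have rhs: "map int (pad0 (conjugate al) n) ! j = int (cntge al (j + 1))"
  proof (cases "j < foldr max al 0")
    case True
    then show ?thesis using j assms
      by (simp add: pad0_def nth_append length_conjugate nth_conjugate)
  next
    case False
    then have "cntge al (j + 1) = 0" by (intro cntge_big) simp
    then show ?thesis using j False assms
      by (simp add: pad0_def nth_append length_conjugate)
  qed
  show "Delta (map (\<lambda>j. int (Bsum al j)) [0..<n]) ! j = map int (pad0 (conjugate al) n) ! j"
    using lhs rhs by simp
qed


lemma proj_eq_refl: "proj_eq a a"
  by (simp add: proj_eq_def mult.commute)

lemma proj_eq_trans:
  fixes a a' c :: "'k::field \<times> 'k"
  assumes ca: "proj_eq c a" and a'a: "proj_eq a' a" and a: "a \<noteq> (0,0)"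
  shows "proj_eq c a'"
proof -
  obtain c0 c1 where c: "c = (c0, c1)" by (cases c)
  obtain a0 a1 where aa: "a = (a0, a1)" by (cases a)
  obtain b0 b1 where bb: "a' = (b0, b1)" by (cases a')
  have h1: "c0 * a1 = c1 * a0" using ca by (simp add: proj_eq_def c aa)
  have h2: "b0 * a1 = b1 * a0" using a'a by (simp add: proj_eq_def bb aa)
  define X where "X = c0 * b1 - c1 * b0"
  have "X * a1 = b1 * (c0 * a1) - c1 * (b0 * a1)" by (simp add: X_def algebra_simps)
  also have "\<dots> = b1 * (c1 * a0) - c1 * (b1 * a0)" using h1 h2 by simp
  also have "\<dots> = 0" by (simp add: algebra_simps)
  finally have x1: "X * a1 = 0" .
  have "X * a0 = c0 * (b1 * a0) - b0 * (c1 * a0)" by (simp add: X_def algebra_simps)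
  also have "\<dots> = c0 * (b0 * a1) - b0 * (c0 * a1)" using h1 h2 by simp
  also have "\<dots> = 0" by (simp add: algebra_simps)
  finally have x0: "X * a0 = 0" .
  have "X = 0" using x0 x1 a aa by auto
  then show ?thesis by (simp add: proj_eq_def X_def c bb)
qed

lemma class_eq_iff:
  fixes a a' :: "'k::field \<times> 'k"
  assumes "a \<noteq> (0,0)" "a' \<noteq> (0,0)"
  shows "proj_class a = proj_class a' \<longleftrightarrow> proj_eq a a'"
proof
  assume "proj_class a = proj_class a'"
  moreover have "a \<in> proj_class a" using assms(1) proj_eq_refl by (simp add: proj_class_def)
  ultimately show "proj_eq a a'" by (simp add: proj_class_def)
next
  assume e: "proj_eq a a'"
  then have e': "proj_eq a' a" using proj_eq_sym by blast
  show "proj_class a = proj_class a'"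
    unfolding proj_class_def using proj_eq_trans[OF _ e' assms(1)] proj_eq_trans[OF _ e assms(2)] by blast
qed

definition pa :: "(('k \<times> 'k) \<times> ('k \<times> 'k)) \<times> nat \<Rightarrow> 'k \<times> 'k" where "pa e = fst (fst e)"
definition pb :: "(('k \<times> 'k) \<times> ('k \<times> 'k)) \<times> nat \<Rightarrow> 'k \<times> 'k" where "pb e = snd (fst e)"
definition mu :: "(('k \<times> 'k) \<times> ('k \<times> 'k)) \<times> nat \<Rightarrow> nat" where "mu e = snd e"

lemma fps_nz:
  assumes "fat_point_scheme Z" "e \<in> set Z"
  shows "pa e \<noteq> (0,0)" "pb e \<noteq> (0,0)" "1 \<le> mu e"
  using assms by (auto simp: fat_point_scheme_def pa_def pb_def mu_def)

lemma fps_uniq: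
  assumes "fat_point_scheme Z" "e \<in> set Z" "e' \<in> set Z"
    "proj_eq (pa e) (pa e')" "proj_eq (pb e) (pb e')"
  shows "e = e'"
proof -
  obtain i where i: "i < length Z" "e = Z ! i" using assms(2) by (auto simp: in_set_conv_nth)
  obtain j where j: "j < length Z" "e' = Z ! j" using assms(3) by (auto simp: in_set_conv_nth)
  show ?thesis
  proof (cases "i = j")
    case True
    then show ?thesis using i j by simp
  next
    case False
    have "\<not> (proj_eq (fst (fst (Z!i))) (fst (fst (Z!j))) \<and> proj_eq (snd (fst (Z!i))) (snd (fst (Z!j))))"
      using assms(1) i j False unfolding fat_point_scheme_def by blast
    then show ?thesis using assms(4,5) i j by (simp add: pa_def pb_def)
  qed
qed

lemma fps_distinct:
  assumes "fat_point_scheme Z"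
  shows "distinct Z"
  unfolding distinct_conv_nth
proof (intro allI impI)
  fix i j assume ij: "i < length Z" "j < length Z" "i \<noteq> j"
  have A: "\<not> (proj_eq (fst (fst (Z!i))) (fst (fst (Z!j))) \<and> proj_eq (snd (fst (Z!i))) (snd (fst (Z!j))))"
    using assms ij unfolding fat_point_scheme_def by blast
  show "Z ! i \<noteq> Z ! j"
  proof
    assume eq: "Z ! i = Z ! j"
    have "proj_eq (fst (fst (Z!i))) (fst (fst (Z!j))) \<and> proj_eq (snd (fst (Z!i))) (snd (fst (Z!j)))"
      unfolding eq by (simp add: proj_eq_refl)
    then show False using A by blast
  qed
qed

definition Cr :: "'k::field fatpts \<Rightarrow> ('k \<times> 'k) set \<Rightarrow> ((('k \<times> 'k) \<times> ('k \<times> 'k)) \<times> nat) set" where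
  "Cr Z r = {e \<in> set Z. proj_class (pa e) = r}"

definition rep :: "'k::field fatpts \<Rightarrow> ('k \<times> 'k) set \<Rightarrow> 'k \<times> 'k" where
  "rep Z r = pa (SOME e. e \<in> Cr Z r)"

definition lrow :: "'k::field fatpts \<Rightarrow> ('k \<times> 'k) set \<Rightarrow> nat" where
  "lrow Z r = Max (mu ` Cr Z r)"

definition arow :: "'k::field fatpts \<Rightarrow> ('k \<times> 'k) set \<Rightarrow> nat \<Rightarrow> nat" where
  "arow Z r u = (\<Sum>e\<in>Cr Z r. mu e - u)"

lemma rows_eq: "rows Z = (\<lambda>e. proj_class (pa e)) ` set Z"
  unfolding rows_def by (rule image_cong[OF refl]) (simp add: pa_def split: prod.splits)

lemma cols_eq: "cols Z = (\<lambda>e. proj_class (pb e)) ` set Z"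
  unfolding cols_def by (rule image_cong[OF refl]) (simp add: pb_def split: prod.splits)

lemma finite_rows: "finite (rows Z)" by (simp add: rows_eq)
lemma finite_cols: "finite (cols Z)" by (simp add: cols_eq)
lemma finite_Cr: "finite (Cr Z r)" by (simp add: Cr_def)

lemma Cr_nonempty: "r \<in> rows Z \<Longrightarrow> Cr Z r \<noteq> {}"
  unfolding rows_eq Cr_def by blast

lemma rep_in: "r \<in> rows Z \<Longrightarrow> \<exists>e\<in>Cr Z r. pa e = rep Z r"
  unfolding rep_def using Cr_nonempty[of r Z] by (metis ex_in_conv someI_ex)

lemma rep_props:
  assumes Z: "fat_point_scheme Z" and r: "r \<in> rows Z"
  shows "rep Z r \<noteq> (0,0)" "proj_class (rep Z r) = r"
proof -
  obtain e where e: "e \<in> Cr Z r" "pa e = rep Z r" using rep_in[OF r] by blast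
  have "e \<in> set Z" using e by (simp add: Cr_def)
  then show "rep Z r \<noteq> (0,0)" using e fps_nz(1)[OF Z] by metis
  show "proj_class (rep Z r) = r" using e by (simp add: Cr_def)
qed

lemma Cr_proj:
  assumes Z: "fat_point_scheme Z" and r: "r \<in> rows Z" and e: "e \<in> Cr Z r"
  shows "proj_eq (pa e) (rep Z r)"
proof -
  have "proj_class (pa e) = proj_class (rep Z r)" using e rep_props[OF Z r] by (auto simp: Cr_def)
  then show ?thesis using class_eq_iff[of "pa e" "rep Z r"] fps_nz[OF Z] rep_props[OF Z r] e
    by (auto simp: Cr_def)
qed

lemma nonprop_rows:
  assumes Z: "fat_point_scheme Z"
  shows "nonprop (rows Z) (rep Z)"
  unfolding nonprop_def
proof (intro conjI ballI impI)
  fix r assume "r \<in> rows Z" then show "rep Z r \<noteq> (0,0)" using rep_props[OF Z] by blast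
next
  fix r r' assume r: "r \<in> rows Z" and r': "r' \<in> rows Z" and ne: "r \<noteq> r'"
  show "\<not> proj_eq (rep Z r) (rep Z r')"
    using class_eq_iff[of "rep Z r" "rep Z r'"] rep_props[OF Z r] rep_props[OF Z r'] ne by auto
qed

lemma nonprop_Cr:
  assumes Z: "fat_point_scheme Z" and r: "r \<in> rows Z"
  shows "nonprop (Cr Z r) pb"
  unfolding nonprop_def
proof (intro conjI ballI impI)
  fix e assume "e \<in> Cr Z r" then have "e \<in> set Z" by (simp add: Cr_def)
  then show "pb e \<noteq> (0,0)" using fps_nz(2)[OF Z] by metis
next
  fix e e' assume e: "e \<in> Cr Z r" and e': "e' \<in> Cr Z r" and ne: "e \<noteq> e'"
  have "proj_eq (pa e) (rep Z r)" "proj_eq (pa e') (rep Z r)" using Cr_proj[OF Z r] e e' by auto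
  then have "proj_eq (pa e) (pa e')"
    using proj_eq_trans[of "pa e" "rep Z r" "pa e'"] proj_eq_sym rep_props[OF Z r] by blast
  moreover have "e \<in> set Z" "e' \<in> set Z" using e e' by (simp_all add: Cr_def)
  ultimately show "\<not> proj_eq (pb e) (pb e')" using fps_uniq[OF Z] ne by blast
qed

lemma fat_bihom_eq:
  assumes Z: "fat_point_scheme Z"
  shows "fat_ideal Z \<inter> bihom i j = bihom i j \<inter> (\<Inter>r\<in>rows Z. Row (rep Z r) i j (Cr Z r) pb mu)"
proof -
  have key: "pt_ideal_pow (fst e) (snd e) = pt_ideal_pow (rep Z r, pb e) (mu e)"
    if r: "r \<in> rows Z" and e: "e \<in> Cr Z r" for e r
  proof -
    have "fst e = (pa e, pb e)" by (simp add: pa_def pb_def)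
    then have "pt_ideal_pow (fst e) (snd e) = pt_ideal_pow (pa e, pb e) (mu e)" by (simp add: mu_def)
    also have "\<dots> = pt_ideal_pow (rep Z r, pb e) (mu e)"
      by (rule pid_proj_x) (use rep_props[OF Z r] fps_nz[OF Z] e Cr_proj[OF Z r e] in \<open>auto simp: Cr_def\<close>)
    finally show ?thesis .
  qed
  show ?thesis
  proof
    show "fat_ideal Z \<inter> bihom i j \<subseteq> bihom i j \<inter> (\<Inter>r\<in>rows Z. Row (rep Z r) i j (Cr Z r) pb mu)"
    proof
      fix F assume F: "F \<in> fat_ideal Z \<inter> bihom i j"
      then have Fe: "\<forall>e\<in>set Z. F \<in> pt_ideal_pow (fst e) (snd e)" by (auto simp: fat_ideal_def)
      have "F \<in> Row (rep Z r) i j (Cr Z r) pb mu" if r: "r \<in> rows Z" for r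
        unfolding Row_def using F Fe key[OF r] by (auto simp: Cr_def)
      then show "F \<in> bihom i j \<inter> (\<Inter>r\<in>rows Z. Row (rep Z r) i j (Cr Z r) pb mu)" using F by blast
    qed
    show "bihom i j \<inter> (\<Inter>r\<in>rows Z. Row (rep Z r) i j (Cr Z r) pb mu) \<subseteq> fat_ideal Z \<inter> bihom i j"
    proof
      fix F assume F: "F \<in> bihom i j \<inter> (\<Inter>r\<in>rows Z. Row (rep Z r) i j (Cr Z r) pb mu)"
      have "F \<in> pt_ideal_pow (fst e) (snd e)" if e: "e \<in> set Z" for e
      proof -
        let ?r = "proj_class (pa e)"
        have r: "?r \<in> rows Z" using e by (auto simp: rows_eq)
        have eC: "e \<in> Cr Z ?r" using e by (simp add: Cr_def)
        have "F \<in> Row (rep Z ?r) i j (Cr Z ?r) pb mu" using F r by blast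
        then have "F \<in> pt_ideal_pow (rep Z ?r, pb e) (mu e)" using eC by (auto simp: Row_def)
        then show ?thesis using key[OF r eC] by simp
      qed
      moreover have "F \<in> ringR" using F bihom_ringR by blast
      ultimately show "F \<in> fat_ideal Z \<inter> bihom i j" using F by (auto simp: fat_ideal_def)
    qed
  qed
qed

lemma codim_sum:
  fixes x :: "nat \<Rightarrow> nat"
  shows "(i + 1) * (j + 1) - (\<Sum>u\<le>i. j + 1 - x u) = (\<Sum>u\<le>i. min (x u) (j + 1))"
proof (induction i)
  case 0
  then show ?case by simp
next
  case (Suc i)
  have le: "(\<Sum>u\<le>i. j + 1 - x u) \<le> (i + 1) * (j + 1)"
  proof -
    have "(\<Sum>u\<le>i. j + 1 - x u) \<le> (\<Sum>u\<le>i. j + 1)" by (rule sum_mono) simp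
    then show ?thesis by simp
  qed
  have "(Suc i + 1) * (j + 1) - (\<Sum>u\<le>Suc i. j + 1 - x u)
      = ((i + 1) * (j + 1) - (\<Sum>u\<le>i. j + 1 - x u)) + ((j + 1) - (j + 1 - x (Suc i)))"
    using le by simp
  also have "(j + 1) - (j + 1 - x (Suc i)) = min (x (Suc i)) (j + 1)" by simp
  finally show ?case using Suc.IH by simp
qed

lemma hilb_formula:
  fixes Z :: "'k::field fatpts"
  assumes Z: "fat_point_scheme Z" and deg: "(\<Sum>r\<in>rows Z. lrow Z r) \<le> i + 1"
  shows "hilb Z i j = (\<Sum>r\<in>rows Z. \<Sum>u\<le>i. min (arow Z r u) (j + 1))"
proof -
  let ?S = "\<lambda>r. Row (rep Z r) i j (Cr Z r) pb mu"
  have S: "kv.subspace (?S r) \<and> ?S r \<subseteq> bihom i j \<and> Mul (lf 0 1 (rep Z r) ^ lrow Z r) i j \<subseteq> ?S r"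
    if r: "r \<in> rows Z" for r
  proof (intro conjI)
    show "kv.subspace (?S r)" by (rule subspace_Row)
    show "?S r \<subseteq> bihom i j" by (rule Row_subset)
    show "Mul (lf 0 1 (rep Z r) ^ lrow Z r) i j \<subseteq> ?S r"
      by (rule Mul_in_Row) (auto simp: lrow_def finite_Cr)
  qed
  have "hilb Z i j = kv.dim (bihom i j :: 'k mpol set) - kv.dim (bihom i j \<inter> (\<Inter>r\<in>rows Z. ?S r))"
    by (simp add: hilb_def kdim_eq fat_bihom_eq[OF Z])
  also have "\<dots> = (\<Sum>r\<in>rows Z. kv.dim (bihom i j :: 'k mpol set) - kv.dim (?S r))"
    by (rule crt_rows[OF finite_rows nonprop_rows[OF Z] deg S])
  also have "\<dots> = (\<Sum>r\<in>rows Z. \<Sum>u\<le>i. min (arow Z r u) (j + 1))"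
  proof (rule sum.cong[OF refl])
    fix r assume r: "r \<in> rows Z"
    have "kv.dim (?S r) = (\<Sum>u\<le>i. j + 1 - arow Z r u)"
      unfolding arow_def by (rule dim_Row[OF rep_props(1)[OF Z r] finite_Cr nonprop_Cr[OF Z r]])
    then show "kv.dim (bihom i j :: 'k mpol set) - kv.dim (?S r) = (\<Sum>u\<le>i. min (arow Z r u) (j + 1))"
      by (simp only: dim_bihom codim_sum)
  qed
  finally show ?thesis .
qed


lemma mult_eq:
  assumes Z: "fat_point_scheme Z"
  shows "mult Z C D = sum mu {e \<in> set Z. proj_class (pa e) = C \<and> proj_class (pb e) = D}"
proof -
  let ?P = "\<lambda>((a,b),m). proj_class a = C \<and> proj_class b = D"
  let ?Q = "\<lambda>e. proj_class (pa e) = C \<and> proj_class (pb e) = D"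
  have f: "filter ?P Z = filter ?Q Z"
    by (rule filter_cong[OF refl]) (simp add: pa_def pb_def split: prod.splits)
  have d: "distinct (filter ?Q Z)" using fps_distinct[OF Z] by simp
  have "mult Z C D = sum_list (map snd (filter ?Q Z))" by (simp add: mult_def f)
  also have "\<dots> = sum snd (set (filter ?Q Z))" by (rule sum_list_distinct_conv_sum_set[OF d])
  also have "\<dots> = sum mu {e \<in> set Z. ?Q e}" by (simp add: mu_def[abs_def])
  finally show ?thesis .
qed

lemma cell_le1:
  assumes Z: "fat_point_scheme Z"
    and e: "e \<in> set Z" "proj_class (pa e) = C" "proj_class (pb e) = D"
    and e': "e' \<in> set Z" "proj_class (pa e') = C" "proj_class (pb e') = D"
  shows "e = e'"
proof (rule fps_uniq[OF Z e(1) e'(1)])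
  show "proj_eq (pa e) (pa e')" using class_eq_iff[of "pa e" "pa e'"] fps_nz[OF Z] e e' by metis
  show "proj_eq (pb e) (pb e')" using class_eq_iff[of "pb e" "pb e'"] fps_nz[OF Z] e e' by metis
qed

lemma sum_le1_diff:
  fixes f :: "'a \<Rightarrow> nat"
  assumes "finite T" "\<forall>x\<in>T. \<forall>y\<in>T. x = y"
  shows "sum f T - k = (\<Sum>x\<in>T. f x - k)"
proof (cases "T = {}")
  case False
  then obtain x where "x \<in> T" by blast
  then have "T = {x}" using assms(2) by blast
  then show ?thesis by simp
qed simp

lemma cellset_eq: "{e \<in> set Z. proj_class (pa e) = C \<and> proj_class (pb e) = D} = {e \<in> Cr Z C. proj_class (pb e) = D}"
  by (auto simp: Cr_def)

lemma arow_eq: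
  assumes Z: "fat_point_scheme Z"
  shows "(\<Sum>D\<in>cols Z. mult Z C D - k) = arow Z C k"
proof -
  have "(\<Sum>D\<in>cols Z. mult Z C D - k) = (\<Sum>D\<in>cols Z. \<Sum>e\<in>{e \<in> Cr Z C. proj_class (pb e) = D}. mu e - k)"
  proof (rule sum.cong[OF refl])
    fix D assume "D \<in> cols Z"
    let ?T = "{e \<in> Cr Z C. proj_class (pb e) = D}"
    have m: "mult Z C D = sum mu ?T" by (simp add: mult_eq[OF Z] cellset_eq)
    have T1: "\<forall>x\<in>?T. \<forall>y\<in>?T. x = y"
    proof (intro ballI)
      fix x y assume "x \<in> ?T" "y \<in> ?T"
      then show "x = y" using cell_le1[OF Z, of x _ D y] unfolding Cr_def by blast
    qed
    have fin: "finite ?T" using finite_Cr[of Z C] by simp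
    show "mult Z C D - k = (\<Sum>e\<in>?T. mu e - k)"
      unfolding m by (rule sum_le1_diff[OF fin T1])
  qed
  also have "\<dots> = (\<Sum>e\<in>Cr Z C. mu e - k)"
    by (rule sum.group[OF finite_Cr finite_cols]) (auto simp: cols_eq Cr_def)
  finally show ?thesis by (simp add: arow_def)
qed

lemma Max_mult_eq:
  assumes Z: "fat_point_scheme Z" and C: "C \<in> rows Z"
  shows "Max (mult Z C ` cols Z) = lrow Z C"
proof (rule Max_eqI)
  show "finite (mult Z C ` cols Z)" by (simp add: finite_cols)
next
  fix y assume "y \<in> mult Z C ` cols Z"
  then obtain D where D: "D \<in> cols Z" "y = mult Z C D" by blast
  let ?T = "{e \<in> Cr Z C. proj_class (pb e) = D}"
  have T1: "\<forall>x\<in>?T. \<forall>y\<in>?T. x = y"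
  proof (intro ballI)
    fix x y assume "x \<in> ?T" "y \<in> ?T"
    then show "x = y" using cell_le1[OF Z, of x _ D y] unfolding Cr_def by blast
  qed
  have y: "y = sum mu ?T" using D by (simp add: mult_eq[OF Z] cellset_eq)
  show "y \<le> lrow Z C"
  proof (cases "?T = {}")
    case True
    have "y = 0" using y True by (metis sum.empty)
    then show ?thesis by simp
  next
    case False
    then obtain x where x: "x \<in> ?T" by blast
    then have "?T = {x}" using T1 by blast
    then have "y = mu x" using y by simp
    then show ?thesis unfolding lrow_def using x finite_Cr by (auto intro: Max_ge)
  qed
next
  have ne: "mu ` Cr Z C \<noteq> {}" using Cr_nonempty[OF C] by simp
  obtain e0 where e0: "e0 \<in> Cr Z C" "mu e0 = lrow Z C"
    using Max_in[OF finite_imageI[OF finite_Cr] ne] unfolding lrow_def by auto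
  let ?D = "proj_class (pb e0)"
  have D: "?D \<in> cols Z" using e0 by (auto simp: cols_eq Cr_def)
  let ?T = "{e \<in> Cr Z C. proj_class (pb e) = ?D}"
  have "?T = {e0}"
  proof
    show "{e0} \<subseteq> ?T" using e0 by simp
    show "?T \<subseteq> {e0}"
    proof
      fix x assume "x \<in> ?T"
      then have "x = e0" using cell_le1[OF Z, of x _ ?D e0] e0(1) unfolding Cr_def by blast
      then show "x \<in> {e0}" by simp
    qed
  qed
  then have "mult Z C ?D = mu e0" by (simp add: mult_eq[OF Z] cellset_eq)
  then show "lrow Z C \<in> mult Z C ` cols Z" using D e0 by force
qed

lemma alphaZ_eq:
  assumes Z: "fat_point_scheme Z"
  shows "alphaZ Z = desc_list (\<Sum>C\<in>rows Z. mset (map (arow Z C) [0..<lrow Z C]))"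
proof -
  have "(\<Sum>C\<in>rows Z. mset (map (\<lambda>k. \<Sum>D\<in>cols Z. mult Z C D - k) [0..<Max (mult Z C ` cols Z)]))
      = (\<Sum>C\<in>rows Z. mset (map (arow Z C) [0..<lrow Z C]))"
  proof (rule sum.cong[OF refl])
    fix C assume C: "C \<in> rows Z"
    show "mset (map (\<lambda>k. \<Sum>D\<in>cols Z. mult Z C D - k) [0..<Max (mult Z C ` cols Z)]) = mset (map (arow Z C) [0..<lrow Z C])"
      using arow_eq[OF Z] Max_mult_eq[OF Z C] by simp
  qed
  then show ?thesis by (simp add: alphaZ_def)
qed

lemma length_desc_list: "length (desc_list M) = size M"
  by (metis desc_list_def length_rev mset_sorted_list_of_multiset size_mset)

lemma sum_list_desc_list: "sum_list (map f (desc_list M)) = sum_mset (image_mset f M)"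
proof -
  have "sum_list (map f (desc_list M)) = sum_mset (mset (map f (desc_list M)))" by (rule sum_mset_sum_list[symmetric])
  also have "mset (map f (desc_list M)) = image_mset f M" by (simp add: desc_list_def)
  finally show ?thesis .
qed

lemma set_desc_list: "set (desc_list M) = set_mset M"
  by (simp add: desc_list_def)

lemma size_Sum_mset: "size (\<Sum>C\<in>A. M C) = (\<Sum>C\<in>A. size (M C :: 'd multiset))"
  by (induction A rule: infinite_finite_induct) auto

lemma image_Sum_mset: "sum_mset (image_mset f (\<Sum>C\<in>A. M C)) = (\<Sum>C\<in>A. sum_mset (image_mset f (M C :: 'd multiset)))"
  by (induction A rule: infinite_finite_induct) auto

lemma in_Sum_mset: "x \<in># (\<Sum>C\<in>A. M C) \<Longrightarrow> \<exists>C\<in>A. x \<in># M C"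
  by (induction A rule: infinite_finite_induct) auto

lemma sum_image_mset_mset: "sum_mset (image_mset g (mset xs)) = sum_list (map g xs)"
  by (induction xs) auto

lemma length_alphaZ:
  assumes Z: "fat_point_scheme Z"
  shows "length (alphaZ Z) = (\<Sum>C\<in>rows Z. lrow Z C)"
  by (simp add: alphaZ_eq[OF Z] length_desc_list size_Sum_mset)

lemma Bsum_alphaZ:
  assumes Z: "fat_point_scheme Z"
  shows "Bsum (alphaZ Z) j = (\<Sum>C\<in>rows Z. \<Sum>k<lrow Z C. min (arow Z C k) (j + 1))"
proof -
  have "Bsum (alphaZ Z) j = (\<Sum>C\<in>rows Z. sum_mset (image_mset (\<lambda>x. min x (j + 1)) (mset (map (arow Z C) [0..<lrow Z C]))))"
    by (simp add: Bsum_def alphaZ_eq[OF Z] sum_list_desc_list image_Sum_mset)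
  also have "\<dots> = (\<Sum>C\<in>rows Z. \<Sum>k<lrow Z C. min (arow Z C k) (j + 1))"
  proof (rule sum.cong[OF refl])
    fix C
    have "sum_mset (image_mset (\<lambda>x. min x (j + 1)) (mset (map (arow Z C) [0..<lrow Z C])))
        = sum_list (map (\<lambda>k. min (arow Z C k) (j + 1)) [0..<lrow Z C])"
      by (simp only: sum_image_mset_mset map_map comp_def)
    also have "\<dots> = (\<Sum>k\<in>set [0..<lrow Z C]. min (arow Z C k) (j + 1))"
      by (rule sum_set_upt_conv_sum_list_nat[symmetric])
    also have "\<dots> = (\<Sum>k<lrow Z C. min (arow Z C k) (j + 1))" by (simp add: atLeast0LessThan)
    finally show "sum_mset (image_mset (\<lambda>x. min x (j + 1)) (mset (map (arow Z C) [0..<lrow Z C])))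
        = (\<Sum>k<lrow Z C. min (arow Z C k) (j + 1))" .
  qed
  finally show ?thesis .
qed

lemma arow_zero:
  assumes "lrow Z C \<le> u"
  shows "arow Z C u = 0"
  unfolding arow_def
proof (rule sum.neutral, rule ballI)
  fix e assume e: "e \<in> Cr Z C"
  have "mu e \<le> lrow Z C" unfolding lrow_def by (rule Max_ge) (use e finite_Cr[of Z C] in auto)
  then show "mu e - u = 0" using assms by simp
qed

lemma hilb_alpha:
  fixes Z :: "'k::field fatpts"
  assumes Z: "fat_point_scheme Z"
  shows "hilb Z (length (alphaZ Z) - 1) j = Bsum (alphaZ Z) j"
proof -
  let ?m = "length (alphaZ Z)"
  have m: "?m = (\<Sum>C\<in>rows Z. lrow Z C)" by (rule length_alphaZ[OF Z])
  have deg: "(\<Sum>C\<in>rows Z. lrow Z C) \<le> (?m - 1) + 1" using m by linarith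
  have "hilb Z (?m - 1) j = (\<Sum>C\<in>rows Z. \<Sum>u\<le>?m - 1. min (arow Z C u) (j + 1))"
    by (rule hilb_formula[OF Z deg])
  also have "\<dots> = (\<Sum>C\<in>rows Z. \<Sum>k<lrow Z C. min (arow Z C k) (j + 1))"
  proof (rule sum.cong[OF refl])
    fix C assume C: "C \<in> rows Z"
    have "lrow Z C \<le> (\<Sum>C\<in>rows Z. lrow Z C)" by (rule member_le_sum) (use C finite_rows in auto)
    then have le: "lrow Z C \<le> ?m" using m by simp
    show "(\<Sum>u\<le>?m - 1. min (arow Z C u) (j + 1)) = (\<Sum>k<lrow Z C. min (arow Z C k) (j + 1))"
    proof (rule sum.mono_neutral_right)
      show "{..<lrow Z C} \<subseteq> {..?m - 1}" using le by auto
      show "\<forall>u\<in>{..?m - 1} - {..<lrow Z C}. min (arow Z C u) (j + 1) = 0" by (auto simp: arow_zero)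
    qed simp
  qed
  also have "\<dots> = Bsum (alphaZ Z) j" by (rule Bsum_alphaZ[OF Z, symmetric])
  finally show ?thesis .
qed

lemma foldr_max_le: "(\<forall>x\<in>set xs. x \<le> n) \<Longrightarrow> foldr max xs (0::nat) \<le> n"
  by (induction xs) auto

lemma max_alpha_le:
  assumes Z: "fat_point_scheme Z"
  shows "foldr max (alphaZ Z) 0 \<le> length (betaZ Z)"
proof (rule foldr_max_le, rule ballI)
  fix x assume "x \<in> set (alphaZ Z)"
  then have "x \<in># (\<Sum>C\<in>rows Z. mset (map (\<lambda>k. \<Sum>D\<in>cols Z. mult Z C D - k) [0..<Max (mult Z C ` cols Z)]))"
    by (simp add: alphaZ_def set_desc_list)
  then obtain C k where C: "C \<in> rows Z" and x: "x = (\<Sum>D\<in>cols Z. mult Z C D - k)"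
    using in_Sum_mset by fastforce
  have "x \<le> (\<Sum>D\<in>cols Z. mult Z C D)" unfolding x by (rule sum_mono) simp
  also have "\<dots> \<le> (\<Sum>D\<in>cols Z. Max ((\<lambda>C. mult Z C D) ` rows Z))"
    by (rule sum_mono) (use C finite_rows in \<open>auto intro: Max_ge\<close>)
  also have "\<dots> = length (betaZ Z)"
    by (simp add: betaZ_def length_desc_list size_Sum_mset)
  finally show "x \<le> length (betaZ Z)" .
qed

theorem half:
  fixes Z :: "'k::field fatpts"
  assumes Z: "fat_point_scheme Z"
  shows "Delta (map (\<lambda>j. int (hilb Z (length (alphaZ Z) - 1) j)) [0..<length (betaZ Z)])
      = map int (pad0 (conjugate (alphaZ Z)) (length (betaZ Z)))"
proof -
  have e: "map (\<lambda>j. int (hilb Z (length (alphaZ Z) - 1) j)) [0..<length (betaZ Z)]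
      = map (\<lambda>j. int (Bsum (alphaZ Z) j)) [0..<length (betaZ Z)]"
    using hilb_alpha[OF Z] by simp
  show ?thesis unfolding e by (rule delta_conj[OF max_alpha_le[OF Z]])
qed


section \<open>Swapping the two factors\<close>

definition swv :: "nat \<Rightarrow> 'k::comm_ring_1 mpol" where
  "swv v = (if v = 0 then var 2 else if v = 1 then var 3 else if v = 2 then var 0 else if v = 3 then var 1 else var v)"

definition sw :: "'k::comm_ring_1 mpol \<Rightarrow> 'k mpol" where
  "sw F = subst swv F"

lemma sw_sw: "sw (sw F) = F"
proof -
  have "(\<lambda>v. subst swv (swv v)) = (var :: nat \<Rightarrow> 'a mpol)"
    by (rule ext) (simp add: swv_def)
  then show ?thesis by (simp add: sw_def subst_subst)
qed

lemma sw_lin1: "sw (lin1 a) = lin2 a"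
  by (simp add: sw_def lin1_def lin2_def subst_diff subst_mult swv_def)

lemma sw_lin2: "sw (lin2 b) = lin1 b"
  by (simp add: sw_def lin1_def lin2_def subst_diff subst_mult swv_def)

lemma sw_ringR: "F \<in> ringR \<Longrightarrow> sw F \<in> (ringR :: 'k::field mpol set)"
  unfolding sw_def by (rule subst_ringR) (auto simp: swv_def intro: var_ringR)

lemma sw_bihom:
  fixes F :: "'k::field mpol"
  assumes F: "F \<in> bihom p q"
  shows "sw F \<in> bihom q p"
  unfolding sw_def subst_def
proof (rule bihom_sum)
  fix \<nu> assume "\<nu> \<in> Poly_Mapping.keys F"
  then have "\<nu> \<in> monset p q" using F by (auto simp: bihom_keyspace keyspace_def)
  then have g: "good \<nu>" and b: "bideg \<nu> = (p,q)" by (auto simp: monset_def)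
  have m: "monval swv \<nu> = (\<Prod>v\<in>{0,1,2,3::nat}. (swv v :: 'k mpol) ^ Poly_Mapping.lookup \<nu> v)"
    by (rule monval_alt) (use g in \<open>auto simp: good_def\<close>)
  define \<delta> where "\<delta> v = (if v = 0 \<or> v = 1 then (0::nat, 1::nat) else (1, 0))" for v :: nat
  have sv: "(swv v :: 'k mpol) \<in> bihom (fst (\<delta> v)) (snd (\<delta> v))" if "v \<in> {0,1,2,3}" for v
    using that var_bihom by (auto simp: swv_def \<delta>_def)
  have X: "(\<Prod>v\<in>{0,1,2,3::nat}. (swv v :: 'k mpol) ^ Poly_Mapping.lookup \<nu> v) \<in>
     bihom (\<Sum>v\<in>{0,1,2,3::nat}. Poly_Mapping.lookup \<nu> v * fst (\<delta> v)) (\<Sum>v\<in>{0,1,2,3::nat}. Poly_Mapping.lookup \<nu> v * snd (\<delta> v))"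
    by (rule bihom_prod) (rule bihom_power[OF sv], auto)
  have s1: "(\<Sum>v\<in>{0,1,2,3::nat}. Poly_Mapping.lookup \<nu> v * fst (\<delta> v)) = q"
    and s2: "(\<Sum>v\<in>{0,1,2,3::nat}. Poly_Mapping.lookup \<nu> v * snd (\<delta> v)) = p"
    using b by (simp_all add: bideg_def \<delta>_def)
  have "(\<Prod>v\<in>{0,1,2,3::nat}. (swv v :: 'k mpol) ^ Poly_Mapping.lookup \<nu> v) \<in> bihom q p"
    using X unfolding s1 s2 .
  then have "monval swv \<nu> \<in> (bihom q p :: 'k mpol set)" unfolding m .
  then show "cst (Poly_Mapping.lookup F \<nu>) * monval swv \<nu> \<in> bihom q p" by (rule cst_mult_bihom)
qed

lemma sw_pid:
  fixes a b :: "'k::field \<times> 'k"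
  assumes F: "F \<in> pt_ideal_pow (a, b) \<mu>"
  shows "sw F \<in> pt_ideal_pow (b, a) \<mu>"
proof -
  obtain g where g: "\<forall>k\<le>\<mu>. g k \<in> ringR" "F = (\<Sum>k\<le>\<mu>. g k * lin1 a ^ k * lin2 b ^ (\<mu> - k))"
    using F by (auto simp: pt_ideal_pow_def)
  have e1: "sw F = (\<Sum>k\<le>\<mu>. sw (g k) * sw (lin1 a) ^ k * sw (lin2 b) ^ (\<mu> - k))"
    unfolding g(2) sw_def by (simp only: subst_sum subst_mult subst_power)
  have "sw F = (\<Sum>k\<le>\<mu>. sw (g k) * lin2 a ^ k * lin1 b ^ (\<mu> - k))"
    unfolding e1 by (simp only: sw_lin1 sw_lin2)
  also have "\<dots> = (\<Sum>k\<le>\<mu>. sw (g (\<mu> - k)) * lin1 b ^ k * lin2 a ^ (\<mu> - k))"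
  proof (rule sum.reindex_bij_witness[where i="\<lambda>k. \<mu> - k" and j="\<lambda>k. \<mu> - k"])
    fix k assume k: "k \<in> {..\<mu>}"
    then have kk: "\<mu> - (\<mu> - k) = k" by simp
    show "sw (g (\<mu> - (\<mu> - k))) * lin1 b ^ (\<mu> - k) * lin2 a ^ (\<mu> - (\<mu> - k)) = sw (g k) * lin2 a ^ k * lin1 b ^ (\<mu> - k)"
      unfolding kk by (simp only: mult.assoc mult.commute[of "lin1 b ^ (\<mu> - k)"])
  qed auto
  finally have "sw F = (\<Sum>k\<le>\<mu>. sw (g (\<mu> - k)) * lin1 (fst (b, a)) ^ k * lin2 (snd (b, a)) ^ (\<mu> - k))" by simp
  moreover have "\<forall>k\<le>\<mu>. sw (g (\<mu> - k)) \<in> ringR"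
  proof (intro allI impI)
    fix k assume "k \<le> \<mu>"
    have "\<mu> - k \<le> \<mu>" by simp
    then show "sw (g (\<mu> - k)) \<in> ringR" using g(1) sw_ringR by blast
  qed
  ultimately show ?thesis unfolding pt_ideal_pow_def by auto
qed

definition swapZ :: "'k fatpts \<Rightarrow> 'k fatpts" where
  "swapZ Z = map (\<lambda>((a,b),m). ((b,a),m)) Z"

definition swe :: "(('k \<times> 'k) \<times> ('k \<times> 'k)) \<times> nat \<Rightarrow> (('k \<times> 'k) \<times> ('k \<times> 'k)) \<times> nat" where
  "swe e = ((snd (fst e), fst (fst e)), snd e)"

lemma swapZ_swe: "swapZ Z = map swe Z"
  unfolding swapZ_def by (rule map_cong[OF refl]) (simp add: swe_def split: prod.splits)

lemma swe_swe[simp]: "swe (swe e) = e" by (simp add: swe_def)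

lemma swapZ_swapZ: "swapZ (swapZ Z) = Z"
  by (simp add: swapZ_swe comp_def)

lemma fps_swapZ:
  assumes "fat_point_scheme Z"
  shows "fat_point_scheme (swapZ Z)"
proof -
  have A: "\<forall>e\<in>set Z. fst (fst e) \<noteq> (0,0) \<and> snd (fst e) \<noteq> (0,0) \<and> 1 \<le> snd e"
    using assms by (auto simp: fat_point_scheme_def)
  have B: "\<forall>i<length Z. \<forall>j<length Z. i \<noteq> j \<longrightarrow>
        \<not> (proj_eq (fst (fst (Z!i))) (fst (fst (Z!j))) \<and> proj_eq (snd (fst (Z!i))) (snd (fst (Z!j))))"
    using assms by (simp add: fat_point_scheme_def)
  have A': "\<forall>e\<in>set (swapZ Z). fst (fst e) \<noteq> (0,0) \<and> snd (fst e) \<noteq> (0,0) \<and> 1 \<le> snd e"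
    using A by (auto simp: swapZ_swe swe_def)
  have B': "\<forall>i<length (swapZ Z). \<forall>j<length (swapZ Z). i \<noteq> j \<longrightarrow>
        \<not> (proj_eq (fst (fst (swapZ Z!i))) (fst (fst (swapZ Z!j))) \<and> proj_eq (snd (fst (swapZ Z!i))) (snd (fst (swapZ Z!j))))"
    using B by (auto simp: swapZ_swe swe_def)
  have "(\<forall>((a,b),m)\<in>set (swapZ Z). a \<noteq> (0,0) \<and> b \<noteq> (0,0) \<and> 1 \<le> m)"
    using A' by auto
  then show ?thesis using B' by (simp add: fat_point_scheme_def)
qed

lemma fat_ideal_mem: "F \<in> fat_ideal Z \<longleftrightarrow> F \<in> ringR \<and> (\<forall>e\<in>set Z. F \<in> pt_ideal_pow (fst e) (snd e))"
  by (auto simp: fat_ideal_def)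

lemma sw_fat:
  fixes Z :: "'k::field fatpts"
  assumes F: "F \<in> fat_ideal Z \<inter> bihom i j"
  shows "sw F \<in> fat_ideal (swapZ Z) \<inter> bihom j i"
proof -
  have "sw F \<in> pt_ideal_pow (fst e) (snd e)" if e: "e \<in> set (swapZ Z)" for e
  proof -
    obtain e' where e': "e' \<in> set Z" "e = swe e'" using e by (auto simp: swapZ_swe)
    have "F \<in> pt_ideal_pow (fst e') (snd e')" using F e' by (auto simp: fat_ideal_mem)
    then have "F \<in> pt_ideal_pow (fst (fst e'), snd (fst e')) (snd e')" by simp
    then have "sw F \<in> pt_ideal_pow (snd (fst e'), fst (fst e')) (snd e')" by (rule sw_pid)
    then show ?thesis using e' by (simp add: swe_def)
  qed
  moreover have "sw F \<in> ringR" using F sw_ringR by (auto simp: fat_ideal_mem)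
  moreover have "sw F \<in> bihom j i" using F sw_bihom by blast
  ultimately show ?thesis by (auto simp: fat_ideal_mem)
qed

lemma hilb_swap:
  fixes Z :: "'k::field fatpts"
  shows "hilb (swapZ Z) j i = hilb Z i j"
proof -
  have img: "sw ` (fat_ideal Z \<inter> bihom i j) = fat_ideal (swapZ Z) \<inter> bihom j i"
  proof
    show "sw ` (fat_ideal Z \<inter> bihom i j) \<subseteq> fat_ideal (swapZ Z) \<inter> bihom j i" using sw_fat by blast
    show "fat_ideal (swapZ Z) \<inter> bihom j i \<subseteq> sw ` (fat_ideal Z \<inter> bihom i j)"
    proof
      fix G assume "G \<in> fat_ideal (swapZ Z) \<inter> bihom j i"
      then have "sw G \<in> fat_ideal (swapZ (swapZ Z)) \<inter> bihom i j" by (rule sw_fat)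
      then have "sw G \<in> fat_ideal Z \<inter> bihom i j" by (simp add: swapZ_swapZ)
      then show "G \<in> sw ` (fat_ideal Z \<inter> bihom i j)" using sw_sw[of G] by (metis image_eqI)
    qed
  qed
  have inj: "inj_on sw S" for S :: "'k mpol set"
    by (rule inj_on_inverseI[where g = sw]) (simp add: sw_sw)
  have sub: "kv.subspace (fat_ideal Z \<inter> bihom i j)"
  proof -
    have "fat_ideal Z \<inter> bihom i j = bihom i j \<inter> (\<Inter>e\<in>set Z. pt_ideal_pow (fst e) (snd e))"
    proof (intro equalityI subsetI)
      fix F assume "F \<in> fat_ideal Z \<inter> bihom i j"
      then show "F \<in> bihom i j \<inter> (\<Inter>e\<in>set Z. pt_ideal_pow (fst e) (snd e))"
        unfolding fat_ideal_mem Int_iff INT_iff by blast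
    next
      fix F assume F: "F \<in> bihom i j \<inter> (\<Inter>e\<in>set Z. pt_ideal_pow (fst e) (snd e))"
      then have "F \<in> ringR" using bihom_ringR by blast
      then show "F \<in> fat_ideal Z \<inter> bihom i j"
        using F unfolding fat_ideal_mem Int_iff INT_iff by blast
    qed
    then show ?thesis by (simp add: kv.subspace_inter subspace_bihom kv.subspace_Int subspace_pid)
  qed
  have d1: "kv.dim (fat_ideal (swapZ Z) \<inter> bihom j i) = kv.dim (fat_ideal Z \<inter> bihom i j)"
    unfolding img[symmetric] sw_def
    by (rule dim_image_inj[OF hom_subst sub kv.fdim_subset[OF fdim_bihom] inj[unfolded sw_def]]) blast
  have d2: "kv.dim (bihom j i :: 'k mpol set) = kv.dim (bihom i j :: 'k mpol set)"
    by (simp add: dim_bihom)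
  show ?thesis by (simp add: hilb_def kdim_eq d1 d2)
qed

lemma rows_swapZ: "rows (swapZ Z) = cols Z"
  by (simp add: rows_eq cols_eq swapZ_swe image_image pa_def pb_def swe_def)

lemma cols_swapZ: "cols (swapZ Z) = rows Z"
  by (simp add: rows_eq cols_eq swapZ_swe image_image pa_def pb_def swe_def)

lemma mult_swapZ: "mult (swapZ Z) D C = mult Z C D"
proof -
  let ?P = "\<lambda>((a,b),m). proj_class a = D \<and> proj_class b = C"
  let ?Q = "\<lambda>((a,b),m). proj_class a = C \<and> proj_class b = D"
  have "filter ?P (map swe Z) = map swe (filter (?P \<circ> swe) Z)" by (simp add: filter_map)
  moreover have "filter (?P \<circ> swe) Z = filter ?Q Z"
    by (rule filter_cong[OF refl]) (auto simp: swe_def split: prod.splits)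
  ultimately have "filter ?P (map swe Z) = map swe (filter ?Q Z)" by simp
  moreover have "snd \<circ> swe = (snd :: (('a \<times> 'a) \<times> ('a \<times> 'a)) \<times> nat \<Rightarrow> nat)" by (rule ext) (simp add: swe_def)
  ultimately show ?thesis by (simp add: mult_def swapZ_swe)
qed

lemma alphaZ_swapZ: "alphaZ (swapZ Z) = betaZ Z"
  by (simp add: alphaZ_def betaZ_def rows_swapZ cols_swapZ mult_swapZ)

lemma betaZ_swapZ: "betaZ (swapZ Z) = alphaZ Z"
  by (simp add: alphaZ_def betaZ_def rows_swapZ cols_swapZ mult_swapZ)


theorem corollary3p12:
  fixes Z :: "'k::alg_closed_field fatpts"
  assumes "fat_point_scheme Z"
  defines "m \<equiv> length (alphaZ Z)" and "m' \<equiv> length (betaZ Z)"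
  shows "Delta (map (\<lambda>j. int (hilb Z (m - 1) j)) [0..<m'])
           = map int (pad0 (conjugate (alphaZ Z)) m')
       \<and> Delta (map (\<lambda>i. int (hilb Z i (m' - 1))) [0..<m])
           = map int (pad0 (conjugate (betaZ Z)) m)"
proof
  show "Delta (map (\<lambda>j. int (hilb Z (m - 1) j)) [0..<m']) = map int (pad0 (conjugate (alphaZ Z)) m')"
    unfolding m_def m'_def by (rule half[OF assms(1)])
  have h2: "Delta (map (\<lambda>j. int (hilb (swapZ Z) (length (alphaZ (swapZ Z)) - 1) j)) [0..<length (betaZ (swapZ Z))])
      = map int (pad0 (conjugate (alphaZ (swapZ Z))) (length (betaZ (swapZ Z))))"
    by (rule half[OF fps_swapZ[OF assms(1)]])
  show "Delta (map (\<lambda>i. int (hilb Z i (m' - 1))) [0..<m]) = map int (pad0 (conjugate (betaZ Z)) m)"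
    using h2 unfolding alphaZ_swapZ betaZ_swapZ hilb_swap m_def m'_def .
qed

end
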